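(* Let $(X_1,Y_1),(X_2,Y_2),\dots$ be a random sample (i.i.d. copies) of a random vector $(X,Y)$ with continuous joint distribution function $H$, marginal distribution functions $F$ and $G$, and (unique) copula $A$. Assume that $A$ allows a continuous Markov kernel $K_A$, define $K_H(x,(-\infty,y]):=K_A(F(x),[0,G(y)])$, and set $N(n):=\lfloor n^s\rfloor$ for some $s\in(0,\tfrac12)$. Let $x\in\mathbb{R}$ be a point in which the regularity assumption holds, i.e. the sequence $(Z_n^{(x)})_{n\in\mathbb{N}}$ is uniformly integrable, where $Z_n^{(x)}$ has distribution function $y\mapsto K_{\mathcal{CB}_{N(n)}(E_n)}(F_n(x),[0,G_n(y)])$. Define $$r_n^+(x):=\int_{(0,\infty)}1-K_{\mathcal{CB}_{N(n)}(E_n)}(F_n(x),[0,G_n(y)])\,d\lambda(y),\qquad r_n^-(x):=\int_{(-\infty,0)}K_{\mathcal{CB}_{N(n)}(E_n)}(F_n(x),[0,G_n(y)])\,d\lambda(y),$$ and $r_n(x):=r_n^+(x)-r_n^-(x)$. Then $r_n(x)\to\mathbb{E}[Y\mid X=x]$ almost surely as $n\to\infty$, where $\mathbb{E}[Y\mid X=x]:=\int_{\mathbb{R}}y\,K_H(x,dy)$.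
   Context: A (bivariate) copula is a distribution function on $[0,1]^2$ with uniform marginals; each copula $B$ corresponds to a doubly stochastic measure $\mu_B$ with $B(x,y)=\mu_B([0,x]\times[0,y])$. A Markov kernel of a copula $B$ is a map $K_B:[0,1]\times\mathcal{B}([0,1])\to[0,1]$, measurable in the first argument, a probability measure in the second, with $\int_{E_1}K_B(x,E_2)\,d\lambda(x)=\mu_B(E_1\times E_2)$ for all Borel $E_1,E_2\subseteq[0,1]$ ($\lambda$ = Lebesgue measure). $A$ allows a continuous Markov kernel if it has a version $K_A$ with $(x,y)\mapsto K_A(x,[0,y])$ continuous on $[0,1]^2$; $K_A$ denotes this version, and $K_H(x,\cdot)$ is the probability measure on $\mathbb{R}$ with the stated distribution function. Checkerboard approximation: $I_1^N=[0,\tfrac1N]$, $I_i^N=(\tfrac{i-1}N,\tfrac iN]$ ($i=2,\dots,N$), $Q_{i,j}^N=I_i^N\times I_j^N$; for a copula $B$, $K_{\mathcal{CB}_N(B)}(u,[0,v])=N^2\sum_{i,j=1}^N\mu_B(Q^N_{i,j})\mathbf 1_{I^N_i}(u)\,\lambda([0,v]\cap I^N_j)$ is the Markov kernel of the absolutely continuous copula $\mathcal{CB}_N(B)$ with density $N^2\sum_{i,j}\mu_B(Q^N_{i,j})\mathbf 1_{Q^N_{i,j}}$. $F_n,G_n$ are the univariate empirical distribution functions of the first $n$ observations; $E_n$ is the empirical copula: with $H_n$ the bivariate empirical distribution function, almost surely there is a unique subcopula $E_n'$ on $\{0,\tfrac1n,\dots,1\}^2$ with $H_n(x,y)=E_n'(F_n(x),G_n(y))$,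 and $E_n$ is its extension to a copula by bilinear interpolation on each square $[\tfrac{i-1}n,\tfrac in]\times[\tfrac{j-1}n,\tfrac jn]$. *)

theory Defs
  imports "HOL-Probability.Probability"
begin

text \<open>A (bivariate) copula, viewed as a function on the unit square (values outside
  [0,1]^2 are irrelevant): grounded, uniform margins, 2-increasing.\<close>
definition copula :: "(real \<Rightarrow> real \<Rightarrow> real) \<Rightarrow> bool" where
  "copula C \<longleftrightarrow>
     (\<forall>u\<in>{0..1}. C u 0 = 0 \<and> C 0 u = 0 \<and> C u 1 = u \<and> C 1 u = u) \<and>
     (\<forall>u1 u2 v1 v2. 0 \<le> u1 \<longrightarrow> u1 \<le> u2 \<longrightarrow> u2 \<le> 1 \<longrightarrow> 0 \<le> v1 \<longrightarrow> v1 \<le> v2 \<longrightarrow> v2 \<le> 1 \<longrightarrow>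
        C u2 v2 - C u1 v2 - C u2 v1 + C u1 v1 \<ge> 0)"

definition doubly_stochastic_measure_of ::
  "(real \<Rightarrow> real \<Rightarrow> real) \<Rightarrow> (real \<times> real) measure \<Rightarrow> bool" where
  "doubly_stochastic_measure_of B \<mu> \<longleftrightarrow>
     sets \<mu> = sets borel \<and> finite_measure \<mu> \<and>
     emeasure \<mu> (UNIV - {0..1} \<times> {0..1}) = 0 \<and>
     (\<forall>x\<in>{0..1}. \<forall>y\<in>{0..1}. measure \<mu> ({0..x} \<times> {0..y}) = B x y)"

definition markov_kernel_of ::
  "(real \<Rightarrow> real \<Rightarrow> real) \<Rightarrow> (real \<Rightarrow> real set \<Rightarrow> real) \<Rightarrow> bool" where
  "markov_kernel_of B K \<longleftrightarrow>
     (\<forall>E\<in>sets (restrict_space borel {0..1::real}).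
        (\<lambda>x. K x E) \<in> borel_measurable (restrict_space borel {0..1::real})) \<and>
     (\<forall>x\<in>{0..1}. \<exists>P. prob_space P \<and> sets P = sets (restrict_space borel {0..1::real}) \<and>
        (\<forall>E\<in>sets P. K x E = measure P E)) \<and>
     (\<exists>\<mu>. doubly_stochastic_measure_of B \<mu> \<and>
        (\<forall>E1\<in>sets (restrict_space borel {0..1::real}). \<forall>E2\<in>sets (restrict_space borel {0..1::real}).
           (LINT x:E1|lborel. K x E2) = measure \<mu> (E1 \<times> E2)))"

definition cb_interval :: "nat \<Rightarrow> nat \<Rightarrow> real set" where
  "cb_interval N i = (if i = 1 then {0..1 / real N} else {(real i - 1) / real N<..real i / real N})"

text \<open>mu_B(Q_{i,j}^N), computed from B (copula measures put no mass on the lines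
  {0} x [0,1] and [0,1] x {0}).\<close>
definition rect_mass :: "(real \<Rightarrow> real \<Rightarrow> real) \<Rightarrow> nat \<Rightarrow> nat \<Rightarrow> nat \<Rightarrow> real" where
  "rect_mass B N i j =
     B (real i / real N) (real j / real N) - B ((real i - 1) / real N) (real j / real N)
     - B (real i / real N) ((real j - 1) / real N) + B ((real i - 1) / real N) ((real j - 1) / real N)"

definition cb_kernel_cdf :: "nat \<Rightarrow> (real \<Rightarrow> real \<Rightarrow> real) \<Rightarrow> real \<Rightarrow> real \<Rightarrow> real" where
  "cb_kernel_cdf N B u v =
     (real N)^2 * (\<Sum>i\<in>{1..N}. \<Sum>j\<in>{1..N}.
        rect_mass B N i j * indicator (cb_interval N i) u * measure lborel ({0..v} \<inter> cb_interval N j))"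

text \<open>Univariate / bivariate empirical distribution functions of the first n observations
  (observations indexed 0,...,n-1).\<close>
definition emp_df :: "(nat \<Rightarrow> 'a \<Rightarrow> real) \<Rightarrow> nat \<Rightarrow> 'a \<Rightarrow> real \<Rightarrow> real" where
  "emp_df Z n \<omega> x = real (card {i. i < n \<and> Z i \<omega> \<le> x}) / real n"

definition emp_joint ::
  "(nat \<Rightarrow> 'a \<Rightarrow> real) \<Rightarrow> (nat \<Rightarrow> 'a \<Rightarrow> real) \<Rightarrow> nat \<Rightarrow> 'a \<Rightarrow> real \<Rightarrow> real \<Rightarrow> real" where
  "emp_joint Xs Ys n \<omega> x y = real (card {i. i < n \<and> Xs i \<omega> \<le> x \<and> Ys i \<omega> \<le> y}) / real n"

text \<open>A subcopula on the grid {0,1/n,...,1}^2, represented by its values S i j at (i/n, j/n)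
  (set to 0 off the grid so that it is determined by its grid values).\<close>
definition grid_subcopula :: "nat \<Rightarrow> (nat \<Rightarrow> nat \<Rightarrow> real) \<Rightarrow> bool" where
  "grid_subcopula n S \<longleftrightarrow>
     (\<forall>i j. n < i \<or> n < j \<longrightarrow> S i j = 0) \<and>
     (\<forall>j\<le>n. S 0 j = 0 \<and> S n j = real j / real n) \<and>
     (\<forall>i\<le>n. S i 0 = 0 \<and> S i n = real i / real n) \<and>
     (\<forall>i<n. \<forall>j<n. S (Suc i) (Suc j) - S i (Suc j) - S (Suc i) j + S i j \<ge> 0)"

text \<open>Empirical subcopula E_n': the (a.s. unique) grid subcopula with
  H_n(x,y) = E_n'(F_n x, G_n y); note F_n x = card{...}/n.\<close>
definition emp_subcopula ::
  "(nat \<Rightarrow> 'a \<Rightarrow> real) \<Rightarrow> (nat \<Rightarrow> 'a \<Rightarrow> real) \<Rightarrow> nat \<Rightarrow> 'a \<Rightarrow> nat \<Rightarrow> nat \<Rightarrow> real" where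
  "emp_subcopula Xs Ys n \<omega> = (THE S. grid_subcopula n S \<and>
     (\<forall>x y. emp_joint Xs Ys n \<omega> x y =
        S (card {i. i < n \<and> Xs i \<omega> \<le> x}) (card {i. i < n \<and> Ys i \<omega> \<le> y})))"

definition grid_bilinear :: "nat \<Rightarrow> (nat \<Rightarrow> nat \<Rightarrow> real) \<Rightarrow> real \<Rightarrow> real \<Rightarrow> real" where
  "grid_bilinear n S u v =
     (let i = min (nat \<lfloor>real n * u\<rfloor>) (n - 1); j = min (nat \<lfloor>real n * v\<rfloor>) (n - 1);
          s = real n * u - real i; t = real n * v - real j
      in (1 - s) * (1 - t) * S i j + s * (1 - t) * S (Suc i) j
         + (1 - s) * t * S i (Suc j) + s * t * S (Suc i) (Suc j))"

definition emp_copula ::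
  "(nat \<Rightarrow> 'a \<Rightarrow> real) \<Rightarrow> (nat \<Rightarrow> 'a \<Rightarrow> real) \<Rightarrow> nat \<Rightarrow> 'a \<Rightarrow> real \<Rightarrow> real \<Rightarrow> real" where
  "emp_copula Xs Ys n \<omega> = grid_bilinear n (emp_subcopula Xs Ys n \<omega>)"

text \<open>Uniform integrability of a sequence of random variables, expressed through their
  distributions mu_n: lim_{c->oo} sup_n E[|Z_n| 1{|Z_n| >= c}] = 0.\<close>
definition unif_integrable_dists :: "(nat \<Rightarrow> real measure) \<Rightarrow> bool" where
  "unif_integrable_dists \<mu> \<longleftrightarrow>
     (\<forall>e>0. \<exists>c. \<forall>n. (\<integral>\<^sup>+ y. indicator {y. c \<le> \<bar>y\<bar>} y * ennreal \<bar>y\<bar> \<partial>\<mu> n) \<le> ennreal e)"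

end

theory Submission
  imports Defs "HOL-Real_Asymp.Real_Asymp"
begin

lemma layer_pos:
  assumes nu: "real_distribution \<nu>"
  shows "(\<integral>\<^sup>+ y. indicator {c<..} y * ennreal (measure \<nu> {y<..}) \<partial>lborel) = (\<integral>\<^sup>+ z. ennreal (max 0 (z - c)) \<partial>\<nu>)"
proof -
  interpret real_distribution \<nu> by (rule nu)
  interpret pair_sigma_finite \<nu> lborel by unfold_locales
  have sn[measurable_cong]: "sets \<nu> = sets borel" by simp
  have "(\<integral>\<^sup>+ y. indicator {c<..} y * ennreal (measure \<nu> {y<..}) \<partial>lborel)
      = (\<integral>\<^sup>+ y. (\<integral>\<^sup>+ z. indicator {c<..} y * indicator {y<..} z \<partial>\<nu>) \<partial>lborel)"
  proof (intro nn_integral_cong)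
    fix y :: real
    have "ennreal (measure \<nu> {y<..}) = emeasure \<nu> {y<..}" by (simp add: emeasure_eq_measure)
    also have "\<dots> = (\<integral>\<^sup>+ z. indicator {y<..} z \<partial>\<nu>)" by (simp add: sn)
    finally show "indicator {c<..} y * ennreal (measure \<nu> {y<..}) = (\<integral>\<^sup>+ z. indicator {c<..} y * indicator {y<..} z \<partial>\<nu>)"
      by (simp add: nn_integral_cmult sn)
  qed
  also have "\<dots> = (\<integral>\<^sup>+ z. (\<integral>\<^sup>+ y. indicator {c<..} y * indicator {y<..} z \<partial>lborel) \<partial>\<nu>)"
  proof (rule Fubini')
    have "(\<lambda>(z, y). indicator {c<..} y * indicator {y<..} z :: ennreal) = (\<lambda>p. indicator {p::real\<times>real. c < snd p \<and> snd p < fst p} p)"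
      by (auto simp: indicator_def fun_eq_iff)
    moreover have "{p::real\<times>real. c < snd p \<and> snd p < fst p} \<in> sets (\<nu> \<Otimes>\<^sub>M lborel)"
    proof -
      have "Measurable.pred (borel \<Otimes>\<^sub>M borel) (\<lambda>p::real\<times>real. c < snd p \<and> snd p < fst p)" by measurable
      then have "{p::real\<times>real. c < snd p \<and> snd p < fst p} \<in> sets (borel \<Otimes>\<^sub>M borel)"
        by (simp add: pred_def space_pair_measure)
      then show ?thesis by (simp add: sets_pair_measure_cong[OF sn sets_lborel])
    qed
    ultimately show "(\<lambda>(z, y). indicator {c<..} y * indicator {y<..} z :: ennreal) \<in> borel_measurable (\<nu> \<Otimes>\<^sub>M lborel)"
      by simp
  qed
  also have "\<dots> = (\<integral>\<^sup>+ z. ennreal (max 0 (z - c)) \<partial>\<nu>)"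
  proof (intro nn_integral_cong)
    fix z :: real
    have "(\<integral>\<^sup>+ y. indicator {c<..} y * indicator {y<..} z \<partial>lborel) = (\<integral>\<^sup>+ y. indicator {c<..<z} y \<partial>lborel)"
      by (intro nn_integral_cong) (auto simp: indicator_def)
    also have "\<dots> = ennreal (max 0 (z - c))" by (cases "c \<le> z") auto
    finally show "(\<integral>\<^sup>+ y. indicator {c<..} y * indicator {y<..} z \<partial>lborel) = ennreal (max 0 (z - c))" .
  qed
  finally show ?thesis .
qed

lemma layer_neg:
  assumes nu: "real_distribution \<nu>"
  shows "(\<integral>\<^sup>+ y. indicator {..<c} y * ennreal (measure \<nu> {..y}) \<partial>lborel) = (\<integral>\<^sup>+ z. ennreal (max 0 (c - z)) \<partial>\<nu>)"
proof -
  interpret real_distribution \<nu> by (rule nu)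
  interpret pair_sigma_finite \<nu> lborel by unfold_locales
  have sn[measurable_cong]: "sets \<nu> = sets borel" by simp
  have "(\<integral>\<^sup>+ y. indicator {..<c} y * ennreal (measure \<nu> {..y}) \<partial>lborel)
      = (\<integral>\<^sup>+ y. (\<integral>\<^sup>+ z. indicator {..<c} y * indicator {..y} z \<partial>\<nu>) \<partial>lborel)"
  proof (intro nn_integral_cong)
    fix y :: real
    have "ennreal (measure \<nu> {..y}) = emeasure \<nu> {..y}" by (simp add: emeasure_eq_measure)
    also have "\<dots> = (\<integral>\<^sup>+ z. indicator {..y} z \<partial>\<nu>)" by (simp add: sn)
    finally show "indicator {..<c} y * ennreal (measure \<nu> {..y}) = (\<integral>\<^sup>+ z. indicator {..<c} y * indicator {..y} z \<partial>\<nu>)"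
      by (simp add: nn_integral_cmult sn)
  qed
  also have "\<dots> = (\<integral>\<^sup>+ z. (\<integral>\<^sup>+ y. indicator {..<c} y * indicator {..y} z \<partial>lborel) \<partial>\<nu>)"
  proof (rule Fubini')
    have "(\<lambda>(z, y). indicator {..<c} y * indicator {..y} z :: ennreal) = (\<lambda>p. indicator {p::real\<times>real. snd p < c \<and> fst p \<le> snd p} p)"
      by (auto simp: indicator_def fun_eq_iff)
    moreover have "{p::real\<times>real. snd p < c \<and> fst p \<le> snd p} \<in> sets (\<nu> \<Otimes>\<^sub>M lborel)"
    proof -
      have "Measurable.pred (borel \<Otimes>\<^sub>M borel) (\<lambda>p::real\<times>real. snd p < c \<and> fst p \<le> snd p)" by measurable
      then have "{p::real\<times>real. snd p < c \<and> fst p \<le> snd p} \<in> sets (borel \<Otimes>\<^sub>M borel)"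
        by (simp add: pred_def space_pair_measure)
      then show ?thesis by (simp add: sets_pair_measure_cong[OF sn sets_lborel])
    qed
    ultimately show "(\<lambda>(z, y). indicator {..<c} y * indicator {..y} z :: ennreal) \<in> borel_measurable (\<nu> \<Otimes>\<^sub>M lborel)"
      by simp
  qed
  also have "\<dots> = (\<integral>\<^sup>+ z. ennreal (max 0 (c - z)) \<partial>\<nu>)"
  proof (intro nn_integral_cong)
    fix z :: real
    have "(\<integral>\<^sup>+ y. indicator {..<c} y * indicator {..y} z \<partial>lborel) = (\<integral>\<^sup>+ y. indicator {z..<c} y \<partial>lborel)"
      by (intro nn_integral_cong) (auto simp: indicator_def)
    also have "\<dots> = ennreal (max 0 (c - z))" by (cases "z \<le> c") auto
    finally show "(\<integral>\<^sup>+ y. indicator {..<c} y * indicator {..y} z \<partial>lborel) = ennreal (max 0 (c - z))" .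
  qed
  finally show ?thesis .
qed

lemma split_nn:
  fixes f :: "real \<Rightarrow> real"
  assumes S: "S \<in> sets borel" and f: "f \<in> borel_measurable borel"
  shows "(\<integral>\<^sup>+ y. indicator S y * ennreal (f y) \<partial>lborel) =
    (\<integral>\<^sup>+ y. indicator (S \<inter> {y. \<bar>y\<bar> \<le> c}) y * ennreal (f y) \<partial>lborel) +
    (\<integral>\<^sup>+ y. indicator (S \<inter> {y. c < \<bar>y\<bar>}) y * ennreal (f y) \<partial>lborel)"
proof -
  have "(\<integral>\<^sup>+ y. indicator S y * ennreal (f y) \<partial>lborel) =
    (\<integral>\<^sup>+ y. indicator (S \<inter> {y. \<bar>y\<bar> \<le> c}) y * ennreal (f y) + indicator (S \<inter> {y. c < \<bar>y\<bar>}) y * ennreal (f y) \<partial>lborel)"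
    by (intro nn_integral_cong) (auto simp: indicator_def)
  also have "\<dots> = (\<integral>\<^sup>+ y. indicator (S \<inter> {y. \<bar>y\<bar> \<le> c}) y * ennreal (f y) \<partial>lborel) +
    (\<integral>\<^sup>+ y. indicator (S \<inter> {y. c < \<bar>y\<bar>}) y * ennreal (f y) \<partial>lborel)"
    using S f by (intro nn_integral_add) auto
  finally show ?thesis .
qed

lemma bounded_part:
  fixes f :: "real \<Rightarrow> real"
  assumes S: "S \<in> sets borel" and f: "f \<in> borel_measurable borel" and f01: "\<And>y. 0 \<le> f y \<and> f y \<le> 1"
  shows "integrable lborel (\<lambda>y. indicator (S \<inter> {y. \<bar>y\<bar> \<le> c}) y * f y)"
    "(\<integral>\<^sup>+ y. indicator (S \<inter> {y. \<bar>y\<bar> \<le> c}) y * ennreal (f y) \<partial>lborel) =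
      ennreal (\<integral> y. indicator (S \<inter> {y. \<bar>y\<bar> \<le> c}) y * f y \<partial>lborel)"
proof -
  let ?B = "S \<inter> {y. \<bar>y\<bar> \<le> c}"
  have Bm: "?B \<in> sets lborel" using S by measurable
  have "emeasure lborel ?B \<le> emeasure lborel {-\<bar>c\<bar>..\<bar>c\<bar>}" by (intro emeasure_mono) auto
  also have "\<dots> < \<infinity>" by simp
  finally have fin: "emeasure lborel ?B < \<infinity>" .
  have ib: "integrable lborel (indicator ?B :: real \<Rightarrow> real)" by (rule integrable_real_indicator[OF Bm fin])
  show int: "integrable lborel (\<lambda>y. indicator ?B y * f y)"
    by (rule Bochner_Integration.integrable_bound[OF ib]) (use S f f01 in \<open>auto simp: indicator_def\<close>)
  have "(\<integral>\<^sup>+ y. indicator ?B y * ennreal (f y) \<partial>lborel) = (\<integral>\<^sup>+ y. ennreal (indicator ?B y * f y) \<partial>lborel)"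
    by (intro nn_integral_cong) (auto simp: indicator_def)
  also have "\<dots> = ennreal (\<integral> y. indicator ?B y * f y \<partial>lborel)"
    by (rule nn_integral_eq_integral[OF int]) (use f01 in auto)
  finally show "(\<integral>\<^sup>+ y. indicator ?B y * ennreal (f y) \<partial>lborel) = ennreal (\<integral> y. indicator ?B y * f y \<partial>lborel)" .
qed

lemma tail_conv:
  fixes g :: "nat \<Rightarrow> real \<Rightarrow> real" and h :: "real \<Rightarrow> real" and S :: "real set"
  assumes S: "S \<in> sets borel"
    and meas: "\<And>n. g n \<in> borel_measurable borel"
    and bnd: "eventually (\<lambda>n. \<forall>y. 0 \<le> g n y \<and> g n y \<le> 1) sequentially"
    and lim: "\<And>y. (\<lambda>n. g n y) \<longlonglongrightarrow> h y"
    and tails: "\<And>e. e > 0 \<Longrightarrow> \<exists>c. eventually (\<lambda>n. (\<integral>\<^sup>+ y. indicator (S \<inter> {y. c < \<bar>y\<bar>}) y * ennreal (g n y) \<partial>lborel) \<le> ennreal e) sequentially"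
  shows "(\<integral>\<^sup>+ y. indicator S y * ennreal (h y) \<partial>lborel) < \<infinity>"
    and "(\<lambda>n. enn2real (\<integral>\<^sup>+ y. indicator S y * ennreal (g n y) \<partial>lborel)) \<longlonglongrightarrow> enn2real (\<integral>\<^sup>+ y. indicator S y * ennreal (h y) \<partial>lborel)"
proof -
  have hm: "h \<in> borel_measurable borel" by (rule borel_measurable_LIMSEQ_real[OF lim meas])
  obtain n0 where n0: "\<And>n y. n \<ge> n0 \<Longrightarrow> 0 \<le> g n y \<and> g n y \<le> 1" using bnd unfolding eventually_sequentially by blast
  have h01: "0 \<le> h y \<and> h y \<le> 1" for y
  proof -
    have ev: "eventually (\<lambda>n. 0 \<le> g n y \<and> g n y \<le> 1) sequentially" using n0 unfolding eventually_sequentially by blast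
    have "0 \<le> h y" by (rule tendsto_lowerbound[OF lim]) (use ev in \<open>auto elim: eventually_mono\<close>)
    moreover have "h y \<le> 1" by (rule tendsto_upperbound[OF lim]) (use ev in \<open>auto elim: eventually_mono\<close>)
    ultimately show ?thesis by simp
  qed
  \<comment> \<open>tail of h via Fatou\<close>
  have tailh: "(\<integral>\<^sup>+ y. indicator (S \<inter> {y. c < \<bar>y\<bar>}) y * ennreal (h y) \<partial>lborel) \<le> ennreal e"
    if ev: "eventually (\<lambda>n. (\<integral>\<^sup>+ y. indicator (S \<inter> {y. c < \<bar>y\<bar>}) y * ennreal (g n y) \<partial>lborel) \<le> ennreal e) sequentially" for c e
  proof -
    let ?T = "S \<inter> {y. c < \<bar>y\<bar>}"
    have "(\<integral>\<^sup>+ y. indicator ?T y * ennreal (h y) \<partial>lborel) = (\<integral>\<^sup>+ y. liminf (\<lambda>n. indicator ?T y * ennreal (g n y)) \<partial>lborel)"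
    proof (intro nn_integral_cong)
      fix y :: real
      have "(\<lambda>n. ennreal (indicator ?T y * g n y)) \<longlonglongrightarrow> ennreal (indicator ?T y * h y)"
        by (intro tendsto_intros tendsto_ennrealI lim)
      moreover have "\<And>x. ennreal (indicator ?T y * x) = indicator ?T y * ennreal x" by (simp add: indicator_def)
      ultimately have "(\<lambda>n. indicator ?T y * ennreal (g n y)) \<longlonglongrightarrow> indicator ?T y * ennreal (h y)" by simp
      then show "indicator ?T y * ennreal (h y) = liminf (\<lambda>n. indicator ?T y * ennreal (g n y))"
        by (simp add: lim_imp_Liminf)
    qed
    also have "\<dots> \<le> liminf (\<lambda>n. \<integral>\<^sup>+ y. indicator ?T y * ennreal (g n y) \<partial>lborel)"
      by (rule nn_integral_liminf) (use S meas in measurable)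
    also have "\<dots> \<le> ennreal e" by (rule Liminf_le[OF _ ev]) simp
    finally show ?thesis .
  qed
  have Tm: "S \<inter> {y. c < \<bar>y\<bar>} \<in> sets borel" for c using S by measurable
  show fin: "(\<integral>\<^sup>+ y. indicator S y * ennreal (h y) \<partial>lborel) < \<infinity>"
  proof -
    obtain c where c: "eventually (\<lambda>n. (\<integral>\<^sup>+ y. indicator (S \<inter> {y. c < \<bar>y\<bar>}) y * ennreal (g n y) \<partial>lborel) \<le> ennreal 1) sequentially"
      using tails[of 1] by auto
    have "(\<integral>\<^sup>+ y. indicator S y * ennreal (h y) \<partial>lborel) =
      ennreal (\<integral> y. indicator (S \<inter> {y. \<bar>y\<bar> \<le> c}) y * h y \<partial>lborel) + (\<integral>\<^sup>+ y. indicator (S \<inter> {y. c < \<bar>y\<bar>}) y * ennreal (h y) \<partial>lborel)"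
      unfolding split_nn[OF S hm, of c] bounded_part(2)[OF S hm h01] ..
    also have "\<dots> \<le> ennreal (\<integral> y. indicator (S \<inter> {y. \<bar>y\<bar> \<le> c}) y * h y \<partial>lborel) + ennreal 1"
      using tailh[OF c] by (rule add_left_mono)
    also have "\<dots> < \<infinity>" by simp
    finally show ?thesis .
  qed
  show "(\<lambda>n. enn2real (\<integral>\<^sup>+ y. indicator S y * ennreal (g n y) \<partial>lborel)) \<longlonglongrightarrow> enn2real (\<integral>\<^sup>+ y. indicator S y * ennreal (h y) \<partial>lborel)"
  proof (rule tendstoI)
    fix e :: real assume e: "e > 0"
    obtain c where c: "eventually (\<lambda>n. (\<integral>\<^sup>+ y. indicator (S \<inter> {y. c < \<bar>y\<bar>}) y * ennreal (g n y) \<partial>lborel) \<le> ennreal (e/3)) sequentially"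
      using tails[of "e/3"] e by auto
    let ?B = "S \<inter> {y. \<bar>y\<bar> \<le> c}" and ?T = "S \<inter> {y. c < \<bar>y\<bar>}"
    have th: "(\<integral>\<^sup>+ y. indicator ?T y * ennreal (h y) \<partial>lborel) \<le> ennreal (e/3)" by (rule tailh[OF c])
    have Bm: "?B \<in> sets lborel" using S by measurable
    have dc: "(\<lambda>n. \<integral> y. indicator ?B y * g n y \<partial>lborel) \<longlonglongrightarrow> (\<integral> y. indicator ?B y * h y \<partial>lborel)"
    proof (rule LIMSEQ_offset[where k = n0])
      show "(\<lambda>n. \<integral> y. indicator ?B y * g (n + n0) y \<partial>lborel) \<longlonglongrightarrow> (\<integral> y. indicator ?B y * h y \<partial>lborel)"
      proof (rule integral_dominated_convergence[where w = "indicator ?B"])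
        show "integrable lborel (indicator ?B :: real \<Rightarrow> real)"
          using bounded_part(1)[OF S borel_measurable_const[of 1], of c] by simp
        show "AE y in lborel. (\<lambda>n. indicator ?B y * g (n + n0) y) \<longlonglongrightarrow> indicator ?B y * h y"
          by (intro AE_I2 tendsto_intros LIMSEQ_ignore_initial_segment lim)
        show "AE y in lborel. norm (indicator ?B y * g (n + n0) y) \<le> indicator ?B y" for n
        proof (intro AE_I2)
          fix y :: real
          show "norm (indicator ?B y * g (n + n0) y) \<le> indicator ?B y"
            using n0[of "n + n0" y] by (cases "y \<in> ?B") auto
        qed
        have Bm': "?B \<in> sets borel" using S by measurable
        show "(\<lambda>y. indicator ?B y * h y) \<in> borel_measurable lborel"
          using Bm' hm by simp
        show "(\<lambda>y. indicator ?B y * g (i + n0) y) \<in> borel_measurable lborel" for i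
          using Bm' meas[of "i + n0"] by simp
      qed
    qed
    have ev1: "eventually (\<lambda>n. dist (\<integral> y. indicator ?B y * g n y \<partial>lborel) (\<integral> y. indicator ?B y * h y \<partial>lborel) < e/3) sequentially"
      using tendstoD[OF dc, of "e/3"] e by simp
    have ev2: "eventually (\<lambda>n. n \<ge> n0) sequentially" by (rule eventually_ge_at_top)
    show "eventually (\<lambda>n. dist (enn2real (\<integral>\<^sup>+ y. indicator S y * ennreal (g n y) \<partial>lborel)) (enn2real (\<integral>\<^sup>+ y. indicator S y * ennreal (h y) \<partial>lborel)) < e) sequentially"
      using ev1 ev2 c
    proof eventually_elim
      case (elim n)
      have g01: "\<And>y. 0 \<le> g n y \<and> g n y \<le> 1" using n0 elim(2) by auto
      define Tg where "Tg = (\<integral>\<^sup>+ y. indicator ?T y * ennreal (g n y) \<partial>lborel)"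
      define Th where "Th = (\<integral>\<^sup>+ y. indicator ?T y * ennreal (h y) \<partial>lborel)"
      have Tg: "Tg \<le> ennreal (e/3)" using elim(3) unfolding Tg_def .
      have Th: "Th \<le> ennreal (e/3)" using th unfolding Th_def .
      have Tgf: "Tg < \<infinity>" using Tg by (simp add: le_less_trans)
      have Thf: "Th < \<infinity>" using Th by (simp add: le_less_trans)
      have r1: "enn2real Tg \<le> e/3" using enn2real_mono[OF Tg] e by simp
      have r2: "enn2real Th \<le> e/3" using enn2real_mono[OF Th] e by simp
      have r0: "0 \<le> enn2real Tg" "0 \<le> enn2real Th" by auto
      have Ig: "0 \<le> (\<integral> y. indicator ?B y * g n y \<partial>lborel)" using g01 by (intro integral_nonneg_AE) (auto simp: indicator_def)
      have Ih: "0 \<le> (\<integral> y. indicator ?B y * h y \<partial>lborel)" using h01 by (intro integral_nonneg_AE) (auto simp: indicator_def)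
      have eg: "enn2real (\<integral>\<^sup>+ y. indicator S y * ennreal (g n y) \<partial>lborel) = (\<integral> y. indicator ?B y * g n y \<partial>lborel) + enn2real Tg"
        unfolding split_nn[OF S meas[of n], of c] bounded_part(2)[OF S meas[of n] g01] Tg_def[symmetric]
        using Tgf Ig by (simp add: enn2real_plus)
      have eh: "enn2real (\<integral>\<^sup>+ y. indicator S y * ennreal (h y) \<partial>lborel) = (\<integral> y. indicator ?B y * h y \<partial>lborel) + enn2real Th"
        unfolding split_nn[OF S hm, of c] bounded_part(2)[OF S hm h01] Th_def[symmetric]
        using Thf Ih by (simp add: enn2real_plus)
      show ?case unfolding eg eh dist_real_def using elim(1) r1 r2 r0 unfolding dist_real_def by linarith
    qed
  qed
qed

lemma rd_Ioi:
  assumes nu: "real_distribution \<nu>"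
  shows "measure \<nu> {y<..} = 1 - cdf \<nu> y" "measure \<nu> {..y} = cdf \<nu> y"
proof -
  interpret real_distribution \<nu> by (rule nu)
  have ev: "{..y} \<in> events" by simp
  have "{y<..} = space \<nu> - {..y}" by auto
  then show "measure \<nu> {y<..} = 1 - cdf \<nu> y" unfolding cdf_def using prob_compl[OF ev] by simp
  show "measure \<nu> {..y} = cdf \<nu> y" by (simp add: cdf_def)
qed

lemma interval_measure_rd:
  assumes mono: "\<And>x y. x \<le> y \<Longrightarrow> F x \<le> F y" and rc: "\<And>a. continuous (at_right a) F"
    and bot: "(F \<longlongrightarrow> 0) at_bot" and top: "(F \<longlongrightarrow> 1) at_top"
  shows "real_distribution (interval_measure F)" "cdf (interval_measure F) = F"
    "\<And>y. measure (interval_measure F) {y<..} = 1 - F y" "\<And>y. measure (interval_measure F) {..y} = F y"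
    "\<And>y. 0 \<le> F y \<and> F y \<le> 1"
proof -
  show rd: "real_distribution (interval_measure F)" by (rule real_distribution_interval_measure[OF mono rc bot top])
  show cd: "cdf (interval_measure F) = F" by (rule cdf_interval_measure[OF mono rc bot])
  show "measure (interval_measure F) {y<..} = 1 - F y" for y using rd_Ioi[OF rd] cd by simp
  show "measure (interval_measure F) {..y} = F y" for y using rd_Ioi[OF rd] cd by simp
  show "0 \<le> F y \<and> F y \<le> 1" for y
  proof -
    interpret real_distribution "interval_measure F" by (rule rd)
    show ?thesis using rd_Ioi(2)[OF rd, of y] cd measure_nonneg[of "interval_measure F" "{..y}"] prob_le_1[of "{..y}"] by simp
  qed
qed

lemma ui_tail_pos:
  assumes nu: "real_distribution \<nu>" and c0: "c0 \<le> c" "0 \<le> c"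
  shows "(\<integral>\<^sup>+ y. indicator ({0<..} \<inter> {y. c < \<bar>y\<bar>}) y * ennreal (1 - cdf \<nu> y) \<partial>lborel)
      \<le> (\<integral>\<^sup>+ y. indicator {y. c0 \<le> \<bar>y\<bar>} y * ennreal \<bar>y\<bar> \<partial>\<nu>)"
proof -
  interpret real_distribution \<nu> by (rule nu)
  have "(\<integral>\<^sup>+ y. indicator ({0<..} \<inter> {y. c < \<bar>y\<bar>}) y * ennreal (1 - cdf \<nu> y) \<partial>lborel)
      = (\<integral>\<^sup>+ y. indicator {c<..} y * ennreal (measure \<nu> {y<..}) \<partial>lborel)"
    using c0 by (intro nn_integral_cong) (auto simp: indicator_def rd_Ioi[OF nu])
  also have "\<dots> = (\<integral>\<^sup>+ z. ennreal (max 0 (z - c)) \<partial>\<nu>)" by (rule layer_pos[OF nu])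
  also have "\<dots> \<le> (\<integral>\<^sup>+ y. indicator {y. c0 \<le> \<bar>y\<bar>} y * ennreal \<bar>y\<bar> \<partial>\<nu>)"
    using c0 by (intro nn_integral_mono) (auto simp: indicator_def max_def)
  finally show ?thesis .
qed

lemma ui_tail_neg:
  assumes nu: "real_distribution \<nu>" and c0: "c0 \<le> c" "0 \<le> c"
  shows "(\<integral>\<^sup>+ y. indicator ({..<0} \<inter> {y. c < \<bar>y\<bar>}) y * ennreal (cdf \<nu> y) \<partial>lborel)
      \<le> (\<integral>\<^sup>+ y. indicator {y. c0 \<le> \<bar>y\<bar>} y * ennreal \<bar>y\<bar> \<partial>\<nu>)"
proof -
  interpret real_distribution \<nu> by (rule nu)
  have "(\<integral>\<^sup>+ y. indicator ({..<0} \<inter> {y. c < \<bar>y\<bar>}) y * ennreal (cdf \<nu> y) \<partial>lborel)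
      = (\<integral>\<^sup>+ y. indicator {..<-c} y * ennreal (measure \<nu> {..y}) \<partial>lborel)"
    using c0 by (intro nn_integral_cong) (auto simp: indicator_def rd_Ioi[OF nu])
  also have "\<dots> = (\<integral>\<^sup>+ z. ennreal (max 0 (-c - z)) \<partial>\<nu>)" by (rule layer_neg[OF nu])
  also have "\<dots> \<le> (\<integral>\<^sup>+ y. indicator {y. c0 \<le> \<bar>y\<bar>} y * ennreal \<bar>y\<bar> \<partial>\<nu>)"
    using c0 by (intro nn_integral_mono) (auto simp: indicator_def max_def)
  finally show ?thesis .
qed

lemma ui_tight:
  assumes nu: "real_distribution \<nu>" and c: "1 \<le> c" "c0 \<le> c"
  shows "ennreal (measure \<nu> {z. c \<le> \<bar>z\<bar>}) \<le> (\<integral>\<^sup>+ y. indicator {y. c0 \<le> \<bar>y\<bar>} y * ennreal \<bar>y\<bar> \<partial>\<nu>)"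
proof -
  interpret real_distribution \<nu> by (rule nu)
  have "ennreal (measure \<nu> {z. c \<le> \<bar>z\<bar>}) = (\<integral>\<^sup>+ y. indicator {z. c \<le> \<bar>z\<bar>} y \<partial>\<nu>)"
    by (simp add: emeasure_eq_measure[symmetric])
  also have "\<dots> \<le> (\<integral>\<^sup>+ y. indicator {y. c0 \<le> \<bar>y\<bar>} y * ennreal \<bar>y\<bar> \<partial>\<nu>)"
  proof (intro nn_integral_mono)
    fix y :: real
    show "indicator {z. c \<le> \<bar>z\<bar>} y \<le> indicator {y. c0 \<le> \<bar>y\<bar>} y * ennreal \<bar>y\<bar>"
    proof (cases "c \<le> \<bar>y\<bar>")
      case True
      then have "c0 \<le> \<bar>y\<bar>" "1 \<le> \<bar>y\<bar>" using c by auto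
      then show ?thesis using True by (simp add: indicator_def)
    qed (simp add: indicator_def)
  qed
  finally show ?thesis .
qed

lemma lint_enn:
  fixes f :: "real \<Rightarrow> real"
  assumes S: "S \<in> sets borel" and f: "f \<in> borel_measurable borel" and nn: "\<And>y. y \<in> S \<Longrightarrow> 0 \<le> f y"
  shows "(LINT y:S|lborel. f y) = enn2real (\<integral>\<^sup>+ y. indicator S y * ennreal (f y) \<partial>lborel)"
proof -
  have "enn2real (\<integral>\<^sup>+ y. indicator S y * ennreal (f y) \<partial>lborel) = (\<integral> y. indicator S y *\<^sub>R f y \<partial>lborel)"
    by (rule enn2real_nn_integral_eq_integral) (use S f nn in \<open>auto simp: indicator_def\<close>)
  then show ?thesis by (simp add: set_lebesgue_integral_def)
qed

lemma mean_conv: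
  fixes C :: "nat \<Rightarrow> real \<Rightarrow> real" and \<Phi> :: "real \<Rightarrow> real"
  assumes cdfC: "\<And>n. n \<ge> n0 \<Longrightarrow> (\<forall>x y. x \<le> y \<longrightarrow> C n x \<le> C n y) \<and> (\<forall>a. continuous (at_right a) (C n))
        \<and> (C n \<longlongrightarrow> 0) at_bot \<and> (C n \<longlongrightarrow> 1) at_top"
    and conv: "\<And>y. (\<lambda>n. C n y) \<longlonglongrightarrow> \<Phi> y"
    and rc: "\<And>a. continuous (at_right a) \<Phi>"
    and UI: "unif_integrable_dists (\<lambda>n. interval_measure (C n))"
  shows "(\<lambda>n. (LINT y:{0<..}|lborel. 1 - C n y) - (LINT y:{..<0}|lborel. C n y)) \<longlonglongrightarrow> (\<integral>y. y \<partial>interval_measure \<Phi>)"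
proof -
  define \<nu> where "\<nu> n = interval_measure (C n)" for n
  have rdn: "real_distribution (\<nu> n)" "cdf (\<nu> n) = C n" "\<And>y. measure (\<nu> n) {y<..} = 1 - C n y"
    "\<And>y. measure (\<nu> n) {..y} = C n y" "\<And>y. 0 \<le> C n y \<and> C n y \<le> 1" if "n \<ge> n0" for n
    using interval_measure_rd[of "C n"] cdfC[OF that] unfolding \<nu>_def by auto
  have Cm: "C n \<in> borel_measurable borel" if "n \<ge> n0" for n
    using cdfC[OF that] by (intro borel_measurable_mono) (auto simp: mono_def)
  have evn0: "eventually (\<lambda>n. n \<ge> n0) sequentially" by (rule eventually_ge_at_top)
  have \<Phi>01: "0 \<le> \<Phi> y \<and> \<Phi> y \<le> 1" for y
  proof -
    have ev: "eventually (\<lambda>n. 0 \<le> C n y \<and> C n y \<le> 1) sequentially" using evn0 by eventually_elim (use rdn in auto)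
    have "0 \<le> \<Phi> y" by (rule tendsto_lowerbound[OF conv]) (use ev in \<open>auto elim: eventually_mono\<close>)
    moreover have "\<Phi> y \<le> 1" by (rule tendsto_upperbound[OF conv]) (use ev in \<open>auto elim: eventually_mono\<close>)
    ultimately show ?thesis by simp
  qed
  have \<Phi>mono: "\<Phi> x \<le> \<Phi> y" if "x \<le> y" for x y
  proof (rule LIMSEQ_le[OF conv conv])
    show "\<exists>N. \<forall>n\<ge>N. C n x \<le> C n y" using cdfC that by blast
  qed
  have \<Phi>m: "\<Phi> \<in> borel_measurable borel" using \<Phi>mono by (intro borel_measurable_mono) (auto simp: mono_def)
  have ui: "\<exists>c. \<forall>n. (\<integral>\<^sup>+ y. indicator {y. c \<le> \<bar>y\<bar>} y * ennreal \<bar>y\<bar> \<partial>\<nu> n) \<le> ennreal e" if "e > 0" for e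
    using UI that unfolding unif_integrable_dists_def \<nu>_def by blast
  have posS: "{0<..} \<in> sets (borel :: real measure)" by simp
  have negS: "{..<0} \<in> sets (borel :: real measure)" by simp
  have P: "(\<integral>\<^sup>+ y. indicator {0<..} y * ennreal (1 - \<Phi> y) \<partial>lborel) < \<infinity>"
     "(\<lambda>n. enn2real (\<integral>\<^sup>+ y. indicator {0<..} y * ennreal (1 - C (n + n0) y) \<partial>lborel))
        \<longlonglongrightarrow> enn2real (\<integral>\<^sup>+ y. indicator {0<..} y * ennreal (1 - \<Phi> y) \<partial>lborel)"
  proof -
    have m1: "(\<lambda>y. 1 - C (n + n0) y) \<in> borel_measurable borel" for n using Cm[of "n + n0"] by simp
    have m2: "\<forall>\<^sub>F n in sequentially. \<forall>y. 0 \<le> 1 - C (n + n0) y \<and> 1 - C (n + n0) y \<le> 1"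
      using rdn(5)[of "_ + n0"] by (intro always_eventually) auto
    have m3: "(\<lambda>n. 1 - C (n + n0) y) \<longlonglongrightarrow> 1 - \<Phi> y" for y
      by (intro tendsto_intros LIMSEQ_ignore_initial_segment conv)
    have m4: "\<exists>c. \<forall>\<^sub>F n in sequentially. (\<integral>\<^sup>+ y. indicator ({0<..} \<inter> {y. c < \<bar>y\<bar>}) y * ennreal (1 - C (n + n0) y) \<partial>lborel) \<le> ennreal e"
      if e: "e > 0" for e
    proof -
      obtain c0 where c0: "\<And>n. (\<integral>\<^sup>+ y. indicator {y. c0 \<le> \<bar>y\<bar>} y * ennreal \<bar>y\<bar> \<partial>\<nu> n) \<le> ennreal e" using ui[OF e] by blast
      show ?thesis
      proof (intro exI[of _ "max c0 1"] always_eventually allI)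
        fix n
        have "(\<integral>\<^sup>+ y. indicator ({0<..} \<inter> {y. max c0 1 < \<bar>y\<bar>}) y * ennreal (1 - C (n + n0) y) \<partial>lborel)
            \<le> (\<integral>\<^sup>+ y. indicator {y. c0 \<le> \<bar>y\<bar>} y * ennreal \<bar>y\<bar> \<partial>\<nu> (n + n0))"
          using ui_tail_pos[OF rdn(1)[of "n + n0"], of c0 "max c0 1"] rdn(2)[of "n + n0"] by simp
        also have "\<dots> \<le> ennreal e" by (rule c0)
        finally show "(\<integral>\<^sup>+ y. indicator ({0<..} \<inter> {y. max c0 1 < \<bar>y\<bar>}) y * ennreal (1 - C (n + n0) y) \<partial>lborel) \<le> ennreal e" .
      qed
    qed
    show "(\<integral>\<^sup>+ y. indicator {0<..} y * ennreal (1 - \<Phi> y) \<partial>lborel) < \<infinity>"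
      by (rule tail_conv(1)[OF posS m1 m2 m3 m4])
    show "(\<lambda>n. enn2real (\<integral>\<^sup>+ y. indicator {0<..} y * ennreal (1 - C (n + n0) y) \<partial>lborel))
        \<longlonglongrightarrow> enn2real (\<integral>\<^sup>+ y. indicator {0<..} y * ennreal (1 - \<Phi> y) \<partial>lborel)"
      by (rule tail_conv(2)[OF posS m1 m2 m3 m4])
  qed
  have Q: "(\<integral>\<^sup>+ y. indicator {..<0} y * ennreal (\<Phi> y) \<partial>lborel) < \<infinity>"
     "(\<lambda>n. enn2real (\<integral>\<^sup>+ y. indicator {..<0} y * ennreal (C (n + n0) y) \<partial>lborel))
        \<longlonglongrightarrow> enn2real (\<integral>\<^sup>+ y. indicator {..<0} y * ennreal (\<Phi> y) \<partial>lborel)"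
  proof -
    have m1: "(\<lambda>y. C (n + n0) y) \<in> borel_measurable borel" for n using Cm[of "n + n0"] by simp
    have m2: "\<forall>\<^sub>F n in sequentially. \<forall>y. 0 \<le> C (n + n0) y \<and> C (n + n0) y \<le> 1"
      using rdn(5)[of "_ + n0"] by (intro always_eventually) auto
    have m3: "(\<lambda>n. C (n + n0) y) \<longlonglongrightarrow> \<Phi> y" for y
      by (intro LIMSEQ_ignore_initial_segment conv)
    have m4: "\<exists>c. \<forall>\<^sub>F n in sequentially. (\<integral>\<^sup>+ y. indicator ({..<0} \<inter> {y. c < \<bar>y\<bar>}) y * ennreal (C (n + n0) y) \<partial>lborel) \<le> ennreal e"
      if e: "e > 0" for e
    proof -
      obtain c0 where c0: "\<And>n. (\<integral>\<^sup>+ y. indicator {y. c0 \<le> \<bar>y\<bar>} y * ennreal \<bar>y\<bar> \<partial>\<nu> n) \<le> ennreal e" using ui[OF e] by blast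
      show ?thesis
      proof (intro exI[of _ "max c0 1"] always_eventually allI)
        fix n
        have "(\<integral>\<^sup>+ y. indicator ({..<0} \<inter> {y. max c0 1 < \<bar>y\<bar>}) y * ennreal (C (n + n0) y) \<partial>lborel)
            \<le> (\<integral>\<^sup>+ y. indicator {y. c0 \<le> \<bar>y\<bar>} y * ennreal \<bar>y\<bar> \<partial>\<nu> (n + n0))"
          using ui_tail_neg[OF rdn(1)[of "n + n0"], of c0 "max c0 1"] rdn(2)[of "n + n0"] by simp
        also have "\<dots> \<le> ennreal e" by (rule c0)
        finally show "(\<integral>\<^sup>+ y. indicator ({..<0} \<inter> {y. max c0 1 < \<bar>y\<bar>}) y * ennreal (C (n + n0) y) \<partial>lborel) \<le> ennreal e" .
      qed
    qed
    show "(\<integral>\<^sup>+ y. indicator {..<0} y * ennreal (\<Phi> y) \<partial>lborel) < \<infinity>"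
      by (rule tail_conv(1)[OF negS m1 m2 m3 m4])
    show "(\<lambda>n. enn2real (\<integral>\<^sup>+ y. indicator {..<0} y * ennreal (C (n + n0) y) \<partial>lborel))
        \<longlonglongrightarrow> enn2real (\<integral>\<^sup>+ y. indicator {..<0} y * ennreal (\<Phi> y) \<partial>lborel)"
      by (rule tail_conv(2)[OF negS m1 m2 m3 m4])
  qed
  have lim1: "(\<lambda>n. (LINT y:{0<..}|lborel. 1 - C (n + n0) y) - (LINT y:{..<0}|lborel. C (n + n0) y))
     \<longlonglongrightarrow> enn2real (\<integral>\<^sup>+ y. indicator {0<..} y * ennreal (1 - \<Phi> y) \<partial>lborel) - enn2real (\<integral>\<^sup>+ y. indicator {..<0} y * ennreal (\<Phi> y) \<partial>lborel)"
  proof -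
    have "(LINT y:{0<..}|lborel. 1 - C (n + n0) y) = enn2real (\<integral>\<^sup>+ y. indicator {0<..} y * ennreal (1 - C (n + n0) y) \<partial>lborel)" for n
      by (rule lint_enn) (use Cm[of "n + n0"] rdn(5)[of "n + n0"] in auto)
    moreover have "(LINT y:{..<0}|lborel. C (n + n0) y) = enn2real (\<integral>\<^sup>+ y. indicator {..<0} y * ennreal (C (n + n0) y) \<partial>lborel)" for n
      by (rule lint_enn) (use Cm[of "n + n0"] rdn(5)[of "n + n0"] in auto)
    ultimately show ?thesis using tendsto_diff[OF P(2) Q(2)] by simp
  qed
  have bot: "(\<Phi> \<longlongrightarrow> 0) at_bot"
  proof (rule order_tendstoI)
    fix a :: real assume "a < 0" then show "\<forall>\<^sub>F y in at_bot. a < \<Phi> y" using \<Phi>01 by (auto intro: always_eventually less_le_trans)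
  next
    fix a :: real assume a: "0 < a"
    obtain c0 where c0: "\<And>n. (\<integral>\<^sup>+ y. indicator {y. c0 \<le> \<bar>y\<bar>} y * ennreal \<bar>y\<bar> \<partial>\<nu> n) \<le> ennreal (a/2)" using ui[of "a/2"] a by auto
    define c where "c = max c0 1"
    have \<Phi>le: "\<Phi> y \<le> a/2" if y: "y \<le> -c" for y
    proof (rule LIMSEQ_le_const2[OF conv])
      show "\<exists>N. \<forall>n\<ge>N. C n y \<le> a/2"
      proof (intro exI allI impI)
        fix n assume n: "n \<ge> n0"
        interpret real_distribution "\<nu> n" by (rule rdn(1)[OF n])
        have "C n y = measure (\<nu> n) {..y}" using rdn(4)[OF n] by simp
        also have "\<dots> \<le> measure (\<nu> n) {z. c \<le> \<bar>z\<bar>}" using y by (intro finite_measure_mono) auto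
        finally have "ennreal (C n y) \<le> ennreal (measure (\<nu> n) {z. c \<le> \<bar>z\<bar>})" by (rule ennreal_leI)
        also have "\<dots> \<le> ennreal (a/2)" using ui_tight[OF rdn(1)[OF n], of c c0] c0[of n] unfolding c_def by auto
        finally show "C n y \<le> a/2" using a by (simp add: ennreal_le_iff2)
      qed
    qed
    have ha: "a/2 < a" using a by simp
    have "\<forall>y\<le>-c. \<Phi> y < a" using \<Phi>le ha by (meson order_le_less_trans)
    then show "\<forall>\<^sub>F y in at_bot. \<Phi> y < a" unfolding eventually_at_bot_linorder by blast
  qed
  have top: "(\<Phi> \<longlongrightarrow> 1) at_top"
  proof (rule order_tendstoI)
    fix a :: real assume "a > 1" then show "\<forall>\<^sub>F y in at_top. \<Phi> y < a" using \<Phi>01 by (auto intro: always_eventually le_less_trans)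
  next
    fix a :: real assume a: "a < 1"
    obtain c0 where c0: "\<And>n. (\<integral>\<^sup>+ y. indicator {y. c0 \<le> \<bar>y\<bar>} y * ennreal \<bar>y\<bar> \<partial>\<nu> n) \<le> ennreal ((1 - a)/2)" using ui[of "(1-a)/2"] a by auto
    define c where "c = max c0 1"
    have "1 - \<Phi> y \<le> (1 - a)/2" if y: "y \<ge> c" for y
    proof (rule LIMSEQ_le_const2[OF tendsto_diff[OF tendsto_const conv]])
      show "\<exists>N. \<forall>n\<ge>N. 1 - C n y \<le> (1 - a)/2"
      proof (intro exI allI impI)
        fix n assume n: "n \<ge> n0"
        interpret real_distribution "\<nu> n" by (rule rdn(1)[OF n])
        have "1 - C n y = measure (\<nu> n) {y<..}" using rdn(3)[OF n] by simp
        also have "\<dots> \<le> measure (\<nu> n) {z. c \<le> \<bar>z\<bar>}" using y by (intro finite_measure_mono) auto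
        finally have "ennreal (1 - C n y) \<le> ennreal (measure (\<nu> n) {z. c \<le> \<bar>z\<bar>})" by (rule ennreal_leI)
        also have "\<dots> \<le> ennreal ((1 - a)/2)" using ui_tight[OF rdn(1)[OF n], of c c0] c0[of n] unfolding c_def by auto
        finally show "1 - C n y \<le> (1 - a)/2" using a by (simp add: ennreal_le_iff2)
      qed
    qed
    then show "\<forall>\<^sub>F y in at_top. a < \<Phi> y" unfolding eventually_at_top_linorder using a
      by (intro exI[of _ "c"]) force
  qed
  have rdm: "real_distribution (interval_measure \<Phi>)" "\<And>y. measure (interval_measure \<Phi>) {y<..} = 1 - \<Phi> y"
    "\<And>y. measure (interval_measure \<Phi>) {..y} = \<Phi> y"
    using interval_measure_rd[of \<Phi>, OF \<Phi>mono rc bot top] by auto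
  let ?\<mu> = "interval_measure \<Phi>"
  have L1: "(\<integral>\<^sup>+ y. indicator {0<..} y * ennreal (1 - \<Phi> y) \<partial>lborel) = (\<integral>\<^sup>+ z. ennreal (max 0 z) \<partial>?\<mu>)"
    using layer_pos[OF rdm(1), of 0] rdm(2) by simp
  have L2: "(\<integral>\<^sup>+ y. indicator {..<0} y * ennreal (\<Phi> y) \<partial>lborel) = (\<integral>\<^sup>+ z. ennreal (max 0 (- z)) \<partial>?\<mu>)"
    using layer_neg[OF rdm(1), of 0] rdm(3) by simp
  have int: "integrable ?\<mu> (\<lambda>z. z)"
  proof -
    interpret real_distribution ?\<mu> by (rule rdm(1))
    have "(\<integral>\<^sup>+ z. ennreal (norm z) \<partial>?\<mu>) = (\<integral>\<^sup>+ z. ennreal (max 0 z) + ennreal (max 0 (- z)) \<partial>?\<mu>)"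
      by (intro nn_integral_cong) (auto simp: max_def)
    also have "\<dots> = (\<integral>\<^sup>+ z. ennreal (max 0 z) \<partial>?\<mu>) + (\<integral>\<^sup>+ z. ennreal (max 0 (- z)) \<partial>?\<mu>)"
      by (intro nn_integral_add) auto
    also have "\<dots> < \<infinity>" using P(1) Q(1) unfolding L1 L2 by simp
    finally show ?thesis by (intro integrableI_bounded) auto
  qed
  have "(\<integral>y. y \<partial>?\<mu>) = enn2real (\<integral>\<^sup>+ z. ennreal z \<partial>?\<mu>) - enn2real (\<integral>\<^sup>+ z. ennreal (- z) \<partial>?\<mu>)"
    by (rule real_lebesgue_integral_def[OF int])
  also have "\<dots> = enn2real (\<integral>\<^sup>+ y. indicator {0<..} y * ennreal (1 - \<Phi> y) \<partial>lborel) - enn2real (\<integral>\<^sup>+ y. indicator {..<0} y * ennreal (\<Phi> y) \<partial>lborel)"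
    unfolding L1 L2 by (simp add: ennreal_max_0)
  finally have "(\<lambda>n. (LINT y:{0<..}|lborel. 1 - C (n + n0) y) - (LINT y:{..<0}|lborel. C (n + n0) y)) \<longlonglongrightarrow> (\<integral>y. y \<partial>?\<mu>)"
    using lim1 by simp
  then show ?thesis by (rule LIMSEQ_offset)
qed

lemma cbw_eq:
  assumes N: "1 \<le> N" and j: "1 \<le> j" and v: "0 \<le> v"
  shows "measure lborel ({0..v} \<inter> cb_interval N j) = max 0 (min v (real j / real N) - (real j - 1) / real N)"
proof (cases "j = 1")
  case True
  have "{0..v} \<inter> cb_interval N j = {0..min v (1/real N)}"
    using True by (auto simp: cb_interval_def)
  then show ?thesis using True v N by (simp add: max_def min_def)
next
  case False
  have "{0..v} \<inter> cb_interval N j = {(real j - 1)/real N<..min v (real j/real N)}"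
  proof -
    have j2: "real j \<ge> 2" using False j by linarith
    have "x \<ge> 0" if "real j - 1 < x * real N" for x
    proof -
      have "x * real N > 0" using that j2 by linarith
      then show ?thesis using N by (simp add: zero_less_mult_iff)
    qed
    then show ?thesis
      using False j N v by (auto simp: cb_interval_def divide_simps)
  qed
  then show ?thesis using False j N v by (simp add: max_def min_def)
qed

lemma lin_sum:
  assumes N: "1 \<le> N" and v: "0 \<le> v" "v \<le> 1"
  obtains J \<theta> where "1 \<le> J" "J \<le> N" "0 \<le> \<theta>" "\<theta> \<le> 1" "real N * v = real J - 1 + \<theta>"
    "\<And>D::nat\<Rightarrow>real. (\<Sum>j\<in>{1..N}. (D j - D (j-1)) * (real N * measure lborel ({0..v} \<inter> cb_interval N j)))
       = D (J-1) - D 0 + \<theta> * (D J - D (J-1))"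
proof -
  define J where "J = (if v = 0 then 1 else nat \<lceil>real N * v\<rceil>)"
  define \<theta> where "\<theta> = real N * v - (real J - 1)"
  have Npos: "real N > 0" using N by simp
  have J1: "1 \<le> J"
  proof (cases "v = 0")
    case False
    then have "real N * v > 0" using v Npos by simp
    then show ?thesis unfolding J_def using False by (simp add: le_nat_iff)
  qed (simp add: J_def)
  have JN: "J \<le> N"
  proof (cases "v = 0")
    case False
    have "real N * v \<le> real N" using v Npos by simp
    then have "\<lceil>real N * v\<rceil> \<le> int N" by (simp add: ceiling_le_iff)
    then show ?thesis unfolding J_def using False by (simp add: nat_le_iff)
  qed (use N in \<open>simp add: J_def\<close>)
  have th: "0 \<le> \<theta> \<and> \<theta> \<le> 1"
  proof (cases "v = 0")
    case True then show ?thesis by (simp add: \<theta>_def J_def)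
  next
    case False
    then have "real N * v > 0" using v Npos by simp
    then have "real J = of_int \<lceil>real N * v\<rceil>" unfolding J_def using False by simp
    then show ?thesis unfolding \<theta>_def
      using ceiling_correct[of "real N * v"] by linarith
  qed
  have c: "real N * measure lborel ({0..v} \<inter> cb_interval N j) =
      (if j < J then 1 else if j = J then \<theta> else 0)" if "1 \<le> j" for j
  proof -
    have "real N * measure lborel ({0..v} \<inter> cb_interval N j)
        = max 0 (min (real N * v) (real j) - (real j - 1))"
      using cbw_eq[OF N that v(1)] Npos
      by (simp add: max_def min_def divide_simps algebra_simps split: if_splits)
    also have "\<dots> = (if j < J then 1 else if j = J then \<theta> else 0)"
      using th unfolding \<theta>_def by (auto simp: max_def min_def)
    finally show ?thesis .
  qed
  have eq: "(\<Sum>j\<in>{1..N}. (D j - D (j-1)) * (real N * measure lborel ({0..v} \<inter> cb_interval N j)))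
       = D (J-1) - D 0 + \<theta> * (D J - D (J-1))" for D :: "nat \<Rightarrow> real"
  proof -
  have "(\<Sum>j\<in>{1..N}. (D j - D (j-1)) * (real N * measure lborel ({0..v} \<inter> cb_interval N j)))
     = (\<Sum>j\<in>{1..N}. (D j - D (j-1)) * (if j < J then 1 else if j = J then \<theta> else 0))"
    by (intro sum.cong) (auto simp: c)
  also have "\<dots> = (\<Sum>j\<in>{1..J-1}. (D j - D (j-1))) + \<theta> * (D J - D (J-1))"
  proof -
    have se: "{1..N} = {1..J-1} \<union> {J} \<union> {J+1..N}" using J1 JN by auto
    show ?thesis unfolding se
      using J1 by (subst sum.union_disjoint, auto intro!: sum.cong)+
  qed
  also have "(\<Sum>j\<in>{1..J-1}. (D j - D (j-1))) = D (J-1) - D 0"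
    using sum_telescope''[of 0 "J-1" D] by simp
  finally show ?thesis .
  qed
  show ?thesis
    by (rule that[OF J1 JN _ _ _ eq]) (use th in \<open>auto simp: \<theta>_def\<close>)
qed

lemma cell_exists:
  assumes N: "1 \<le> N" and u: "0 \<le> u" "u \<le> 1"
  obtains i0 where "1 \<le> i0" "i0 \<le> N" "real i0 - 1 \<le> real N * u" "real N * u \<le> real i0"
    "\<And>i. i \<in> {1..N} \<Longrightarrow> indicator (cb_interval N i) u = (if i = i0 then 1 else (0::real))"
proof -
  define i0 where "i0 = (if u = 0 then 1 else nat \<lceil>real N * u\<rceil>)"
  have Npos: "real N > 0" using N by simp
  have i1: "1 \<le> i0"
  proof (cases "u = 0")
    case False
    then have "real N * u > 0" using u Npos by simp
    then show ?thesis unfolding i0_def using False by (simp add: le_nat_iff)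
  qed (simp add: i0_def)
  have iN: "i0 \<le> N"
  proof (cases "u = 0")
    case False
    have "real N * u \<le> real N" using u Npos by simp
    then have "\<lceil>real N * u\<rceil> \<le> int N" by (simp add: ceiling_le_iff)
    then show ?thesis unfolding i0_def using False by (simp add: nat_le_iff)
  qed (use N in \<open>simp add: i0_def\<close>)
  have bnd: "real i0 - 1 \<le> real N * u \<and> real N * u \<le> real i0"
  proof (cases "u = 0")
    case True then show ?thesis by (simp add: i0_def)
  next
    case False
    then have "real N * u > 0" using u Npos by simp
    then have "real i0 = of_int \<lceil>real N * u\<rceil>" unfolding i0_def using False by simp
    then show ?thesis using ceiling_correct[of "real N * u"] by linarith
  qed
  have ind: "indicator (cb_interval N i) u = (if i = i0 then 1 else (0::real))" if i: "i \<in> {1..N}" for i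
  proof -
    have "u \<in> cb_interval N i \<longleftrightarrow> i = i0"
    proof
      assume mem: "u \<in> cb_interval N i"
      show "i = i0"
      proof (cases "i = 1")
        case True
        then have "real N * u \<le> 1" using mem Npos by (auto simp: cb_interval_def field_simps)
        show ?thesis
        proof (cases "u = 0")
          case False
          then have "real N * u > 0" using u Npos by simp
          then have "\<lceil>real N * u\<rceil> = 1" using \<open>real N * u \<le> 1\<close> by (simp add: ceiling_eq_iff)
          then show ?thesis using True False unfolding i0_def by simp
        qed (simp add: i0_def True)
      next
        case False
        then have "real i - 1 < real N * u" "real N * u \<le> real i"
          using mem Npos i by (auto simp: cb_interval_def field_simps)
        then have "\<lceil>real N * u\<rceil> = int i" by (simp add: ceiling_eq_iff)
        moreover have "u \<noteq> 0" using \<open>real i - 1 < real N * u\<close> False i by auto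
        ultimately show ?thesis unfolding i0_def by simp
      qed
    next
      assume "i = i0"
      then show "u \<in> cb_interval N i"
      proof (cases "i = 1")
        case True
        then have "real N * u \<le> 1" using bnd \<open>i = i0\<close> by simp
        then show ?thesis using True u Npos by (auto simp: cb_interval_def field_simps)
      next
        case False
        then have "u \<noteq> 0" using \<open>i = i0\<close> unfolding i0_def by auto
        then have "real N * u > 0" using u Npos by simp
        then have "real i0 = of_int \<lceil>real N * u\<rceil>" unfolding i0_def using \<open>u \<noteq> 0\<close> by simp
        then have "real i - 1 < real N * u" "real N * u \<le> real i"
          using ceiling_correct[of "real N * u"] \<open>i = i0\<close> by linarith+
        then show ?thesis using False Npos by (auto simp: cb_interval_def field_simps)
      qed
    qed
    then show ?thesis by (simp add: indicator_def)
  qed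
  show ?thesis using that[OF i1 iN _ _ ind] bnd by auto
qed

definition Dcol :: "nat \<Rightarrow> (real \<Rightarrow> real \<Rightarrow> real) \<Rightarrow> nat \<Rightarrow> nat \<Rightarrow> real" where
  "Dcol N B i j = real N * (B (real i / real N) (real j / real N) - B ((real i - 1) / real N) (real j / real N))"

lemma cb_repr:
  assumes N: "1 \<le> N" and u: "0 \<le> u" "u \<le> 1" and v: "0 \<le> v" "v \<le> 1"
  obtains i0 J \<theta> where "1 \<le> i0" "i0 \<le> N" "real i0 - 1 \<le> real N * u" "real N * u \<le> real i0"
    "1 \<le> J" "J \<le> N" "0 \<le> \<theta>" "\<theta> \<le> 1" "real N * v = real J - 1 + \<theta>"
    "\<And>B. cb_kernel_cdf N B u v = Dcol N B i0 (J-1) - Dcol N B i0 0 + \<theta> * (Dcol N B i0 J - Dcol N B i0 (J-1))"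
proof -
  obtain i0 where i0: "1 \<le> i0" "i0 \<le> N" "real i0 - 1 \<le> real N * u" "real N * u \<le> real i0"
    "\<And>i. i \<in> {1..N} \<Longrightarrow> indicator (cb_interval N i) u = (if i = i0 then 1 else (0::real))"
    using cell_exists[OF N u] by blast
  obtain J \<theta> where J: "1 \<le> J" "J \<le> N" "0 \<le> \<theta>" "\<theta> \<le> 1" "real N * v = real J - 1 + \<theta>"
    "\<And>D::nat\<Rightarrow>real. (\<Sum>j\<in>{1..N}. (D j - D (j-1)) * (real N * measure lborel ({0..v} \<inter> cb_interval N j)))
       = D (J-1) - D 0 + \<theta> * (D J - D (J-1))"
    using lin_sum[OF N v] by blast
  have "cb_kernel_cdf N B u v = Dcol N B i0 (J-1) - Dcol N B i0 0 + \<theta> * (Dcol N B i0 J - Dcol N B i0 (J-1))" for B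
  proof -
    have "cb_kernel_cdf N B u v = (real N)^2 * (\<Sum>i\<in>{1..N}. if i = i0 then (\<Sum>j\<in>{1..N}.
        rect_mass B N i j * measure lborel ({0..v} \<inter> cb_interval N j)) else 0)"
      unfolding cb_kernel_cdf_def
      by (intro arg_cong[where f="\<lambda>x. (real N)^2 * x"] sum.cong refl) (auto simp: i0(5))
    also have "\<dots> = (real N)^2 * (\<Sum>j\<in>{1..N}. rect_mass B N i0 j * measure lborel ({0..v} \<inter> cb_interval N j))"
      using i0 by simp
    also have "\<dots> = (\<Sum>j\<in>{1..N}. (Dcol N B i0 j - Dcol N B i0 (j-1)) * (real N * measure lborel ({0..v} \<inter> cb_interval N j)))"
      unfolding sum_distrib_left
    proof (intro sum.cong refl)
      fix j assume j: "j \<in> {1..N}"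
      then have "real (j - 1) = real j - 1" by auto
      then show "(real N)\<^sup>2 * (rect_mass B N i0 j * measure lborel ({0..v} \<inter> cb_interval N j)) =
         (Dcol N B i0 j - Dcol N B i0 (j - 1)) * (real N * measure lborel ({0..v} \<inter> cb_interval N j))"
        unfolding Dcol_def rect_mass_def by (simp add: power2_eq_square algebra_simps)
    qed
    also have "\<dots> = Dcol N B i0 (J-1) - Dcol N B i0 0 + \<theta> * (Dcol N B i0 J - Dcol N B i0 (J-1))"
      by (rule J(6))
    finally show ?thesis .
  qed
  then show ?thesis using that[OF i0(1-4) J(1-5)] by blast
qed

lemma strip_avg:
  fixes f :: "real \<Rightarrow> real"
  assumes fc: "continuous_on {0..1} f" and ab: "0 \<le> a" "a < b" "b \<le> 1"
    and near: "\<And>t. t \<in> {a<..b} \<Longrightarrow> \<bar>f t - c\<bar> \<le> \<epsilon>"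
  shows "\<bar>(LINT t:{0..b}|lborel. f t) - (LINT t:{0..a}|lborel. f t) - (b - a) * c\<bar> \<le> (b - a) * \<epsilon>"
proof -
  have int01: "set_integrable lborel {0..1} f" by (rule borel_integrable_atLeastAtMost'[OF fc])
  have intA: "set_integrable lborel {0..a} f" by (rule set_integrable_subset[OF int01]) (use ab in auto)
  have intB: "set_integrable lborel {a<..b} f" by (rule set_integrable_subset[OF int01]) (use ab in auto)
  have un: "{0..b} = {0..a} \<union> {a<..b}" using ab by auto
  have split: "(LINT t:{0..b}|lborel. f t) = (LINT t:{0..a}|lborel. f t) + (LINT t:{a<..b}|lborel. f t)"
    unfolding un by (rule set_integral_Un[OF _ intA intB]) auto
  have cint: "set_integrable lborel {a<..b} (\<lambda>t. d)" for d :: real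
    by (rule set_integrable_subset[OF borel_integrable_atLeastAtMost'[of a b "\<lambda>_. d"]]) auto
  have cval: "(LINT t:{a<..b}|lborel. d) = (b - a) * d" for d :: real
    using ab by (subst set_integral_const) auto
  have up: "(LINT t:{a<..b}|lborel. f t) \<le> (LINT t:{a<..b}|lborel. c + \<epsilon>)"
    by (rule set_integral_mono[OF intB cint]) (use near in \<open>force simp: abs_le_iff\<close>)
  have lo: "(LINT t:{a<..b}|lborel. c - \<epsilon>) \<le> (LINT t:{a<..b}|lborel. f t)"
    by (rule set_integral_mono[OF cint intB]) (use near in \<open>force simp: abs_le_iff\<close>)
  show ?thesis using up lo split cval[of "c + \<epsilon>"] cval[of "c - \<epsilon>"]
    by (simp add: abs_le_iff algebra_simps)
qed

lemma lin_diff_bound: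
  fixes D1 D2 :: "nat \<Rightarrow> real"
  assumes "\<And>j. j \<le> N \<Longrightarrow> \<bar>D1 j - D2 j\<bar> \<le> d" "0 \<le> \<theta>" "\<theta> \<le> 1" "J \<le> N"
  shows "\<bar>(D1 (J-1) - D1 0 + \<theta> * (D1 J - D1 (J-1))) - (D2 (J-1) - D2 0 + \<theta> * (D2 J - D2 (J-1)))\<bar> \<le> 2 * d"
proof -
  have a: "\<bar>D1 (J-1) - D2 (J-1)\<bar> \<le> d" "\<bar>D1 J - D2 J\<bar> \<le> d" "\<bar>D1 0 - D2 0\<bar> \<le> d"
    using assms by auto
  have "(D1 (J-1) - D1 0 + \<theta> * (D1 J - D1 (J-1))) - (D2 (J-1) - D2 0 + \<theta> * (D2 J - D2 (J-1)))
      = (1 - \<theta>) * (D1 (J-1) - D2 (J-1)) + \<theta> * (D1 J - D2 J) - (D1 0 - D2 0)"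
    by (simp add: algebra_simps)
  also have "\<bar>\<dots>\<bar> \<le> (1 - \<theta>) * d + \<theta> * d + d"
  proof -
    have "\<bar>(1 - \<theta>) * (D1 (J-1) - D2 (J-1))\<bar> \<le> (1 - \<theta>) * d"
      using a(1) assms(3) by (simp add: abs_mult mult_left_mono)
    moreover have "\<bar>\<theta> * (D1 J - D2 J)\<bar> \<le> \<theta> * d"
      using a(2) assms(2) by (simp add: abs_mult mult_left_mono)
    ultimately show ?thesis using a(3) by linarith
  qed
  also have "\<dots> = 2 * d" by (simp add: algebra_simps)
  finally show ?thesis .
qed

lemma cbB_cbA:
  assumes N: "1 \<le> N" and u: "0 \<le> u" "u \<le> 1" and v: "0 \<le> v" "v \<le> 1"
    and close: "\<And>a b. a \<in> {0..1} \<Longrightarrow> b \<in> {0..1} \<Longrightarrow> \<bar>B a b - A a b\<bar> \<le> \<delta>"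
  shows "\<bar>cb_kernel_cdf N B u v - cb_kernel_cdf N A u v\<bar> \<le> 4 * real N * \<delta>"
proof -
  obtain i0 J \<theta> where r: "1 \<le> i0" "i0 \<le> N" "real i0 - 1 \<le> real N * u" "real N * u \<le> real i0"
    "1 \<le> J" "J \<le> N" "0 \<le> \<theta>" "\<theta> \<le> 1" "real N * v = real J - 1 + \<theta>"
    "\<And>B. cb_kernel_cdf N B u v = Dcol N B i0 (J-1) - Dcol N B i0 0 + \<theta> * (Dcol N B i0 J - Dcol N B i0 (J-1))"
    using cb_repr[OF N u v] by blast
  have Npos: "real N > 0" using N by simp
  have D: "\<bar>Dcol N B i0 j - Dcol N A i0 j\<bar> \<le> 2 * real N * \<delta>" if "j \<le> N" for j
  proof -
    have p1: "real i0 / real N \<in> {0..1}" "(real i0 - 1) / real N \<in> {0..1}" "real j / real N \<in> {0..1}"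
      using r(1,2) that Npos by (auto simp: field_simps)
    have "Dcol N B i0 j - Dcol N A i0 j = real N * ((B (real i0 / real N) (real j / real N) - A (real i0 / real N) (real j / real N))
       - (B ((real i0 - 1) / real N) (real j / real N) - A ((real i0 - 1) / real N) (real j / real N)))"
      unfolding Dcol_def by (simp add: algebra_simps)
    also have "\<bar>\<dots>\<bar> \<le> real N * (\<delta> + \<delta>)"
    proof -
      have "\<bar>(B (real i0 / real N) (real j / real N) - A (real i0 / real N) (real j / real N))
       - (B ((real i0 - 1) / real N) (real j / real N) - A ((real i0 - 1) / real N) (real j / real N))\<bar> \<le> \<delta> + \<delta>"
        using close[OF p1(1,3)] close[OF p1(2,3)] by linarith
      then show ?thesis unfolding abs_mult using Npos by (simp add: mult_left_mono)
    qed
    finally show ?thesis by simp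
  qed
  show ?thesis unfolding r(10)
    using lin_diff_bound[of N "Dcol N B i0" "Dcol N A i0" "2 * real N * \<delta>", OF D r(7,8,6)] by simp
qed

lemma cbA_approx:
  fixes k :: "real \<Rightarrow> real \<Rightarrow> real"
  assumes Aint: "\<And>a w. a \<in> {0..1} \<Longrightarrow> w \<in> {0..1} \<Longrightarrow> A a w = (LINT t:{0..a}|lborel. k t w)"
    and kc: "\<And>w. w \<in> {0..1} \<Longrightarrow> continuous_on {0..1} (\<lambda>t. k t w)"
    and A0: "\<And>a. a \<in> {0..1} \<Longrightarrow> A a 0 = 0"
    and N: "1 \<le> N" and u: "0 \<le> u" "u \<le> 1" and v: "0 \<le> v" "v \<le> 1"
    and mod1: "\<And>t w. t \<in> {0..1} \<Longrightarrow> w \<in> {0..1} \<Longrightarrow> \<bar>t - u\<bar> \<le> 1 / real N \<Longrightarrow> \<bar>k t w - k u w\<bar> \<le> \<epsilon>"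
    and mod2: "\<And>w. w \<in> {0..1} \<Longrightarrow> \<bar>w - v\<bar> \<le> 1 / real N \<Longrightarrow> \<bar>k u w - k u v\<bar> \<le> \<epsilon>"
  shows "\<bar>cb_kernel_cdf N A u v - k u v\<bar> \<le> 2 * \<epsilon>"
proof -
  obtain i0 J \<theta> where r: "1 \<le> i0" "i0 \<le> N" "real i0 - 1 \<le> real N * u" "real N * u \<le> real i0"
    "1 \<le> J" "J \<le> N" "0 \<le> \<theta>" "\<theta> \<le> 1" "real N * v = real J - 1 + \<theta>"
    "\<And>B. cb_kernel_cdf N B u v = Dcol N B i0 (J-1) - Dcol N B i0 0 + \<theta> * (Dcol N B i0 J - Dcol N B i0 (J-1))"
    using cb_repr[OF N u v] by blast
  have Npos: "real N > 0" using N by simp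
  define a where "a = (real i0 - 1) / real N"
  define b where "b = real i0 / real N"
  have ab: "0 \<le> a" "a < b" "b \<le> 1" "b - a = 1 / real N"
    using r(1,2) Npos by (auto simp: a_def b_def field_simps)
  have ua: "a \<le> u" "u \<le> b" using r(3,4) Npos by (auto simp: a_def b_def field_simps)
  have D: "\<bar>Dcol N A i0 j - k u (real j / real N)\<bar> \<le> \<epsilon>" if j: "j \<le> N" for j
  proof -
    define w where "w = real j / real N"
    have w: "w \<in> {0..1}" using j Npos by (auto simp: w_def field_simps)
    have near: "\<bar>k t w - k u w\<bar> \<le> \<epsilon>" if "t \<in> {a<..b}" for t
      using that ab ua by (intro mod1 w) (auto simp: abs_le_iff)
    have "\<bar>(LINT t:{0..b}|lborel. k t w) - (LINT t:{0..a}|lborel. k t w) - (b - a) * k u w\<bar> \<le> (b - a) * \<epsilon>"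
      by (rule strip_avg[OF kc[OF w] ab(1-3) near])
    moreover have "Dcol N A i0 j = real N * ((LINT t:{0..b}|lborel. k t w) - (LINT t:{0..a}|lborel. k t w))"
      unfolding Dcol_def using Aint[OF _ w, of a] Aint[OF _ w, of b] ab
      by (simp add: a_def b_def w_def)
    ultimately have "\<bar>Dcol N A i0 j / real N - (b - a) * k u w\<bar> \<le> (b - a) * \<epsilon>"
      using Npos by simp
    then have "\<bar>(Dcol N A i0 j - k u w) / real N\<bar> \<le> \<epsilon> / real N"
      using ab(4) by (simp add: diff_divide_distrib)
    then show ?thesis using Npos by (simp add: w_def abs_divide divide_le_cancel)
  qed
  have D0: "Dcol N A i0 0 = 0" unfolding Dcol_def using A0 ab by (simp add: a_def[symmetric] b_def[symmetric])
  have w1: "(real J - 1) / real N \<in> {0..1}" "real J / real N \<in> {0..1}"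
    using r(5,6) Npos by (auto simp: field_simps)
  have e1: "(real J - 1) / real N - v = - \<theta> / real N" using r(9) Npos by (simp add: field_simps)
  have e2: "real J / real N - v = (1 - \<theta>) / real N" using r(9) Npos by (simp add: field_simps)
  have k1: "\<bar>k u ((real J - 1) / real N) - k u v\<bar> \<le> \<epsilon>"
  proof (rule mod2[OF w1(1)])
    have "\<bar>- \<theta> / real N\<bar> = \<theta> / real N" using r(7) Npos by simp
    also have "\<dots> \<le> 1 / real N" using r(8) Npos by (simp add: divide_right_mono)
    finally show "\<bar>(real J - 1) / real N - v\<bar> \<le> 1 / real N" unfolding e1 .
  qed
  have k2: "\<bar>k u (real J / real N) - k u v\<bar> \<le> \<epsilon>"
  proof (rule mod2[OF w1(2)])
    have "\<bar>(1 - \<theta>) / real N\<bar> = (1 - \<theta>) / real N" using r(8) Npos by simp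
    also have "\<dots> \<le> 1 / real N" using r(7) Npos by (simp add: divide_right_mono)
    finally show "\<bar>real J / real N - v\<bar> \<le> 1 / real N" unfolding e2 .
  qed
  have Jm: "real (J - 1) = real J - 1" using r(5) by auto
  have d1: "\<bar>Dcol N A i0 (J-1) - k u ((real J - 1) / real N)\<bar> \<le> \<epsilon>" using D[of "J-1"] r(6) Jm by simp
  have d2: "\<bar>Dcol N A i0 J - k u (real J / real N)\<bar> \<le> \<epsilon>" using D[of J] r(6) by simp
  have "cb_kernel_cdf N A u v - k u v =
      (1 - \<theta>) * ((Dcol N A i0 (J-1) - k u ((real J - 1) / real N)) + (k u ((real J - 1) / real N) - k u v))
      + \<theta> * ((Dcol N A i0 J - k u (real J / real N)) + (k u (real J / real N) - k u v))"
    unfolding r(10) D0 by (simp only: algebra_simps)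
  also have "\<bar>\<dots>\<bar> \<le> (1 - \<theta>) * (\<epsilon> + \<epsilon>) + \<theta> * (\<epsilon> + \<epsilon>)"
  proof -
    have "\<bar>(1 - \<theta>) * ((Dcol N A i0 (J-1) - k u ((real J - 1) / real N)) + (k u ((real J - 1) / real N) - k u v))\<bar> \<le> (1 - \<theta>) * (\<epsilon> + \<epsilon>)"
      unfolding abs_mult using r(8) d1 k1 by (intro mult_mono) auto
    moreover have "\<bar>\<theta> * ((Dcol N A i0 J - k u (real J / real N)) + (k u (real J / real N) - k u v))\<bar> \<le> \<theta> * (\<epsilon> + \<epsilon>)"
      unfolding abs_mult using r(7) d2 k2 by (intro mult_mono) auto
    ultimately show ?thesis by (rule order_trans[OF abs_triangle_ineq add_mono])
  qed
  finally show ?thesis by (simp add: algebra_simps)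
qed

lemma cb_conv:
  fixes k :: "real \<Rightarrow> real \<Rightarrow> real" and Nn :: "nat \<Rightarrow> nat"
  assumes Aint: "\<And>a w. a \<in> {0..1} \<Longrightarrow> w \<in> {0..1} \<Longrightarrow> A a w = (LINT t:{0..a}|lborel. k t w)"
    and kc: "continuous_on ({0..1} \<times> {0..1}) (\<lambda>(t, w). k t w)"
    and A0: "\<And>a. a \<in> {0..1} \<Longrightarrow> A a 0 = 0"
    and Nn: "filterlim Nn at_top sequentially"
    and close: "\<And>e. e > 0 \<Longrightarrow> eventually (\<lambda>n. \<forall>a\<in>{0..1}. \<forall>b\<in>{0..1}. real (Nn n) * \<bar>B n a b - A a b\<bar> \<le> e) sequentially"
    and un: "un \<longlonglongrightarrow> u" "\<And>n. un n \<in> {0..1}" and vn: "vn \<longlonglongrightarrow> v" "\<And>n. vn n \<in> {0..1}"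
    and uv: "u \<in> {0..1}" "v \<in> {0..1}"
  shows "(\<lambda>n. cb_kernel_cdf (Nn n) (B n) (un n) (vn n)) \<longlonglongrightarrow> k u v"
proof (rule tendstoI)
  fix e :: real assume e: "e > 0"
  let ?S = "{0..1::real} \<times> {0..1::real}"
  have "uniformly_continuous_on ?S (\<lambda>(t, w). k t w)"
    by (rule compact_uniformly_continuous[OF kc]) (intro compact_Times compact_Icc)
  then obtain d where d: "d > 0" and dd: "\<And>p p'. p \<in> ?S \<Longrightarrow> p' \<in> ?S \<Longrightarrow> dist p' p < d \<Longrightarrow>
      dist ((\<lambda>(t, w). k t w) p') ((\<lambda>(t, w). k t w) p) < e / 8"
    unfolding uniformly_continuous_on_def using e by (metis divide_pos_pos zero_less_numeral)
  have kcw: "continuous_on {0..1} (\<lambda>t. k t w)" if "w \<in> {0..1}" for w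
  proof -
    have "continuous_on {0..1} ((\<lambda>(t, w). k t w) \<circ> (\<lambda>t. (t, w)))"
      by (rule continuous_on_compose[OF continuous_on_Pair[OF continuous_on_id continuous_on_const]])
         (rule continuous_on_subset[OF kc], use that in auto)
    then show ?thesis by (simp add: o_def)
  qed
  have conv_k: "(\<lambda>n. k (un n) (vn n)) \<longlonglongrightarrow> k u v"
  proof -
    have "(\<lambda>n. (un n, vn n)) \<longlonglongrightarrow> (u, v)" by (intro tendsto_Pair un vn)
    moreover have "\<forall>\<^sub>F n in sequentially. (un n, vn n) \<in> ?S" using un(2) vn(2) by auto
    ultimately have "(\<lambda>n. (\<lambda>(t, w). k t w) (un n, vn n)) \<longlonglongrightarrow> (\<lambda>(t, w). k t w) (u, v)"
      by (intro continuous_on_tendsto_compose[OF kc]) (use uv in auto)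
    then show ?thesis by (simp add: o_def)
  qed
  have ev1: "\<forall>\<^sub>F n in sequentially. dist (k (un n) (vn n)) (k u v) < e / 4"
    using tendstoD[OF conv_k, of "e/4"] e by simp
  have ev2: "\<forall>\<^sub>F n in sequentially. \<forall>a\<in>{0..1}. \<forall>b\<in>{0..1}. real (Nn n) * \<bar>B n a b - A a b\<bar> \<le> e / 16"
    using close[of "e/16"] e by simp
  have ev3: "\<forall>\<^sub>F n in sequentially. real (Nn n) \<ge> max 1 (2 / d)"
  proof -
    have "\<forall>\<^sub>F n in sequentially. nat \<lceil>max 1 (2 / d)\<rceil> \<le> Nn n"
      using Nn unfolding filterlim_at_top by blast
    then show ?thesis
    proof eventually_elim
      case (elim n)
      then have "real (nat \<lceil>max 1 (2 / d)\<rceil>) \<le> real (Nn n)" by linarith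
      moreover have "max 1 (2 / d) \<le> real (nat \<lceil>max 1 (2 / d)\<rceil>)" by linarith
      ultimately show ?case by linarith
    qed
  qed
  show "\<forall>\<^sub>F n in sequentially. dist (cb_kernel_cdf (Nn n) (B n) (un n) (vn n)) (k u v) < e"
    using ev1 ev2 ev3
  proof eventually_elim
    case (elim n)
    define N where "N = Nn n"
    have N1: "1 \<le> N" using elim(3) unfolding N_def by simp
    have Npos: "real N > 0" using N1 by simp
    have Nd: "1 / real N < d"
    proof -
      have "real N \<ge> 2 / d" using elim(3) unfolding N_def by simp
      then have "1 / real N \<le> d / 2" using d Npos by (simp add: field_simps)
      then show ?thesis using d by linarith
    qed
    have mod1: "\<bar>k t w - k (un n) w\<bar> \<le> e / 8" if "t \<in> {0..1}" "w \<in> {0..1}" "\<bar>t - un n\<bar> \<le> 1 / real N" for t w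
    proof -
      have "dist (t, w) (un n, w) < d" using that Nd by (simp add: dist_Pair_Pair dist_real_def)
      then have "dist (k t w) (k (un n) w) < e / 8" using dd[of "(un n, w)" "(t, w)"] that un(2) by auto
      then show ?thesis by (simp add: dist_real_def)
    qed
    have mod2: "\<bar>k (un n) w - k (un n) (vn n)\<bar> \<le> e / 8" if "w \<in> {0..1}" "\<bar>w - vn n\<bar> \<le> 1 / real N" for w
    proof -
      have "dist (un n, w) (un n, vn n) < d" using that Nd by (simp add: dist_Pair_Pair dist_real_def)
      then have "dist (k (un n) w) (k (un n) (vn n)) < e / 8" using dd[of "(un n, vn n)" "(un n, w)"] that un(2) vn(2) by auto
      then show ?thesis by (simp add: dist_real_def)
    qed
    have uu: "0 \<le> un n" "un n \<le> 1" "0 \<le> vn n" "vn n \<le> 1" using un(2)[of n] vn(2)[of n] by auto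
    have a1: "\<bar>cb_kernel_cdf N A (un n) (vn n) - k (un n) (vn n)\<bar> \<le> 2 * (e / 8)"
      by (rule cbA_approx[OF Aint kcw A0 N1 uu mod1 mod2]) auto
    have cl: "\<bar>B n a b - A a b\<bar> \<le> e / 16 / real N" if "a \<in> {0..1}" "b \<in> {0..1}" for a b
      using elim(2) that Npos unfolding N_def[symmetric] by (simp add: field_simps mult.commute)
    have a2: "\<bar>cb_kernel_cdf N (B n) (un n) (vn n) - cb_kernel_cdf N A (un n) (vn n)\<bar> \<le> 4 * real N * (e / 16 / real N)"
      by (rule cbB_cbA[OF N1 uu cl])
    have a3: "4 * real N * (e / 16 / real N) = e / 4" using Npos e by simp
    show ?case using a1 a2 a3 elim(1) unfolding N_def[symmetric] dist_real_def by linarith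
  qed
qed

definition cnt :: "(nat \<Rightarrow> real) \<Rightarrow> nat \<Rightarrow> real \<Rightarrow> nat" where
  "cnt f n x = card {i. i < n \<and> f i \<le> x}"

lemma cnt_set_fin: fixes f :: "nat \<Rightarrow> real" shows "finite {i. i < n \<and> f i \<le> x}" by (rule finite_subset[of _ "{..<n}"]) auto

lemma cnt_le: "cnt f n x \<le> n"
proof -
  have "{i. i < n \<and> f i \<le> x} \<subseteq> {..<n}" by auto
  then show ?thesis unfolding cnt_def using card_mono[of "{..<n}"] by fastforce
qed

lemma cnt_mono: "x \<le> y \<Longrightarrow> cnt f n x \<le> cnt f n y"
  unfolding cnt_def by (intro card_mono) auto

lemma cnt_sets_nested:
  fixes f :: "nat \<Rightarrow> real" shows
  "{i. i < n \<and> f i \<le> x} \<subseteq> {i. i < n \<and> f i \<le> y} \<or> {i. i < n \<and> f i \<le> y} \<subseteq> {i. i < n \<and> f i \<le> x}"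
proof (cases "x \<le> y")
  case True
  then have "{i. i < n \<and> f i \<le> x} \<subseteq> {i. i < n \<and> f i \<le> y}" by auto
  then show ?thesis by blast
next
  case False
  then have "{i. i < n \<and> f i \<le> y} \<subseteq> {i. i < n \<and> f i \<le> x}" by auto
  then show ?thesis by blast
qed

lemma cnt_le_subset:
  assumes "cnt f n x \<le> cnt f n y"
  shows "{i. i < n \<and> f i \<le> x} \<subseteq> {i. i < n \<and> f i \<le> y}"
proof (cases "x \<le> y")
  case False
  then have sub: "{i. i < n \<and> f i \<le> y} \<subseteq> {i. i < n \<and> f i \<le> x}" by auto
  then have "{i. i < n \<and> f i \<le> y} = {i. i < n \<and> f i \<le> x}"
    using assms card_mono[OF cnt_set_fin sub] unfolding cnt_def by (intro card_subset_eq[OF cnt_set_fin sub]) simp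
  then show ?thesis by simp
qed auto

lemma cnt_eq_sets: "cnt f n x = cnt f n y \<Longrightarrow> {i. i < n \<and> f i \<le> x} = {i. i < n \<and> f i \<le> y}"
  using cnt_le_subset[of f n x y] cnt_le_subset[of f n y x] by auto

lemma cnt_rank:
  assumes k: "k < n"
  shows "f k \<le> x \<longleftrightarrow> cnt f n (f k) \<le> cnt f n x"
proof
  assume "f k \<le> x" then show "cnt f n (f k) \<le> cnt f n x" by (rule cnt_mono)
next
  assume le: "cnt f n (f k) \<le> cnt f n x"
  show "f k \<le> x"
  proof (rule ccontr)
    assume "\<not> f k \<le> x"
    then have "{i. i < n \<and> f i \<le> x} \<subset> {i. i < n \<and> f i \<le> f k}" using k by auto
    then have "cnt f n x < cnt f n (f k)" unfolding cnt_def by (intro psubset_card_mono) auto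
    then show False using le by simp
  qed
qed

lemma cnt_rank_pos: "k < n \<Longrightarrow> 1 \<le> cnt f n (f k)"
proof -
  assume k: "k < n"
  have "{i. i < n \<and> f i \<le> f k} \<noteq> {}" using k by auto
  then show ?thesis unfolding cnt_def by (simp add: Suc_le_eq card_gt_0_iff)
qed

lemma cnt_surj:
  assumes inj: "inj_on f {..<n}" and m: "m \<le> n"
  shows "\<exists>x. cnt f n x = m"
  using m
proof (induction m)
  case 0
  show ?case
  proof (cases "n = 0")
    case True then show ?thesis by (auto simp: cnt_def)
  next
    case False
    define x where "x = Min (f ` {..<n}) - 1"
    have "f i > x" if "i < n" for i
      using that unfolding x_def by (smt (verit) Min_le finite_imageI finite_lessThan image_eqI lessThan_iff)
    then have "{i. i < n \<and> f i \<le> x} = {}" by force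
    then show ?thesis unfolding cnt_def by auto
  qed
next
  case (Suc m)
  then obtain x where x: "cnt f n x = m" by auto
  define T where "T = {i. i < n \<and> x < f i}"
  have T: "T \<noteq> {}"
  proof
    assume "T = {}"
    then have "{i. i < n \<and> f i \<le> x} = {..<n}" unfolding T_def by auto
    then show False using x Suc.prems unfolding cnt_def by simp
  qed
  have finT: "finite T" unfolding T_def by auto
  define x' where "x' = Min (f ` T)"
  have x'T: "x' \<in> f ` T" unfolding x'_def using T finT by (intro Min_in) auto
  then obtain i0 where i0: "i0 \<in> T" "f i0 = x'" by auto
  have x'min: "x' \<le> f i" if "i \<in> T" for i unfolding x'_def using finT that by simp
  have xx': "x < x'" using i0 unfolding T_def by auto
  have eq: "{i. i < n \<and> f i \<le> x'} = insert i0 {i. i < n \<and> f i \<le> x}"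
  proof (intro equalityI subsetI)
    fix i assume i: "i \<in> {i. i < n \<and> f i \<le> x'}"
    show "i \<in> insert i0 {i. i < n \<and> f i \<le> x}"
    proof (cases "f i \<le> x")
      case False
      then have "i \<in> T" using i unfolding T_def by auto
      then have "f i = x'" using x'min i by force
      then have "i = i0" using inj i i0 unfolding T_def inj_on_def by auto
      then show ?thesis by simp
    qed (use i in auto)
  next
    fix i assume "i \<in> insert i0 {i. i < n \<and> f i \<le> x}"
    then show "i \<in> {i. i < n \<and> f i \<le> x'}" using i0 xx' unfolding T_def by auto
  qed
  have "i0 \<notin> {i. i < n \<and> f i \<le> x}" using i0 unfolding T_def by auto
  then have "cnt f n x' = Suc m" unfolding cnt_def eq using x unfolding cnt_def by simp
  then show ?case by blast
qed

lemma emp_joint_cnt: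
  "emp_joint Xs Ys n \<omega> x y = real (card ({i. i < n \<and> Xs i \<omega> \<le> x} \<inter> {i. i < n \<and> Ys i \<omega> \<le> y})) / real n"
  unfolding emp_joint_def by (rule arg_cong[where f="\<lambda>S. real (card S) / real n"]) auto

lemma card_inter_mono_diff:
  fixes A A' B B' :: "nat set"
  assumes "finite A'" "finite B'" "A \<subseteq> A'" "B \<subseteq> B'"
  shows "real (card (A' \<inter> B')) - real (card (A \<inter> B')) - real (card (A' \<inter> B)) + real (card (A \<inter> B)) \<ge> 0"
proof -
  have f: "finite (A' \<inter> B')" using assms by auto
  have c1: "card (A' \<inter> B') = card (A \<inter> B') + card ((A' - A) \<inter> B')"
    using assms by (subst card_Un_disjoint[symmetric]) (auto intro: finite_subset arg_cong[where f=card])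
  have c2: "card (A' \<inter> B) = card (A \<inter> B) + card ((A' - A) \<inter> B)"
    using assms by (subst card_Un_disjoint[symmetric]) (auto intro: finite_subset arg_cong[where f=card])
  have c3: "card ((A' - A) \<inter> B) \<le> card ((A' - A) \<inter> B')"
    using assms by (intro card_mono) auto
  show ?thesis using c1 c2 c3 by simp
qed

lemma emp_sub_char:
  fixes Xs Ys :: "nat \<Rightarrow> 'a \<Rightarrow> real"
  assumes injX: "inj_on (\<lambda>i. Xs i \<omega>) {..<n}" and injY: "inj_on (\<lambda>i. Ys i \<omega>) {..<n}" and n: "1 \<le> n"
  shows "grid_subcopula n (emp_subcopula Xs Ys n \<omega>)"
    "\<And>x y. emp_joint Xs Ys n \<omega> x y = emp_subcopula Xs Ys n \<omega> (cnt (\<lambda>i. Xs i \<omega>) n x) (cnt (\<lambda>i. Ys i \<omega>) n y)"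
proof -
  let ?fX = "\<lambda>i. Xs i \<omega>" and ?fY = "\<lambda>i. Ys i \<omega>"
  define xg where "xg i = (SOME x. cnt ?fX n x = i)" for i
  define yg where "yg j = (SOME y. cnt ?fY n y = j)" for j
  have xg: "cnt ?fX n (xg i) = i" if "i \<le> n" for i
    unfolding xg_def using cnt_surj[OF injX that] by (rule someI_ex)
  have yg: "cnt ?fY n (yg j) = j" if "j \<le> n" for j
    unfolding yg_def using cnt_surj[OF injY that] by (rule someI_ex)
  define S0 where "S0 i j = (if i \<le> n \<and> j \<le> n then emp_joint Xs Ys n \<omega> (xg i) (yg j) else 0)" for i j
  define P where "P S \<longleftrightarrow> grid_subcopula n S \<and> (\<forall>x y. emp_joint Xs Ys n \<omega> x y =
        S (card {i. i < n \<and> Xs i \<omega> \<le> x}) (card {i. i < n \<and> Ys i \<omega> \<le> y}))" for S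
  have cntX: "card {i. i < n \<and> Xs i \<omega> \<le> x} = cnt ?fX n x" for x by (simp add: cnt_def)
  have cntY: "card {i. i < n \<and> Ys i \<omega> \<le> y} = cnt ?fY n y" for y by (simp add: cnt_def)
  have Sx: "S0 (cnt ?fX n x) (cnt ?fY n y) = emp_joint Xs Ys n \<omega> x y" for x y
  proof -
    have a: "cnt ?fX n x \<le> n" "cnt ?fY n y \<le> n" by (rule cnt_le)+
    have e1: "{i. i < n \<and> Xs i \<omega> \<le> xg (cnt ?fX n x)} = {i. i < n \<and> Xs i \<omega> \<le> x}"
      by (rule cnt_eq_sets) (use xg[OF a(1)] in simp)
    have e2: "{i. i < n \<and> Ys i \<omega> \<le> yg (cnt ?fY n y)} = {i. i < n \<and> Ys i \<omega> \<le> y}"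
      by (rule cnt_eq_sets) (use yg[OF a(2)] in simp)
    show ?thesis unfolding S0_def using a by (simp add: emp_joint_cnt e1 e2)
  qed
  have all_set: "{i. i < n \<and> Xs i \<omega> \<le> xg n} = {..<n}"
  proof -
    have "{i. i < n \<and> Xs i \<omega> \<le> xg n} \<subseteq> {..<n}" by auto
    moreover have "card {i. i < n \<and> Xs i \<omega> \<le> xg n} = card {..<n}" using xg[of n] by (simp add: cnt_def)
    ultimately show ?thesis by (intro card_subset_eq) auto
  qed
  have all_setY: "{i. i < n \<and> Ys i \<omega> \<le> yg n} = {..<n}"
  proof -
    have "{i. i < n \<and> Ys i \<omega> \<le> yg n} \<subseteq> {..<n}" by auto
    moreover have "card {i. i < n \<and> Ys i \<omega> \<le> yg n} = card {..<n}" using yg[of n] by (simp add: cnt_def)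
    ultimately show ?thesis by (intro card_subset_eq) auto
  qed
  have empX: "{i. i < n \<and> Xs i \<omega> \<le> xg 0} = {}"
    using xg[of 0] cnt_set_fin[of n ?fX "xg 0"] by (simp add: cnt_def)
  have empY: "{i. i < n \<and> Ys i \<omega> \<le> yg 0} = {}"
    using yg[of 0] cnt_set_fin[of n ?fY "yg 0"] by (simp add: cnt_def)
  have subX: "{k. k < n \<and> Xs k \<omega> \<le> xg i} \<subseteq> {k. k < n \<and> Xs k \<omega> \<le> xg (Suc i)}" if "i < n" for i
    by (rule cnt_le_subset) (use xg[of i] xg[of "Suc i"] that in simp)
  have subY: "{k. k < n \<and> Ys k \<omega> \<le> yg j} \<subseteq> {k. k < n \<and> Ys k \<omega> \<le> yg (Suc j)}" if "j < n" for j
    by (rule cnt_le_subset) (use yg[of j] yg[of "Suc j"] that in simp)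
  have grid: "grid_subcopula n S0"
    unfolding grid_subcopula_def
  proof (intro conjI allI impI ballI)
    fix i j assume "n < i \<or> n < j" then show "S0 i j = 0" unfolding S0_def by auto
  next
    fix j assume j: "j \<le> n"
    show "S0 0 j = 0" using j by (simp add: S0_def emp_joint_cnt empX)
    have "{..<n} \<inter> {i. i < n \<and> Ys i \<omega> \<le> yg j} = {i. i < n \<and> Ys i \<omega> \<le> yg j}" by auto
    then show "S0 n j = real j / real n" using j yg[OF j] by (simp add: S0_def emp_joint_cnt all_set cnt_def)
  next
    fix i assume i: "i \<le> n"
    show "S0 i 0 = 0" using i by (simp add: S0_def emp_joint_cnt empY)
    have "{k. k < n \<and> Xs k \<omega> \<le> xg i} \<inter> {..<n} = {k. k < n \<and> Xs k \<omega> \<le> xg i}" by auto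
    then show "S0 i n = real i / real n" using i xg[OF i] by (simp add: S0_def emp_joint_cnt all_setY cnt_def)
  next
    fix i j assume i: "i < n" and j: "j < n"
    have "real (card ({k. k < n \<and> Xs k \<omega> \<le> xg (Suc i)} \<inter> {k. k < n \<and> Ys k \<omega> \<le> yg (Suc j)}))
        - real (card ({k. k < n \<and> Xs k \<omega> \<le> xg i} \<inter> {k. k < n \<and> Ys k \<omega> \<le> yg (Suc j)}))
        - real (card ({k. k < n \<and> Xs k \<omega> \<le> xg (Suc i)} \<inter> {k. k < n \<and> Ys k \<omega> \<le> yg j}))
        + real (card ({k. k < n \<and> Xs k \<omega> \<le> xg i} \<inter> {k. k < n \<and> Ys k \<omega> \<le> yg j})) \<ge> 0"
      by (rule card_inter_mono_diff[OF cnt_set_fin cnt_set_fin subX[OF i] subY[OF j]])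
    then have "(real (card ({k. k < n \<and> Xs k \<omega> \<le> xg (Suc i)} \<inter> {k. k < n \<and> Ys k \<omega> \<le> yg (Suc j)}))
        - real (card ({k. k < n \<and> Xs k \<omega> \<le> xg i} \<inter> {k. k < n \<and> Ys k \<omega> \<le> yg (Suc j)}))
        - real (card ({k. k < n \<and> Xs k \<omega> \<le> xg (Suc i)} \<inter> {k. k < n \<and> Ys k \<omega> \<le> yg j}))
        + real (card ({k. k < n \<and> Xs k \<omega> \<le> xg i} \<inter> {k. k < n \<and> Ys k \<omega> \<le> yg j}))) / real n \<ge> 0"
      by simp
    then show "S0 (Suc i) (Suc j) - S0 i (Suc j) - S0 (Suc i) j + S0 i j \<ge> 0"
      using i j by (simp add: S0_def emp_joint_cnt diff_divide_distrib add_divide_distrib)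
  qed
  have PS0: "P S0" unfolding P_def using grid Sx by (simp add: cntX cntY)
  have uniq: "S = S0" if "P S" for S
  proof (intro ext)
    fix i j
    show "S i j = S0 i j"
    proof (cases "i \<le> n \<and> j \<le> n")
      case True
      have "S i j = S (cnt ?fX n (xg i)) (cnt ?fY n (yg j))" using True xg yg by simp
      also have "\<dots> = emp_joint Xs Ys n \<omega> (xg i) (yg j)" using that unfolding P_def cntX cntY by simp
      also have "\<dots> = S0 i j" using True by (simp add: S0_def)
      finally show ?thesis .
    next
      case False
      then show ?thesis using that grid unfolding P_def grid_subcopula_def by (auto simp: not_le)
    qed
  qed
  have "emp_subcopula Xs Ys n \<omega> = S0"
    unfolding emp_subcopula_def using PS0 uniq unfolding P_def by (intro the_equality) blast+
  then show "grid_subcopula n (emp_subcopula Xs Ys n \<omega>)"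
    "\<And>x y. emp_joint Xs Ys n \<omega> x y = emp_subcopula Xs Ys n \<omega> (cnt (\<lambda>i. Xs i \<omega>) n x) (cnt (\<lambda>i. Ys i \<omega>) n y)"
    using grid Sx by auto
qed

lemma copula_props:
  assumes C: "copula A"
  shows copula_0: "\<And>u. u \<in> {0..1} \<Longrightarrow> A u 0 = 0"
    and copula_0': "\<And>v. v \<in> {0..1} \<Longrightarrow> A 0 v = 0"
    and copula_1: "\<And>u. u \<in> {0..1} \<Longrightarrow> A u 1 = u"
    and copula_1': "\<And>v. v \<in> {0..1} \<Longrightarrow> A 1 v = v"
    and copula_incr: "\<And>u1 u2 v1 v2. 0 \<le> u1 \<Longrightarrow> u1 \<le> u2 \<Longrightarrow> u2 \<le> 1 \<Longrightarrow> 0 \<le> v1 \<Longrightarrow> v1 \<le> v2 \<Longrightarrow> v2 \<le> 1 \<Longrightarrow>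
        A u2 v2 - A u1 v2 - A u2 v1 + A u1 v1 \<ge> 0"
  using C unfolding copula_def by auto

lemma copula_lip1:
  assumes C: "copula A" and "0 \<le> u" "u \<le> u'" "u' \<le> 1" "0 \<le> v" "v \<le> 1"
  shows "0 \<le> A u' v - A u v" "A u' v - A u v \<le> u' - u"
proof -
  have "A u' v - A u v - A u' 0 + A u 0 \<ge> 0" using copula_incr[OF C, of u u' 0 v] assms by auto
  then show "0 \<le> A u' v - A u v" using copula_0[OF C, of u] copula_0[OF C, of u'] assms by auto
  have "A u' 1 - A u 1 - A u' v + A u v \<ge> 0" using copula_incr[OF C, of u u' v 1] assms by auto
  then show "A u' v - A u v \<le> u' - u" using copula_1[OF C, of u] copula_1[OF C, of u'] assms by auto
qed

lemma copula_lip2: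
  assumes C: "copula A" and "0 \<le> v" "v \<le> v'" "v' \<le> 1" "0 \<le> u" "u \<le> 1"
  shows "0 \<le> A u v' - A u v" "A u v' - A u v \<le> v' - v"
proof -
  have "A u v' - A 0 v' - A u v + A 0 v \<ge> 0" using copula_incr[OF C, of 0 u v v'] assms by auto
  then show "0 \<le> A u v' - A u v" using copula_0'[OF C, of v] copula_0'[OF C, of v'] assms by auto
  have "A 1 v' - A u v' - A 1 v + A u v \<ge> 0" using copula_incr[OF C, of u 1 v v'] assms by auto
  then show "A u v' - A u v \<le> v' - v" using copula_1'[OF C, of v] copula_1'[OF C, of v'] assms by auto
qed

lemma copula_lip:
  assumes C: "copula A" and "u \<in> {0..1}" "u' \<in> {0..1}" "v \<in> {0..1}" "v' \<in> {0..1}"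
  shows "\<bar>A u v - A u' v'\<bar> \<le> \<bar>u - u'\<bar> + \<bar>v - v'\<bar>"
proof -
  have a: "\<bar>A u v - A u' v\<bar> \<le> \<bar>u - u'\<bar>"
  proof (cases "u \<le> u'")
    case True then show ?thesis using copula_lip1[OF C, of u u' v] assms by auto
  next
    case False then show ?thesis using copula_lip1[OF C, of u' u v] assms by auto
  qed
  have b: "\<bar>A u' v - A u' v'\<bar> \<le> \<bar>v - v'\<bar>"
  proof (cases "v \<le> v'")
    case True then show ?thesis using copula_lip2[OF C, of v v' u'] assms by auto
  next
    case False then show ?thesis using copula_lip2[OF C, of v' v u'] assms by auto
  qed
  show ?thesis using a b by linarith
qed

lemma copula_range:
  assumes C: "copula A" and "u \<in> {0..1}" "v \<in> {0..1}"
  shows "0 \<le> A u v" "A u v \<le> 1"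
  using copula_lip1[OF C, of 0 u v] copula_0'[OF C, of v] copula_lip2[OF C, of v 1 u] copula_1[OF C, of u] assms
  by auto

lemma idx_facts:
  assumes n: "1 \<le> n" and u: "0 \<le> u" "u \<le> 1"
  shows "min (nat \<lfloor>real n * u\<rfloor>) (n - 1) \<le> n - 1"
    "0 \<le> real n * u - real (min (nat \<lfloor>real n * u\<rfloor>) (n - 1))"
    "real n * u - real (min (nat \<lfloor>real n * u\<rfloor>) (n - 1)) \<le> 1"
proof -
  have nu: "0 \<le> real n * u" "real n * u \<le> real n" using u n by (auto simp: mult_left_le)
  show "min (nat \<lfloor>real n * u\<rfloor>) (n - 1) \<le> n - 1" by simp
  show "0 \<le> real n * u - real (min (nat \<lfloor>real n * u\<rfloor>) (n - 1))"
  proof -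
    have "real (min (nat \<lfloor>real n * u\<rfloor>) (n - 1)) \<le> real (nat \<lfloor>real n * u\<rfloor>)" by simp
    also have "\<dots> \<le> real n * u" using nu by linarith
    finally show ?thesis by simp
  qed
  show "real n * u - real (min (nat \<lfloor>real n * u\<rfloor>) (n - 1)) \<le> 1"
  proof (cases "nat \<lfloor>real n * u\<rfloor> \<le> n - 1")
    case True
    then have "real (min (nat \<lfloor>real n * u\<rfloor>) (n - 1)) = real (nat \<lfloor>real n * u\<rfloor>)" by simp
    then show ?thesis using nu by linarith
  next
    case False
    then have "real (min (nat \<lfloor>real n * u\<rfloor>) (n - 1)) = real n - 1" using n by (simp add: of_nat_diff)
    then show ?thesis using nu by linarith
  qed
qed

lemma abs_wmul: fixes w x :: real shows "0 \<le> w \<Longrightarrow> \<bar>x\<bar> \<le> \<eta> \<Longrightarrow> \<bar>w * x\<bar> \<le> w * \<eta>"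
  by (simp add: abs_mult mult_left_mono)

lemma bilinear_bound:
  fixes S :: "nat \<Rightarrow> nat \<Rightarrow> real"
  assumes n: "1 \<le> n" and u: "0 \<le> u" "u \<le> 1" and v: "0 \<le> v" "v \<le> 1"
    and corner: "\<And>a b. a \<le> n \<Longrightarrow> b \<le> n \<Longrightarrow> \<bar>real a / real n - u\<bar> \<le> 1 / real n \<Longrightarrow>
        \<bar>real b / real n - v\<bar> \<le> 1 / real n \<Longrightarrow> \<bar>S a b - c\<bar> \<le> \<eta>"
  shows "\<bar>grid_bilinear n S u v - c\<bar> \<le> \<eta>"
proof -
  define i where "i = min (nat \<lfloor>real n * u\<rfloor>) (n - 1)"
  define j where "j = min (nat \<lfloor>real n * v\<rfloor>) (n - 1)"
  define s where "s = real n * u - real i"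
  define t where "t = real n * v - real j"
  have fi: "i \<le> n - 1" "0 \<le> s" "s \<le> 1" using idx_facts[OF n u] unfolding i_def s_def by auto
  have fj: "j \<le> n - 1" "0 \<le> t" "t \<le> 1" using idx_facts[OF n v] unfolding j_def t_def by auto
  have Npos: "real n > 0" using n by simp
  have nb: "\<bar>real a / real n - u\<bar> \<le> 1 / real n" if "a = i \<or> a = Suc i" for a
  proof -
    have "real a / real n - u = (real a - real n * u) / real n" using Npos by (simp add: field_simps)
    moreover have "\<bar>real a - real n * u\<bar> \<le> 1" using that fi unfolding s_def by auto
    ultimately show ?thesis using Npos by (simp add: abs_divide divide_right_mono)
  qed
  have nb2: "\<bar>real b / real n - v\<bar> \<le> 1 / real n" if "b = j \<or> b = Suc j" for b
  proof -
    have "real b / real n - v = (real b - real n * v) / real n" using Npos by (simp add: field_simps)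
    moreover have "\<bar>real b - real n * v\<bar> \<le> 1" using that fj unfolding t_def by auto
    ultimately show ?thesis using Npos by (simp add: abs_divide divide_right_mono)
  qed
  have le: "i \<le> n" "Suc i \<le> n" "j \<le> n" "Suc j \<le> n" using fi fj n by auto
  have c1: "\<bar>S i j - c\<bar> \<le> \<eta>" by (rule corner[OF le(1) le(3) nb nb2]) auto
  have c2: "\<bar>S (Suc i) j - c\<bar> \<le> \<eta>" by (rule corner[OF le(2) le(3) nb nb2]) auto
  have c3: "\<bar>S i (Suc j) - c\<bar> \<le> \<eta>" by (rule corner[OF le(1) le(4) nb nb2]) auto
  have c4: "\<bar>S (Suc i) (Suc j) - c\<bar> \<le> \<eta>" by (rule corner[OF le(2) le(4) nb nb2]) auto
  have eq: "grid_bilinear n S u v - c = (1 - s) * (1 - t) * (S i j - c) + s * (1 - t) * (S (Suc i) j - c)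
         + (1 - s) * t * (S i (Suc j) - c) + s * t * (S (Suc i) (Suc j) - c)"
    unfolding grid_bilinear_def Let_def i_def[symmetric] j_def[symmetric] s_def[symmetric] t_def[symmetric]
    by (simp add: algebra_simps)
  have w: "0 \<le> (1 - s) * (1 - t)" "0 \<le> s * (1 - t)" "0 \<le> (1 - s) * t" "0 \<le> s * t" using fi fj by auto
  have "\<bar>grid_bilinear n S u v - c\<bar> \<le> (1 - s) * (1 - t) * \<eta> + s * (1 - t) * \<eta> + (1 - s) * t * \<eta> + s * t * \<eta>"
  proof -
    have "\<bar>(1 - s) * (1 - t) * (S i j - c)\<bar> \<le> (1 - s) * (1 - t) * \<eta>" by (rule abs_wmul[OF w(1) c1])
    moreover have "\<bar>s * (1 - t) * (S (Suc i) j - c)\<bar> \<le> s * (1 - t) * \<eta>" by (rule abs_wmul[OF w(2) c2])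
    moreover have "\<bar>(1 - s) * t * (S i (Suc j) - c)\<bar> \<le> (1 - s) * t * \<eta>" by (rule abs_wmul[OF w(3) c3])
    moreover have "\<bar>s * t * (S (Suc i) (Suc j) - c)\<bar> \<le> s * t * \<eta>" by (rule abs_wmul[OF w(4) c4])
    ultimately show ?thesis unfolding eq by linarith
  qed
  also have "\<dots> = \<eta>" by (simp add: algebra_simps)
  finally show ?thesis .
qed

lemma emp_df_cnt: "emp_df Xs n \<omega> x = real (cnt (\<lambda>i. Xs i \<omega>) n x) / real n"
  by (simp add: emp_df_def cnt_def)

lemma emp_copula_close:
  fixes Xs Ys :: "nat \<Rightarrow> 'a \<Rightarrow> real"
  assumes C: "copula A" and injX: "inj_on (\<lambda>i. Xs i \<omega>) {..<n}" and injY: "inj_on (\<lambda>i. Ys i \<omega>) {..<n}"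
    and n: "1 \<le> n"
    and HA: "\<And>x y. H x y = A (F x) (G y)" and F01: "\<And>x. F x \<in> {0..1}" and G01: "\<And>y. G y \<in> {0..1}"
    and dH: "\<And>x y. \<bar>emp_joint Xs Ys n \<omega> x y - H x y\<bar> \<le> \<delta>"
    and dF: "\<And>x. \<bar>emp_df Xs n \<omega> x - F x\<bar> \<le> \<delta>"
    and dG: "\<And>y. \<bar>emp_df Ys n \<omega> y - G y\<bar> \<le> \<delta>"
    and u: "u \<in> {0..1}" and v: "v \<in> {0..1}"
  shows "\<bar>emp_copula Xs Ys n \<omega> u v - A u v\<bar> \<le> 3 * \<delta> + 2 / real n"
proof -
  let ?S = "emp_subcopula Xs Ys n \<omega>"
  have Npos: "real n > 0" using n by simp
  show ?thesis unfolding emp_copula_def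
  proof (rule bilinear_bound[OF n])
    fix a b assume a: "a \<le> n" and b: "b \<le> n" and au: "\<bar>real a / real n - u\<bar> \<le> 1 / real n"
      and bv: "\<bar>real b / real n - v\<bar> \<le> 1 / real n"
    obtain x where x: "cnt (\<lambda>i. Xs i \<omega>) n x = a" using cnt_surj[OF injX a] by blast
    obtain y where y: "cnt (\<lambda>i. Ys i \<omega>) n y = b" using cnt_surj[OF injY b] by blast
    have Sab: "?S a b = emp_joint Xs Ys n \<omega> x y" using emp_sub_char(2)[where Xs=Xs and Ys=Ys and \<omega>=\<omega> and n=n, OF injX injY n, of x y] x y by simp
    have fx: "emp_df Xs n \<omega> x = real a / real n" using x by (simp add: emp_df_cnt)
    have gy: "emp_df Ys n \<omega> y = real b / real n" using y by (simp add: emp_df_cnt)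
    have ab01: "real a / real n \<in> {0..1}" "real b / real n \<in> {0..1}" using a b Npos by (auto simp: field_simps)
    have t1: "\<bar>A (F x) (G y) - A (real a / real n) (real b / real n)\<bar> \<le> 2 * \<delta>"
    proof -
      have "\<bar>A (F x) (G y) - A (real a / real n) (real b / real n)\<bar> \<le> \<bar>F x - real a / real n\<bar> + \<bar>G y - real b / real n\<bar>"
        by (rule copula_lip[OF C F01 ab01(1) G01 ab01(2)])
      then show ?thesis using dF[of x] dG[of y] unfolding fx gy by linarith
    qed
    have t2: "\<bar>A (real a / real n) (real b / real n) - A u v\<bar> \<le> 2 / real n"
    proof -
      have "\<bar>A (real a / real n) (real b / real n) - A u v\<bar> \<le> \<bar>real a / real n - u\<bar> + \<bar>real b / real n - v\<bar>"
        by (rule copula_lip[OF C ab01(1) u ab01(2) v])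
      then show ?thesis using au bv by simp
    qed
    show "\<bar>?S a b - A u v\<bar> \<le> 3 * \<delta> + 2 / real n"
      using dH[of x y] t1 t2 unfolding Sab HA by linarith
  qed (use u v in auto)
qed

definition phi :: "real \<Rightarrow> real" where "phi t = max 0 (min 1 t)"

lemma phi_mono: "a \<le> b \<Longrightarrow> phi a \<le> phi b" unfolding phi_def by auto

lemma interp_phi:
  assumes "0 \<le> s" "s \<le> 1"
  shows "(1 - s) * (if r \<le> i then 1 else 0) + s * (if r \<le> Suc i then 1 else 0) = phi (real i + s - real r + 1)"
proof -
  consider "r \<le> i" | "r = Suc i" | "r > Suc i" by linarith
  then show ?thesis
  proof cases
    case 1 then have "real i + s - real r + 1 \<ge> 1" using assms by simp
    then show ?thesis using 1 by (simp add: phi_def)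
  next
    case 2 then show ?thesis using assms by (simp add: phi_def)
  next
    case 3 then have "real i + s - real r + 1 \<le> 0" using assms by simp
    then show ?thesis using 3 by (simp add: phi_def)
  qed
qed

lemma emp_grid_sum:
  fixes Xs Ys :: "nat \<Rightarrow> 'a \<Rightarrow> real"
  assumes injX: "inj_on (\<lambda>i. Xs i \<omega>) {..<n}" and injY: "inj_on (\<lambda>i. Ys i \<omega>) {..<n}" and n: "1 \<le> n"
    and a: "a \<le> n" and b: "b \<le> n"
  shows "emp_subcopula Xs Ys n \<omega> a b = (\<Sum>k<n. (if cnt (\<lambda>i. Xs i \<omega>) n (Xs k \<omega>) \<le> a then 1 else 0) *
              (if cnt (\<lambda>i. Ys i \<omega>) n (Ys k \<omega>) \<le> b then 1 else 0)) / real n"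
proof -
  obtain x where x: "cnt (\<lambda>i. Xs i \<omega>) n x = a" using cnt_surj[OF injX a] by blast
  obtain y where y: "cnt (\<lambda>i. Ys i \<omega>) n y = b" using cnt_surj[OF injY b] by blast
  have "emp_subcopula Xs Ys n \<omega> a b = emp_joint Xs Ys n \<omega> x y"
    using emp_sub_char(2)[where Xs=Xs and Ys=Ys and \<omega>=\<omega> and n=n, OF injX injY n, of x y] x y by simp
  also have "\<dots> = real (card {k. k < n \<and> cnt (\<lambda>i. Xs i \<omega>) n (Xs k \<omega>) \<le> a \<and> cnt (\<lambda>i. Ys i \<omega>) n (Ys k \<omega>) \<le> b}) / real n"
    unfolding emp_joint_def
    using cnt_rank[of _ n "\<lambda>i. Xs i \<omega>" x] cnt_rank[of _ n "\<lambda>i. Ys i \<omega>" y] x y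
    by (intro arg_cong[where f="\<lambda>S. real (card S) / real n"]) auto
  also have "real (card {k. k < n \<and> cnt (\<lambda>i. Xs i \<omega>) n (Xs k \<omega>) \<le> a \<and> cnt (\<lambda>i. Ys i \<omega>) n (Ys k \<omega>) \<le> b})
      = (\<Sum>k<n. (if cnt (\<lambda>i. Xs i \<omega>) n (Xs k \<omega>) \<le> a then 1 else 0) *
              (if cnt (\<lambda>i. Ys i \<omega>) n (Ys k \<omega>) \<le> b then 1 else 0))"
  proof -
    let ?P = "\<lambda>k. cnt (\<lambda>i. Xs i \<omega>) n (Xs k \<omega>) \<le> a \<and> cnt (\<lambda>i. Ys i \<omega>) n (Ys k \<omega>) \<le> b"
    have eqset: "{k. k < n \<and> ?P k} = {..<n} \<inter> {k. ?P k}" by auto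
    have "(\<Sum>k<n. (if cnt (\<lambda>i. Xs i \<omega>) n (Xs k \<omega>) \<le> a then 1 else 0) *
              (if cnt (\<lambda>i. Ys i \<omega>) n (Ys k \<omega>) \<le> b then 1 else (0::real)))
        = (\<Sum>k<n. if ?P k then 1 else 0)" by (intro sum.cong) auto
    also have "\<dots> = real (card ({..<n} \<inter> {k. ?P k}))" by (simp add: sum.If_cases)
    finally show ?thesis unfolding eqset by simp
  qed
  finally show ?thesis .
qed

lemma emp_prod:
  fixes Xs Ys :: "nat \<Rightarrow> 'a \<Rightarrow> real"
  assumes injX: "inj_on (\<lambda>i. Xs i \<omega>) {..<n}" and injY: "inj_on (\<lambda>i. Ys i \<omega>) {..<n}" and n: "1 \<le> n"
    and u: "0 \<le> u" "u \<le> 1" and v: "0 \<le> v" "v \<le> 1"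
  shows "emp_copula Xs Ys n \<omega> u v = (\<Sum>k<n. phi (real n * u - real (cnt (\<lambda>i. Xs i \<omega>) n (Xs k \<omega>)) + 1)
       * phi (real n * v - real (cnt (\<lambda>i. Ys i \<omega>) n (Ys k \<omega>)) + 1)) / real n"
proof -
  define rX where "rX k = cnt (\<lambda>i. Xs i \<omega>) n (Xs k \<omega>)" for k
  define rY where "rY k = cnt (\<lambda>i. Ys i \<omega>) n (Ys k \<omega>)" for k
  define i where "i = min (nat \<lfloor>real n * u\<rfloor>) (n - 1)"
  define j where "j = min (nat \<lfloor>real n * v\<rfloor>) (n - 1)"
  define s where "s = real n * u - real i"
  define t where "t = real n * v - real j"
  have fi: "i \<le> n - 1" "0 \<le> s" "s \<le> 1" using idx_facts[OF n u] unfolding i_def s_def by auto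
  have fj: "j \<le> n - 1" "0 \<le> t" "t \<le> 1" using idx_facts[OF n v] unfolding j_def t_def by auto
  have le: "i \<le> n" "Suc i \<le> n" "j \<le> n" "Suc j \<le> n" using fi fj n by auto
  let ?I = "\<lambda>r a. (if r \<le> a then 1 else 0::real)"
  have S: "emp_subcopula Xs Ys n \<omega> a b = (\<Sum>k<n. ?I (rX k) a * ?I (rY k) b) / real n" if "a \<le> n" "b \<le> n" for a b
    unfolding rX_def rY_def by (rule emp_grid_sum[where Xs=Xs and Ys=Ys and \<omega>=\<omega> and n=n, OF injX injY n that])
  have "emp_copula Xs Ys n \<omega> u v = (1 - s) * (1 - t) * emp_subcopula Xs Ys n \<omega> i j
      + s * (1 - t) * emp_subcopula Xs Ys n \<omega> (Suc i) j + (1 - s) * t * emp_subcopula Xs Ys n \<omega> i (Suc j)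
      + s * t * emp_subcopula Xs Ys n \<omega> (Suc i) (Suc j)"
    unfolding emp_copula_def grid_bilinear_def Let_def i_def[symmetric] j_def[symmetric] s_def[symmetric] t_def[symmetric]
    by simp
  also have "\<dots> = (\<Sum>k<n. ((1 - s) * ?I (rX k) i + s * ?I (rX k) (Suc i)) * ((1 - t) * ?I (rY k) j + t * ?I (rY k) (Suc j))) / real n"
  proof -
    have "(\<Sum>k<n. ((1 - s) * ?I (rX k) i + s * ?I (rX k) (Suc i)) * ((1 - t) * ?I (rY k) j + t * ?I (rY k) (Suc j)))
      = (\<Sum>k<n. (1 - s) * (1 - t) * (?I (rX k) i * ?I (rY k) j) + s * (1 - t) * (?I (rX k) (Suc i) * ?I (rY k) j)
           + (1 - s) * t * (?I (rX k) i * ?I (rY k) (Suc j)) + s * t * (?I (rX k) (Suc i) * ?I (rY k) (Suc j)))"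
      by (intro sum.cong refl) (simp add: algebra_simps)
    also have "\<dots> = (1 - s) * (1 - t) * (\<Sum>k<n. ?I (rX k) i * ?I (rY k) j) + s * (1 - t) * (\<Sum>k<n. ?I (rX k) (Suc i) * ?I (rY k) j)
           + (1 - s) * t * (\<Sum>k<n. ?I (rX k) i * ?I (rY k) (Suc j)) + s * t * (\<Sum>k<n. ?I (rX k) (Suc i) * ?I (rY k) (Suc j))"
      by (simp only: sum.distrib sum_distrib_left)
    finally show ?thesis
      unfolding S[OF le(1) le(3)] S[OF le(2) le(3)] S[OF le(1) le(4)] S[OF le(2) le(4)]
      by (simp add: add_divide_distrib)
  qed
  also have "\<dots> = (\<Sum>k<n. phi (real n * u - real (rX k) + 1) * phi (real n * v - real (rY k) + 1)) / real n"
    using interp_phi[OF fi(2,3)] interp_phi[OF fj(2,3)] unfolding s_def t_def by simp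
  finally show ?thesis unfolding rX_def rY_def .
qed

lemma emp_2incr:
  fixes Xs Ys :: "nat \<Rightarrow> 'a \<Rightarrow> real"
  assumes injX: "inj_on (\<lambda>i. Xs i \<omega>) {..<n}" and injY: "inj_on (\<lambda>i. Ys i \<omega>) {..<n}" and n: "1 \<le> n"
    and "0 \<le> a" "a \<le> b" "b \<le> 1" "0 \<le> w" "w \<le> w'" "w' \<le> 1"
  shows "emp_copula Xs Ys n \<omega> b w' - emp_copula Xs Ys n \<omega> a w' - emp_copula Xs Ys n \<omega> b w + emp_copula Xs Ys n \<omega> a w \<ge> 0"
proof -
  define rX where "rX k = real (cnt (\<lambda>i. Xs i \<omega>) n (Xs k \<omega>))" for k
  define rY where "rY k = real (cnt (\<lambda>i. Ys i \<omega>) n (Ys k \<omega>))" for k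
  have e: "emp_copula Xs Ys n \<omega> x y = (\<Sum>k<n. phi (real n * x - rX k + 1) * phi (real n * y - rY k + 1)) / real n"
    if "0 \<le> x" "x \<le> 1" "0 \<le> y" "y \<le> 1" for x y
    unfolding rX_def rY_def by (rule emp_prod[where Xs=Xs and Ys=Ys and \<omega>=\<omega> and n=n, OF injX injY n that])
  have "emp_copula Xs Ys n \<omega> b w' - emp_copula Xs Ys n \<omega> a w' - emp_copula Xs Ys n \<omega> b w + emp_copula Xs Ys n \<omega> a w
     = (\<Sum>k<n. (phi (real n * b - rX k + 1) - phi (real n * a - rX k + 1)) * (phi (real n * w' - rY k + 1) - phi (real n * w - rY k + 1))) / real n"
    using assms by (simp add: e diff_divide_distrib[symmetric] add_divide_distrib[symmetric] sum_subtractf[symmetric]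
        sum.distrib[symmetric] algebra_simps)
  also have "\<dots> \<ge> 0"
  proof -
    have "real n * a \<le> real n * b" "real n * w \<le> real n * w'" using assms by (auto intro: mult_left_mono)
    then have "(phi (real n * b - rX k + 1) - phi (real n * a - rX k + 1)) * (phi (real n * w' - rY k + 1) - phi (real n * w - rY k + 1)) \<ge> 0" for k
      by (intro mult_nonneg_nonneg) (auto intro!: phi_mono simp: algebra_simps)
    then show ?thesis by (intro divide_nonneg_nonneg sum_nonneg) auto
  qed
  finally show ?thesis .
qed

lemma emp_copula_1:
  fixes Xs Ys :: "nat \<Rightarrow> 'a \<Rightarrow> real"
  assumes injX: "inj_on (\<lambda>i. Xs i \<omega>) {..<n}" and injY: "inj_on (\<lambda>i. Ys i \<omega>) {..<n}" and n: "1 \<le> n"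
    and u: "0 \<le> u" "u \<le> 1"
  shows "emp_copula Xs Ys n \<omega> u 1 = u" "emp_copula Xs Ys n \<omega> u 0 = 0"
proof -
  let ?S = "emp_subcopula Xs Ys n \<omega>"
  have g: "grid_subcopula n ?S" by (rule emp_sub_char(1)[where Xs=Xs and Ys=Ys and \<omega>=\<omega> and n=n, OF injX injY n])
  define i where "i = min (nat \<lfloor>real n * u\<rfloor>) (n - 1)"
  define s where "s = real n * u - real i"
  have fi: "i \<le> n - 1" "0 \<le> s" "s \<le> 1" using idx_facts[OF n u] unfolding i_def s_def by auto
  have le: "i \<le> n" "Suc i \<le> n" using fi n by auto
  have j1: "min (nat \<lfloor>real n * 1\<rfloor>) (n - 1) = n - 1" by simp
  have t1: "real n * 1 - real (n - 1) = 1" using n by (simp add: of_nat_diff)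
  have Sn: "?S a n = real a / real n" "?S a 0 = 0" if "a \<le> n" for a
    using g that unfolding grid_subcopula_def by auto
  have "emp_copula Xs Ys n \<omega> u 1 = (1 - s) * ?S i n + s * ?S (Suc i) n"
    unfolding emp_copula_def grid_bilinear_def Let_def i_def[symmetric] s_def[symmetric] j1 t1
    using n by simp
  also have "\<dots> = (real i + s) / real n" using le by (simp add: Sn field_simps)
  also have "\<dots> = u" using n unfolding s_def by simp
  finally show "emp_copula Xs Ys n \<omega> u 1 = u" .
  have j0: "min (nat \<lfloor>real n * 0\<rfloor>) (n - 1) = 0" by simp
  show "emp_copula Xs Ys n \<omega> u 0 = 0"
    unfolding emp_copula_def grid_bilinear_def Let_def i_def[symmetric] s_def[symmetric] j0
    using le by (simp add: Sn)
qed

lemma cb_mono_v: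
  assumes mass: "\<And>i j. i \<in> {1..N} \<Longrightarrow> j \<in> {1..N} \<Longrightarrow> rect_mass B N i j \<ge> 0"
    and N: "1 \<le> N" and v: "0 \<le> v" "v \<le> v'"
  shows "cb_kernel_cdf N B u v \<le> cb_kernel_cdf N B u v'"
  unfolding cb_kernel_cdf_def
proof (rule mult_left_mono[OF sum_mono[OF sum_mono]])
  fix i j assume i: "i \<in> {1..N}" and j: "j \<in> {1..N}"
  have "measure lborel ({0..v} \<inter> cb_interval N j) \<le> measure lborel ({0..v'} \<inter> cb_interval N j)"
    using cbw_eq[OF N _ v(1), of j] cbw_eq[OF N _ order_trans[OF v], of j] j v by auto
  moreover have "rect_mass B N i j * indicator (cb_interval N i) u \<ge> 0" using mass[OF i j] by simp
  ultimately show "rect_mass B N i j * indicator (cb_interval N i) u * measure lborel ({0..v} \<inter> cb_interval N j)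
       \<le> rect_mass B N i j * indicator (cb_interval N i) u * measure lborel ({0..v'} \<inter> cb_interval N j)"
    by (rule mult_left_mono)
qed simp

lemma cb_zero:
  assumes N: "1 \<le> N"
  shows "cb_kernel_cdf N B u 0 = 0"
proof -
  have "measure lborel ({0..0} \<inter> cb_interval N j) = 0" if "j \<in> {1..N}" for j
    using cbw_eq[OF N _ order_refl, of j] that N by (auto simp: max_def min_def field_simps)
  then show ?thesis unfolding cb_kernel_cdf_def by simp
qed

lemma cb_one:
  assumes N: "1 \<le> N" and u: "0 \<le> u" "u \<le> 1"
    and B1: "\<And>a. a \<in> {0..1} \<Longrightarrow> B a 1 = a" and B0: "\<And>a. a \<in> {0..1} \<Longrightarrow> B a 0 = 0"
  shows "cb_kernel_cdf N B u 1 = 1"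
proof -
  obtain i0 J \<theta> where r: "1 \<le> i0" "i0 \<le> N" "real i0 - 1 \<le> real N * u" "real N * u \<le> real i0"
    "1 \<le> J" "J \<le> N" "0 \<le> \<theta>" "\<theta> \<le> 1" "real N * 1 = real J - 1 + \<theta>"
    "\<And>B. cb_kernel_cdf N B u 1 = Dcol N B i0 (J-1) - Dcol N B i0 0 + \<theta> * (Dcol N B i0 J - Dcol N B i0 (J-1))"
    using cb_repr[OF N u, of 1] by auto
  have "real J \<le> real N" using r(6) by simp
  then have JN: "J = N" "\<theta> = 1" using r(5-9) by linarith+
  have Npos: "real N > 0" using N by simp
  have p: "real i0 / real N \<in> {0..1}" "(real i0 - 1) / real N \<in> {0..1}" using r(1,2) Npos by (auto simp: field_simps)
  have "Dcol N B i0 N = 1" unfolding Dcol_def using Npos B1[OF p(1)] B1[OF p(2)] by (simp add: field_simps)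
  moreover have "Dcol N B i0 0 = 0" unfolding Dcol_def using B0[OF p(1)] B0[OF p(2)] by simp
  ultimately show ?thesis unfolding r(10) JN by simp
qed

lemma emp_rect_mass_nonneg:
  fixes Xs Ys :: "nat \<Rightarrow> 'a \<Rightarrow> real"
  assumes injX: "inj_on (\<lambda>i. Xs i \<omega>) {..<n}" and injY: "inj_on (\<lambda>i. Ys i \<omega>) {..<n}" and n: "1 \<le> n"
    and i: "i \<in> {1..N}" and j: "j \<in> {1..N}"
  shows "rect_mass (emp_copula Xs Ys n \<omega>) N i j \<ge> 0"
proof -
  have Npos: "real N > 0" using i by auto
  have p: "0 \<le> (real i - 1) / real N" "(real i - 1) / real N \<le> real i / real N" "real i / real N \<le> 1"
     "0 \<le> (real j - 1) / real N" "(real j - 1) / real N \<le> real j / real N" "real j / real N \<le> 1"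
    using i j Npos by (auto simp: field_simps)
  show ?thesis unfolding rect_mass_def
    using emp_2incr[where Xs=Xs and Ys=Ys and \<omega>=\<omega> and n=n, OF injX injY n p] by simp
qed

lemma emp_df_01: "emp_df Ys n \<omega> y \<in> {0..1}"
proof -
  have "cnt (\<lambda>i. Ys i \<omega>) n y \<le> n" by (rule cnt_le)
  then show ?thesis unfolding emp_df_cnt by (cases "n = 0") (auto simp: field_simps)
qed

lemma emp_df_mono: "y \<le> y' \<Longrightarrow> emp_df Ys n \<omega> y \<le> emp_df Ys n \<omega> y'"
  unfolding emp_df_cnt by (intro divide_right_mono) (auto intro: cnt_mono)

lemma emp_df_right:
  fixes Ys :: "nat \<Rightarrow> 'a \<Rightarrow> real"
  shows "\<forall>\<^sub>F y' in at_right y. emp_df Ys n \<omega> y' = emp_df Ys n \<omega> y"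
proof -
  define T where "T = (\<lambda>i. Ys i \<omega>) ` {i. i < n \<and> Ys i \<omega> > y}"
  define b where "b = Min (insert (y + 1) T)"
  have finT: "finite T" unfolding T_def by auto
  have b: "b > y" unfolding b_def using finT by (auto simp: T_def)
  have "emp_df Ys n \<omega> y' = emp_df Ys n \<omega> y" if "y' > y" "y' < b" for y'
  proof -
    have "{i. i < n \<and> Ys i \<omega> \<le> y'} = {i. i < n \<and> Ys i \<omega> \<le> y}"
    proof (intro equalityI subsetI)
      fix i assume i: "i \<in> {i. i < n \<and> Ys i \<omega> \<le> y'}"
      show "i \<in> {i. i < n \<and> Ys i \<omega> \<le> y}"
      proof (rule ccontr)
        assume "i \<notin> {i. i < n \<and> Ys i \<omega> \<le> y}"
        then have "Ys i \<omega> \<in> T" using i unfolding T_def by auto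
        then have "b \<le> Ys i \<omega>" unfolding b_def using finT by simp
        then show False using i that by auto
      qed
    qed (use that in auto)
    then show ?thesis unfolding emp_df_def by simp
  qed
  then show ?thesis unfolding eventually_at_right[OF b] using b by blast
qed

lemma emp_df_low:
  fixes Ys :: "nat \<Rightarrow> 'a \<Rightarrow> real"
  shows "\<forall>\<^sub>F y in at_bot. emp_df Ys n \<omega> y = 0"
proof -
  define m where "m = Min (insert 0 ((\<lambda>i. Ys i \<omega>) ` {..<n}))"
  have "emp_df Ys n \<omega> y = 0" if "y \<le> m - 1" for y
  proof -
    have "Ys i \<omega> > y" if "i < n" for i
    proof -
      have "m \<le> Ys i \<omega>" unfolding m_def using that by simp
      then show ?thesis using \<open>y \<le> m - 1\<close> by linarith
    qed
    then have "{i. i < n \<and> Ys i \<omega> \<le> y} = {}" by force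
    then show ?thesis unfolding emp_df_def by simp
  qed
  then show ?thesis unfolding eventually_at_bot_linorder by blast
qed

lemma emp_df_high:
  fixes Ys :: "nat \<Rightarrow> 'a \<Rightarrow> real"
  assumes n: "1 \<le> n"
  shows "\<forall>\<^sub>F y in at_top. emp_df Ys n \<omega> y = 1"
proof -
  define m where "m = Max (insert 0 ((\<lambda>i. Ys i \<omega>) ` {..<n}))"
  have "emp_df Ys n \<omega> y = 1" if "y \<ge> m" for y
  proof -
    have "Ys i \<omega> \<le> y" if "i < n" for i
    proof -
      have "Ys i \<omega> \<le> m" unfolding m_def using that by simp
      then show ?thesis using \<open>y \<ge> m\<close> by linarith
    qed
    then have "{i. i < n \<and> Ys i \<omega> \<le> y} = {..<n}" by force
    then show ?thesis unfolding emp_df_def using n by simp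
  qed
  then show ?thesis unfolding eventually_at_top_linorder by blast
qed

lemma Cn_cdf:
  fixes Xs Ys :: "nat \<Rightarrow> 'a \<Rightarrow> real"
  assumes injX: "inj_on (\<lambda>i. Xs i \<omega>) {..<n}" and injY: "inj_on (\<lambda>i. Ys i \<omega>) {..<n}" and n: "1 \<le> n"
    and N: "1 \<le> N" and u: "0 \<le> u" "u \<le> 1"
  defines "C \<equiv> \<lambda>y. cb_kernel_cdf N (emp_copula Xs Ys n \<omega>) u (emp_df Ys n \<omega> y)"
  shows "\<And>x y. x \<le> y \<Longrightarrow> C x \<le> C y" "\<And>a. continuous (at_right a) C"
    "(C \<longlongrightarrow> 0) at_bot" "(C \<longlongrightarrow> 1) at_top" "\<And>y. C y \<in> {0..1}"
proof -
  have mass: "\<And>i j. i \<in> {1..N} \<Longrightarrow> j \<in> {1..N} \<Longrightarrow> rect_mass (emp_copula Xs Ys n \<omega>) N i j \<ge> 0"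
    by (rule emp_rect_mass_nonneg[where Xs=Xs and Ys=Ys and \<omega>=\<omega> and n=n, OF injX injY n])
  have E1: "\<And>a. a \<in> {0..1} \<Longrightarrow> emp_copula Xs Ys n \<omega> a 1 = a"
   and E0: "\<And>a. a \<in> {0..1} \<Longrightarrow> emp_copula Xs Ys n \<omega> a 0 = 0"
    using emp_copula_1[where Xs=Xs and Ys=Ys and \<omega>=\<omega> and n=n, OF injX injY n] by auto
  have one: "cb_kernel_cdf N (emp_copula Xs Ys n \<omega>) u 1 = 1"
    by (rule cb_one[OF N u]) (use E1 E0 in auto)
  show mono: "C x \<le> C y" if "x \<le> y" for x y
    unfolding C_def using emp_df_01[of Ys n \<omega> x] by (intro cb_mono_v[OF mass N] emp_df_mono that) auto
  show "continuous (at_right a) C" for a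
  proof -
    have "\<forall>\<^sub>F y in at_right a. C y = C a"
      using emp_df_right[of Ys n \<omega> a] by eventually_elim (simp add: C_def)
    then have "(C \<longlongrightarrow> C a) (at_right a)" by (rule tendsto_eventually)
    then show ?thesis by (simp add: continuous_within)
  qed
  show "(C \<longlongrightarrow> 0) at_bot"
  proof (rule tendsto_eventually)
    show "\<forall>\<^sub>F y in at_bot. C y = 0"
      using emp_df_low[of Ys n \<omega>] by eventually_elim (simp add: C_def cb_zero[OF N])
  qed
  show "(C \<longlongrightarrow> 1) at_top"
  proof (rule tendsto_eventually)
    show "\<forall>\<^sub>F y in at_top. C y = 1"
      using emp_df_high[OF n, of Ys \<omega>] by eventually_elim (simp add: C_def one)
  qed
  show "C y \<in> {0..1}" for y
  proof -
    have "cb_kernel_cdf N (emp_copula Xs Ys n \<omega>) u 0 \<le> C y" unfolding C_def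
      using emp_df_01[of Ys n \<omega> y] by (intro cb_mono_v[OF mass N]) auto
    moreover have "C y \<le> cb_kernel_cdf N (emp_copula Xs Ys n \<omega>) u 1" unfolding C_def
      using emp_df_01[of Ys n \<omega> y] by (intro cb_mono_v[OF mass N]) auto
    ultimately show ?thesis using cb_zero[OF N] one by auto
  qed
qed

definition qnt :: "(real \<Rightarrow> real) \<Rightarrow> real \<Rightarrow> real" where
  "qnt F p = Inf {a. p \<le> F a}"

lemma qnt_props:
  assumes mono: "\<And>x y. x \<le> y \<Longrightarrow> F x \<le> F y" and cont: "\<And>x. isCont F x"
    and bot: "(F \<longlongrightarrow> 0) at_bot" and top: "(F \<longlongrightarrow> 1) at_top"
    and p: "0 < p" "p < 1"
  shows "F (qnt F p) = p" "\<And>a. p \<le> F a \<longleftrightarrow> qnt F p \<le> a"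
proof -
  define S where "S = {a. p \<le> F a}"
  have ne: "S \<noteq> {}"
  proof -
    have "eventually (\<lambda>a. p < F a) at_top" using order_tendstoD(1)[OF top p(2)] .
    then obtain a where "p < F a" unfolding eventually_at_top_linorder by auto
    then have "a \<in> S" unfolding S_def by simp
    then show ?thesis by auto
  qed
  obtain b where b: "\<And>a. a \<le> b \<Longrightarrow> F a < p"
    using order_tendstoD(2)[OF bot p(1)] unfolding eventually_at_bot_linorder by auto
  have bdd: "bdd_below S"
  proof (rule bdd_belowI)
    fix a assume "a \<in> S"
    then have "p \<le> F a" unfolding S_def by simp
    then show "b \<le> a" using b[of a] by (cases "a \<le> b") auto
  qed
  have cl: "closed S" unfolding S_def
    by (rule closed_Collect_le[OF continuous_on_const]) (simp add: continuous_at_imp_continuous_on cont)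
  have qS: "qnt F p \<in> S" unfolding qnt_def S_def[symmetric] by (rule closed_contains_Inf[OF ne bdd cl])
  have below: "F a < p" if "a < qnt F p" for a
  proof (rule ccontr)
    assume "\<not> F a < p"
    then have "a \<in> S" unfolding S_def by simp
    then have "qnt F p \<le> a" unfolding qnt_def S_def[symmetric] by (rule cInf_lower[OF _ bdd])
    then show False using that by simp
  qed
  have le: "F (qnt F p) \<le> p"
  proof -
    have "(F \<longlongrightarrow> F (qnt F p)) (at_left (qnt F p))"
      using cont[of "qnt F p"] unfolding isCont_def filterlim_at_split by simp
    moreover have "eventually (\<lambda>a. F a \<le> p) (at_left (qnt F p))"
      using below by (auto simp: eventually_at_left_field intro!: exI[of _ "qnt F p - 1"] less_imp_le)
    ultimately show ?thesis by (rule tendsto_upperbound) simp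
  qed
  show "F (qnt F p) = p" using le qS unfolding S_def by simp
  show "p \<le> F a \<longleftrightarrow> qnt F p \<le> a" for a
  proof
    assume "p \<le> F a" then have "a \<in> S" unfolding S_def by simp
    then show "qnt F p \<le> a" unfolding qnt_def S_def[symmetric] by (rule cInf_lower[OF _ bdd])
  next
    assume "qnt F p \<le> a" then show "p \<le> F a" using qS mono unfolding S_def by (meson mem_Collect_eq order_trans)
  qed
qed

definition gridset :: "(real \<Rightarrow> real) \<Rightarrow> nat \<Rightarrow> nat \<Rightarrow> real set" where
  "gridset F m k = (if k = 0 then {} else if m \<le> k then UNIV else {..qnt F (real k / real m)})"

lemma gridset_borel[measurable]: "gridset F m k \<in> sets borel"
  unfolding gridset_def by auto

context
  fixes F :: "real \<Rightarrow> real"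
  assumes mono: "\<And>x y. x \<le> y \<Longrightarrow> F x \<le> F y" and cont: "\<And>x. isCont F x"
    and bot: "(F \<longlongrightarrow> 0) at_bot" and top: "(F \<longlongrightarrow> 1) at_top"
begin

lemma gridset_mono:
  assumes "k \<le> k'"
  shows "gridset F m k \<subseteq> gridset F m k'"
proof (cases "k = 0 \<or> m \<le> k'")
  case True then show ?thesis using assms unfolding gridset_def by auto
next
  case False
  then have k: "0 < k" "k \<le> k'" "k' < m" using assms by auto
  have p: "0 < real k / real m" "real k / real m < 1" "0 < real k' / real m" "real k' / real m < 1"
    using k by (auto simp: field_simps)
  have "real k / real m \<le> real k' / real m" using k by (simp add: divide_right_mono)
  then have "real k / real m \<le> F (qnt F (real k' / real m))" using qnt_props(1)[OF mono cont bot top p(3,4)] by simp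
  then have "qnt F (real k / real m) \<le> qnt F (real k' / real m)" using qnt_props(2)[OF mono cont bot top p(1,2)] by simp
  then show ?thesis using k unfolding gridset_def by auto
qed

lemma gridset_cover:
  assumes m: "1 \<le> m"
  shows "\<exists>k<m. gridset F m k \<subseteq> {..a} \<and> {..a} \<subseteq> gridset F m (Suc k)"
proof -
  define k where "k = min (m - 1) (nat \<lfloor>real m * F a\<rfloor>)"
  have km: "k < m" using m unfolding k_def by auto
  have sub1: "gridset F m k \<subseteq> {..a}"
  proof (cases "k = 0")
    case False
    have kle: "real k \<le> real m * F a" unfolding k_def
    proof -
      have "real (min (m - 1) (nat \<lfloor>real m * F a\<rfloor>)) \<le> real (nat \<lfloor>real m * F a\<rfloor>)" by simp
      also have "\<dots> \<le> real m * F a" using False unfolding k_def by linarith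
      finally show "real (min (m - 1) (nat \<lfloor>real m * F a\<rfloor>)) \<le> real m * F a" .
    qed
    have p: "0 < real k / real m" "real k / real m < 1" using False km by (auto simp: field_simps)
    have "real k / real m \<le> F a" using kle m by (simp add: field_simps)
    then have "qnt F (real k / real m) \<le> a" using qnt_props(2)[OF mono cont bot top p] by simp
    then show ?thesis using False km unfolding gridset_def by auto
  qed (simp add: gridset_def)
  have sub2: "{..a} \<subseteq> gridset F m (Suc k)"
  proof (cases "m \<le> Suc k")
    case False
    then have keq: "k = nat \<lfloor>real m * F a\<rfloor>" unfolding k_def by auto
    have "real m * F a < real (Suc k)" unfolding keq by linarith
    then have lt: "F a < real (Suc k) / real m" using m by (simp add: field_simps)
    have p: "0 < real (Suc k) / real m" "real (Suc k) / real m < 1" using False by (auto simp: field_simps)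
    have "\<not> qnt F (real (Suc k) / real m) \<le> a" using qnt_props(2)[OF mono cont bot top p, of a] lt by linarith
    then show ?thesis using False unfolding gridset_def by auto
  qed (simp add: gridset_def)
  show ?thesis using km sub1 sub2 by blast
qed

lemma gridset_prob:
  assumes P: "real_distribution P" and cdfP: "cdf P = F" and m: "1 \<le> m" and k: "k \<le> m"
  shows "measure P (gridset F m k) = real k / real m"
proof -
  interpret real_distribution P by (rule P)
  consider "k = 0" | "k = m" | "0 < k" "k < m" using k by linarith
  then show ?thesis
  proof cases
    case 1 then show ?thesis by (simp add: gridset_def)
  next
    case 2 then show ?thesis using m prob_space by (simp add: gridset_def)
  next
    case 3
    have p: "0 < real k / real m" "real k / real m < 1" using 3 by (auto simp: field_simps)
    have "measure P (gridset F m k) = cdf P (qnt F (real k / real m))" using 3 by (simp add: gridset_def cdf_def)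
    also have "\<dots> = real k / real m" unfolding cdfP by (rule qnt_props(1)[OF mono cont bot top p])
    finally show ?thesis .
  qed
qed

lemma gridset_step:
  assumes P: "real_distribution P" and cdfP: "cdf P = F" and m: "1 \<le> m" and k: "k < m"
  shows "measure P (gridset F m (Suc k) - gridset F m k) = 1 / real m"
proof -
  interpret real_distribution P by (rule P)
  have "measure P (gridset F m (Suc k) - gridset F m k) = measure P (gridset F m (Suc k)) - measure P (gridset F m k)"
    by (rule finite_measure_Diff) (use gridset_mono[of k "Suc k" m] in auto)
  also have "\<dots> = 1 / real m" using gridset_prob[OF P cdfP m, of "Suc k"] gridset_prob[OF P cdfP m, of k] k
    by (simp add: diff_divide_distrib[symmetric])
  finally show ?thesis .
qed

end


locale sample = prob_space M for M :: "'a measure" +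
  fixes X Y :: "'a \<Rightarrow> real" and Xs Ys :: "nat \<Rightarrow> 'a \<Rightarrow> real"
  assumes X[measurable]: "X \<in> borel_measurable M" and Y[measurable]: "Y \<in> borel_measurable M"
    and Xs[measurable]: "\<And>i. Xs i \<in> borel_measurable M" and Ys[measurable]: "\<And>i. Ys i \<in> borel_measurable M"
    and indep: "indep_vars (\<lambda>_. borel) (\<lambda>i \<omega>. (Xs i \<omega>, Ys i \<omega>)) UNIV"
    and same: "\<And>i. distr M borel (\<lambda>\<omega>. (Xs i \<omega>, Ys i \<omega>)) = distr M borel (\<lambda>\<omega>. (X \<omega>, Y \<omega>))"
begin

definition Hs :: "real set \<Rightarrow> real set \<Rightarrow> real" where
  "Hs Sx Sy = prob {\<omega>\<in>space M. X \<omega> \<in> Sx \<and> Y \<omega> \<in> Sy}"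

definition Hns :: "nat \<Rightarrow> 'a \<Rightarrow> real set \<Rightarrow> real set \<Rightarrow> real" where
  "Hns n \<omega> Sx Sy = real (card {i. i < n \<and> Xs i \<omega> \<in> Sx \<and> Ys i \<omega> \<in> Sy}) / real n"

lemma pair_meas[measurable]: "(\<lambda>\<omega>. (Xs i \<omega>, Ys i \<omega>)) \<in> borel_measurable M" "(\<lambda>\<omega>. (X \<omega>, Y \<omega>)) \<in> borel_measurable M"
  by (simp_all add: borel_measurable_Pair)

lemma times_borel: "Sx \<in> sets borel \<Longrightarrow> Sy \<in> sets borel \<Longrightarrow> (Sx \<times> Sy :: (real \<times> real) set) \<in> sets borel"
  unfolding borel_prod[symmetric] by auto

lemma same_prob:
  assumes "Sx \<in> sets borel" "Sy \<in> sets borel"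
  shows "prob {\<omega>\<in>space M. Xs i \<omega> \<in> Sx \<and> Ys i \<omega> \<in> Sy} = Hs Sx Sy"
proof -
  have T: "Sx \<times> Sy \<in> sets borel" by (rule times_borel[OF assms])
  have "prob {\<omega>\<in>space M. Xs i \<omega> \<in> Sx \<and> Ys i \<omega> \<in> Sy} = measure (distr M borel (\<lambda>\<omega>. (Xs i \<omega>, Ys i \<omega>))) (Sx \<times> Sy)"
    using T by (subst measure_distr) (auto intro!: arg_cong[where f=prob])
  also have "\<dots> = measure (distr M borel (\<lambda>\<omega>. (X \<omega>, Y \<omega>))) (Sx \<times> Sy)" by (simp add: same)
  also have "\<dots> = Hs Sx Sy" unfolding Hs_def
    using T by (subst measure_distr) (auto intro!: arg_cong[where f=prob])
  finally show ?thesis .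
qed

lemma hoeffding_sets:
  assumes Sx: "Sx \<in> sets borel" and Sy: "Sy \<in> sets borel" and n: "1 \<le> n" and t: "0 \<le> t"
  shows "prob {\<omega>\<in>space M. t \<le> \<bar>Hns n \<omega> Sx Sy - Hs Sx Sy\<bar>} \<le> 2 * exp (-2 * real n * t\<^sup>2)"
proof -
  have T: "Sx \<times> Sy \<in> sets borel" by (rule times_borel[OF Sx Sy])
  define V where "V i \<omega> = (indicator (Sx \<times> Sy) (Xs i \<omega>, Ys i \<omega>) :: real)" for i \<omega>
  define V0 where "V0 \<omega> = (indicator (Sx \<times> Sy) (X \<omega>, Y \<omega>) :: real)" for \<omega>
  have Vm[measurable]: "V i \<in> borel_measurable M" for i unfolding V_def using T by measurable
  have V0m[measurable]: "V0 \<in> borel_measurable M" unfolding V0_def using T by measurable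
  have indV: "indep_vars (\<lambda>_. borel) V {..<n}"
  proof -
    have "indep_vars (\<lambda>_. borel) (\<lambda>i \<omega>. indicator (Sx \<times> Sy) (Xs i \<omega>, Ys i \<omega>) :: real) UNIV"
      by (rule indep_vars_compose2[OF indep]) (use T in measurable)
    then show ?thesis unfolding V_def by (rule indep_vars_subset) auto
  qed
  have dV: "distr M borel (V i) = distr M borel V0" for i
  proof -
    have "distr M borel (V i) = distr (distr M borel (\<lambda>\<omega>. (Xs i \<omega>, Ys i \<omega>))) borel (indicator (Sx \<times> Sy))"
      unfolding V_def using T by (subst distr_distr) (auto simp: comp_def)
    also have "\<dots> = distr (distr M borel (\<lambda>\<omega>. (X \<omega>, Y \<omega>))) borel (indicator (Sx \<times> Sy))" by (simp add: same)
    also have "\<dots> = distr M borel V0"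
      unfolding V0_def using T by (subst distr_distr) (auto simp: comp_def)
    finally show ?thesis .
  qed
  interpret H: Hoeffding_ineq_iid M "{..<n}" V V0 0 1 "expectation V0"
    by unfold_locales (auto simp: indV dV V0_def indicator_def)
  have EV0: "expectation V0 = Hs Sx Sy"
  proof -
    have ms: "{\<omega>\<in>space M. X \<omega> \<in> Sx \<and> Y \<omega> \<in> Sy} \<in> events" using Sx Sy by measurable
    have "expectation V0 = expectation (indicator {\<omega>\<in>space M. X \<omega> \<in> Sx \<and> Y \<omega> \<in> Sy})"
      by (intro Bochner_Integration.integral_cong) (auto simp: V0_def indicator_def)
    also have "\<dots> = Hs Sx Sy" unfolding Hs_def using ms by simp
    finally show ?thesis .
  qed
  have sumV: "(\<Sum>i\<in>{..<n}. V i \<omega>) / real (card {..<n}) = Hns n \<omega> Sx Sy" for \<omega>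
  proof -
    have "(\<Sum>i\<in>{..<n}. V i \<omega>) = real (card {i\<in>{..<n}. Xs i \<omega> \<in> Sx \<and> Ys i \<omega> \<in> Sy})"
      unfolding V_def by (simp add: indicator_def sum.If_cases Int_def)
    also have "{i\<in>{..<n}. Xs i \<omega> \<in> Sx \<and> Ys i \<omega> \<in> Sy} = {i. i < n \<and> Xs i \<omega> \<in> Sx \<and> Ys i \<omega> \<in> Sy}" by auto
    finally show ?thesis unfolding Hns_def by simp
  qed
  have "prob {\<omega>\<in>space M. \<bar>(\<Sum>i\<in>{..<n}. V i \<omega>) / real (card {..<n}) - expectation V0\<bar> \<ge> t}
      \<le> 2 * exp (-2 * real (card {..<n}) * t\<^sup>2 / (1 - 0)\<^sup>2)"
  proof (rule H.Hoeffding_ineq_abs_ge'[OF t])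
    show "{..<n} \<noteq> {}" using n by (auto simp: lessThan_empty_iff)
  qed simp
  then show ?thesis unfolding sumV EV0 by simp
qed


lemma Hs_mono: "S \<subseteq> S' \<Longrightarrow> T \<subseteq> T' \<Longrightarrow> S' \<in> sets borel \<Longrightarrow> T' \<in> sets borel \<Longrightarrow> Hs S T \<le> Hs S' T'"
  unfolding Hs_def by (intro finite_measure_mono) (auto, measurable)

lemma Hns_mono: "S \<subseteq> S' \<Longrightarrow> T \<subseteq> T' \<Longrightarrow> Hns n \<omega> S T \<le> Hns n \<omega> S' T'"
  unfolding Hns_def by (intro divide_right_mono of_nat_mono card_mono) auto

lemma Hs_diff:
  assumes "S \<subseteq> S'" "T \<subseteq> T'" "S \<in> sets borel" "S' \<in> sets borel" "T \<in> sets borel" "T' \<in> sets borel"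
  shows "Hs S' T' - Hs S T \<le> Hs (S' - S) UNIV + Hs UNIV (T' - T)"
proof -
  note [measurable] = assms(3-6)
  have sub: "{\<omega>\<in>space M. X \<omega> \<in> S' \<and> Y \<omega> \<in> T'} \<subseteq> {\<omega>\<in>space M. X \<omega> \<in> S \<and> Y \<omega> \<in> T} \<union>
      ({\<omega>\<in>space M. X \<omega> \<in> S' - S \<and> Y \<omega> \<in> UNIV} \<union> {\<omega>\<in>space M. X \<omega> \<in> UNIV \<and> Y \<omega> \<in> T' - T})" by auto
  have "Hs S' T' \<le> prob ({\<omega>\<in>space M. X \<omega> \<in> S \<and> Y \<omega> \<in> T} \<union>
      ({\<omega>\<in>space M. X \<omega> \<in> S' - S \<and> Y \<omega> \<in> UNIV} \<union> {\<omega>\<in>space M. X \<omega> \<in> UNIV \<and> Y \<omega> \<in> T' - T}))"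
    unfolding Hs_def using assms by (intro finite_measure_mono[OF sub]) measurable
  also have "\<dots> \<le> Hs S T + (Hs (S' - S) UNIV + Hs UNIV (T' - T))"
    unfolding Hs_def using assms
    by (intro order_trans[OF measure_Un_le] add_left_mono measure_Un_le) measurable
  finally show ?thesis by simp
qed

lemma sandwich:
  assumes subx: "Gx \<subseteq> Sx" "Sx \<subseteq> Gx'" and suby: "Gy \<subseteq> Sy" "Sy \<subseteq> Gy'"
    and meas: "Gx \<in> sets borel" "Sx \<in> sets borel" "Gx' \<in> sets borel" "Gy \<in> sets borel" "Sy \<in> sets borel" "Gy' \<in> sets borel"
    and e1: "\<bar>Hns n \<omega> Gx Gy - Hs Gx Gy\<bar> \<le> t" and e2: "\<bar>Hns n \<omega> Gx' Gy' - Hs Gx' Gy'\<bar> \<le> t"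
    and px: "Hs (Gx' - Gx) UNIV \<le> d" and py: "Hs UNIV (Gy' - Gy) \<le> d"
  shows "\<bar>Hns n \<omega> Sx Sy - Hs Sx Sy\<bar> \<le> t + 2 * d"
proof -
  have m1: "Hns n \<omega> Gx Gy \<le> Hns n \<omega> Sx Sy" "Hns n \<omega> Sx Sy \<le> Hns n \<omega> Gx' Gy'"
    using subx suby by (auto intro!: Hns_mono)
  have d1: "Hs Gx' Gy' - Hs Sx Sy \<le> Hs (Gx' - Sx) UNIV + Hs UNIV (Gy' - Sy)"
    by (rule Hs_diff) (use subx suby meas in auto)
  have d2: "Hs Sx Sy - Hs Gx Gy \<le> Hs (Sx - Gx) UNIV + Hs UNIV (Sy - Gy)"
    by (rule Hs_diff) (use subx suby meas in auto)
  have dx: "Gx' - Gx \<in> sets borel" using meas by auto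
  have dy: "Gy' - Gy \<in> sets borel" using meas by auto
  have u: "(UNIV :: real set) \<in> sets borel" by simp
  have "Hs (Gx' - Sx) UNIV \<le> Hs (Gx' - Gx) UNIV" by (rule Hs_mono[OF _ _ dx u]) (use subx in auto)
  moreover have "Hs (Sx - Gx) UNIV \<le> Hs (Gx' - Gx) UNIV" by (rule Hs_mono[OF _ _ dx u]) (use subx in auto)
  ultimately have b1: "Hs (Gx' - Sx) UNIV \<le> d" "Hs (Sx - Gx) UNIV \<le> d" using px by linarith+
  have "Hs UNIV (Gy' - Sy) \<le> Hs UNIV (Gy' - Gy)" by (rule Hs_mono[OF _ _ u dy]) (use suby in auto)
  moreover have "Hs UNIV (Sy - Gy) \<le> Hs UNIV (Gy' - Gy)" by (rule Hs_mono[OF _ _ u dy]) (use suby in auto)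
  ultimately have b2: "Hs UNIV (Gy' - Sy) \<le> d" "Hs UNIV (Sy - Gy) \<le> d" using py by linarith+
  have e1': "Hns n \<omega> Gx Gy \<ge> Hs Gx Gy - t" using e1 by (simp add: abs_le_iff)
  have e2': "Hns n \<omega> Gx' Gy' \<le> Hs Gx' Gy' + t" using e2 by (simp add: abs_le_iff)
  have "Hns n \<omega> Sx Sy - Hs Sx Sy \<le> t + 2 * d" using m1(2) e2' d1 b1(1) b2(1) by linarith
  moreover have "Hs Sx Sy - Hns n \<omega> Sx Sy \<le> t + 2 * d" using m1(1) e1' d2 b1(2) b2(2) by linarith
  ultimately show ?thesis by (simp add: abs_le_iff)
qed


lemma Hns_sum: "Hns n \<omega> S T = (\<Sum>i<n. indicator (S \<times> T) (Xs i \<omega>, Ys i \<omega>)) / real n"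
proof -
  have "(\<Sum>i<n. indicator (S \<times> T) (Xs i \<omega>, Ys i \<omega>) :: real) = real (card {i\<in>{..<n}. Xs i \<omega> \<in> S \<and> Ys i \<omega> \<in> T})"
    by (simp add: indicator_def sum.If_cases Int_def)
  also have "{i\<in>{..<n}. Xs i \<omega> \<in> S \<and> Ys i \<omega> \<in> T} = {i. i < n \<and> Xs i \<omega> \<in> S \<and> Ys i \<omega> \<in> T}" by auto
  finally show ?thesis unfolding Hns_def by simp
qed

lemma Hns_meas[measurable]:
  assumes "S \<in> sets borel" "T \<in> sets borel"
  shows "(\<lambda>\<omega>. Hns n \<omega> S T) \<in> borel_measurable M"
proof -
  have T: "S \<times> T \<in> sets borel" by (rule times_borel[OF assms])
  show ?thesis unfolding Hns_sum using T by measurable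
qed

definition FXf :: "real \<Rightarrow> real" where "FXf a = Hs {..a} UNIV"
definition GYf :: "real \<Rightarrow> real" where "GYf b = Hs UNIV {..b}"

lemma PX: "real_distribution (distr M borel X)" "cdf (distr M borel X) = FXf"
    "\<And>S. S \<in> sets borel \<Longrightarrow> measure (distr M borel X) S = Hs S UNIV"
proof -
  show "real_distribution (distr M borel X)" by simp
  show ms: "measure (distr M borel X) S = Hs S UNIV" if "S \<in> sets borel" for S
    unfolding Hs_def using that by (subst measure_distr) (auto intro!: arg_cong[where f=prob])
  show "cdf (distr M borel X) = FXf" unfolding cdf_def FXf_def by (intro ext ms) simp
qed

lemma PY: "real_distribution (distr M borel Y)" "cdf (distr M borel Y) = GYf"
    "\<And>S. S \<in> sets borel \<Longrightarrow> measure (distr M borel Y) S = Hs UNIV S"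
proof -
  show "real_distribution (distr M borel Y)" by simp
  show ms: "measure (distr M borel Y) S = Hs UNIV S" if "S \<in> sets borel" for S
    unfolding Hs_def using that by (subst measure_distr) (auto intro!: arg_cong[where f=prob])
  show "cdf (distr M borel Y) = GYf" unfolding cdf_def GYf_def by (intro ext ms) simp
qed

lemma FX_props: "\<And>x y. x \<le> y \<Longrightarrow> FXf x \<le> FXf y" "(FXf \<longlongrightarrow> 0) at_bot" "(FXf \<longlongrightarrow> 1) at_top"
proof -
  show "FXf x \<le> FXf y" if "x \<le> y" for x y using Hs_mono[of "{..x}" "{..y}" UNIV UNIV] that unfolding FXf_def by auto
  show "(FXf \<longlongrightarrow> 0) at_bot" using finite_borel_measure.cdf_lim_at_bot[OF real_distribution.finite_borel_measure_M[OF PX(1)]] PX(2) by simp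
  show "(FXf \<longlongrightarrow> 1) at_top" using real_distribution.cdf_lim_at_top_prob[OF PX(1)] PX(2) by simp
qed

lemma GY_props: "\<And>x y. x \<le> y \<Longrightarrow> GYf x \<le> GYf y" "(GYf \<longlongrightarrow> 0) at_bot" "(GYf \<longlongrightarrow> 1) at_top"
proof -
  show "GYf x \<le> GYf y" if "x \<le> y" for x y using Hs_mono[of UNIV UNIV "{..x}" "{..y}"] that unfolding GYf_def by auto
  show "(GYf \<longlongrightarrow> 0) at_bot" using finite_borel_measure.cdf_lim_at_bot[OF real_distribution.finite_borel_measure_M[OF PY(1)]] PY(2) by simp
  show "(GYf \<longlongrightarrow> 1) at_top" using real_distribution.cdf_lim_at_top_prob[OF PY(1)] PY(2) by simp
qed

context
  assumes contX: "\<And>a. isCont FXf a" and contY: "\<And>a. isCont GYf a"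
begin

lemma GX_step: "1 \<le> m \<Longrightarrow> k < m \<Longrightarrow> Hs (gridset FXf m (Suc k) - gridset FXf m k) UNIV = 1 / real m"
  using gridset_step[OF FX_props(1) contX FX_props(2,3) PX(1,2)] PX(3) by (metis gridset_borel sets.Diff)

lemma GY_step: "1 \<le> m \<Longrightarrow> k < m \<Longrightarrow> Hs UNIV (gridset GYf m (Suc k) - gridset GYf m k) = 1 / real m"
  using gridset_step[OF GY_props(1) contY GY_props(2,3) PY(1,2)] PY(3) by (metis gridset_borel sets.Diff)

lemma cover_X:
  assumes m: "1 \<le> m" and S: "(\<exists>a. S = {..a}) \<or> S = UNIV"
  shows "\<exists>k<m. gridset FXf m k \<subseteq> S \<and> S \<subseteq> gridset FXf m (Suc k)"
  using S
proof
  assume "\<exists>a. S = {..a}"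
  then show ?thesis using gridset_cover[OF FX_props(1) contX FX_props(2,3) m] by auto
next
  assume "S = UNIV"
  then show ?thesis using m by (intro exI[of _ "m - 1"]) (auto simp: gridset_def)
qed

lemma cover_Y:
  assumes m: "1 \<le> m" and S: "(\<exists>a. S = {..a}) \<or> S = UNIV"
  shows "\<exists>k<m. gridset GYf m k \<subseteq> S \<and> S \<subseteq> gridset GYf m (Suc k)"
  using S
proof
  assume "\<exists>a. S = {..a}"
  then show ?thesis using gridset_cover[OF GY_props(1) contY GY_props(2,3) m] by auto
next
  assume "S = UNIV"
  then show ?thesis using m by (intro exI[of _ "m - 1"]) (auto simp: gridset_def)
qed

lemma good_bound:
  assumes m: "1 \<le> m"
    and good: "\<And>k l. k \<le> m \<Longrightarrow> l \<le> m \<Longrightarrow> \<bar>Hns n \<omega> (gridset FXf m k) (gridset GYf m l) - Hs (gridset FXf m k) (gridset GYf m l)\<bar> \<le> t"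
    and Sx: "(\<exists>a. Sx = {..a}) \<or> Sx = UNIV" and Sy: "(\<exists>a. Sy = {..a}) \<or> Sy = UNIV"
  shows "\<bar>Hns n \<omega> Sx Sy - Hs Sx Sy\<bar> \<le> t + 2 * (1 / real m)"
proof -
  obtain k where k: "k < m" "gridset FXf m k \<subseteq> Sx" "Sx \<subseteq> gridset FXf m (Suc k)" using cover_X[OF m Sx] by blast
  obtain l where l: "l < m" "gridset GYf m l \<subseteq> Sy" "Sy \<subseteq> gridset GYf m (Suc l)" using cover_Y[OF m Sy] by blast
  have Sxm: "Sx \<in> sets borel" using Sx by auto
  have Sym: "Sy \<in> sets borel" using Sy by auto
  show ?thesis
  proof (rule sandwich[OF k(2,3) l(2,3) gridset_borel Sxm gridset_borel gridset_borel Sym gridset_borel])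
    show "\<bar>Hns n \<omega> (gridset FXf m k) (gridset GYf m l) - Hs (gridset FXf m k) (gridset GYf m l)\<bar> \<le> t"
      using good k l by simp
    show "\<bar>Hns n \<omega> (gridset FXf m (Suc k)) (gridset GYf m (Suc l)) - Hs (gridset FXf m (Suc k)) (gridset GYf m (Suc l))\<bar> \<le> t"
      using good k l by simp
    show "Hs (gridset FXf m (Suc k) - gridset FXf m k) UNIV \<le> 1 / real m" using GX_step[OF m k(1)] by simp
    show "Hs UNIV (gridset GYf m (Suc l) - gridset GYf m l) \<le> 1 / real m" using GY_step[OF m l(1)] by simp
  qed
qed


definition goodS :: "real set \<Rightarrow> bool" where "goodS S \<longleftrightarrow> (\<exists>a. S = {..a}) \<or> S = UNIV"

lemma rate_eps:
  assumes s: "0 < s" "s < 1/2" and e: "e > 0"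
  shows "AE \<omega> in M. eventually (\<lambda>n. \<forall>Sx Sy. goodS Sx \<longrightarrow> goodS Sy \<longrightarrow>
      \<bar>Hns n \<omega> Sx Sy - Hs Sx Sy\<bar> \<le> e * real n powr (-s)) sequentially"
proof -
  define t where "t n = e/2 * real n powr (-s)" for n :: nat
  define A where "A n p = {\<omega>\<in>space M. t n \<le> \<bar>Hns n \<omega> (gridset FXf n (fst p)) (gridset GYf n (snd p))
      - Hs (gridset FXf n (fst p)) (gridset GYf n (snd p))\<bar>}" for n :: nat and p :: "nat \<times> nat"
  define B where "B n = (if n = 0 then {} else \<Union>p\<in>{..n} \<times> {..n}. A n p)" for n
  have Am: "A n p \<in> events" for n p unfolding A_def by measurable
  have Bm: "B n \<in> events" for n unfolding B_def using Am by auto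
  define b where "b n = (real n + 1)^2 * (2 * exp (-2 * real n * (e/2 * real n powr (-s))^2))" for n :: nat
  have pB: "prob (B n) \<le> b n" for n
  proof (cases "n = 0")
    case True then show ?thesis by (simp add: B_def b_def)
  next
    case False
    then have n1: "1 \<le> n" by simp
    have "prob (B n) \<le> (\<Sum>p\<in>{..n} \<times> {..n}. prob (A n p))"
      unfolding B_def using False Am by (simp add: finite_measure_subadditive_finite image_subset_iff)
    also have "\<dots> \<le> (\<Sum>p\<in>{..n} \<times> {..n}. 2 * exp (-2 * real n * (t n)\<^sup>2))"
    proof (intro sum_mono)
      fix p show "prob (A n p) \<le> 2 * exp (-2 * real n * (t n)\<^sup>2)"
        unfolding A_def by (rule hoeffding_sets[OF gridset_borel gridset_borel n1]) (use e in \<open>simp add: t_def\<close>)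
    qed
    also have "\<dots> = b n" by (simp add: b_def t_def card_cartesian_product power2_eq_square algebra_simps)
    finally show ?thesis .
  qed
  have sb: "summable b"
  proof (rule summable_comparison_test_bigo)
    show "summable (\<lambda>n. norm (inverse (real n ^ 2)))" using inverse_power_summable[of 2, where 'a=real] by simp
    have "b \<in> O(\<lambda>n. 1 / real n ^ 2)" unfolding b_def using s e by real_asymp
    then show "b \<in> O(\<lambda>n. inverse (real n ^ 2))" by (simp add: inverse_eq_divide)
  qed
  have sB: "summable (\<lambda>n. measure M (B n))"
    by (rule summable_comparison_test[OF _ sb]) (use pB in auto)
  have ae: "AE \<omega> in M. eventually (\<lambda>n. \<omega> \<in> space M - B n) sequentially"
    by (rule borel_cantelli_AE1[OF Bm]) (use sB in \<open>auto simp: emeasure_eq_measure\<close>)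
  have ev: "eventually (\<lambda>n. t n + 2 * (1 / real n) \<le> e * real n powr (-s)) sequentially"
    unfolding t_def using s e by real_asymp
  show ?thesis using ae
  proof (rule eventually_mono)
    fix \<omega> assume "eventually (\<lambda>n. \<omega> \<in> space M - B n) sequentially"
    then show "eventually (\<lambda>n. \<forall>Sx Sy. goodS Sx \<longrightarrow> goodS Sy \<longrightarrow> \<bar>Hns n \<omega> Sx Sy - Hs Sx Sy\<bar> \<le> e * real n powr (-s)) sequentially"
      using ev eventually_ge_at_top[of 1]
    proof eventually_elim
      case (elim n)
      have good: "\<bar>Hns n \<omega> (gridset FXf n k) (gridset GYf n l) - Hs (gridset FXf n k) (gridset GYf n l)\<bar> \<le> t n"
        if "k \<le> n" "l \<le> n" for k l
      proof -
        have "\<omega> \<notin> A n (k, l)" using elim(1,3) that unfolding B_def by auto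
        then show ?thesis using elim(1) unfolding A_def by auto
      qed
      show ?case
      proof (intro allI impI)
        fix Sx Sy assume "goodS Sx" "goodS Sy"
        then have "\<bar>Hns n \<omega> Sx Sy - Hs Sx Sy\<bar> \<le> t n + 2 * (1 / real n)"
          by (intro good_bound[OF elim(3)] good) (auto simp: goodS_def)
        then show "\<bar>Hns n \<omega> Sx Sy - Hs Sx Sy\<bar> \<le> e * real n powr (-s)" using elim(2) by linarith
      qed
    qed
  qed
qed

lemma rates:
  assumes s: "0 < s" "s < 1/2"
  shows "AE \<omega> in M. \<forall>j::nat. eventually (\<lambda>n. \<forall>Sx Sy. goodS Sx \<longrightarrow> goodS Sy \<longrightarrow>
      \<bar>Hns n \<omega> Sx Sy - Hs Sx Sy\<bar> \<le> (1 / (real j + 1)) * real n powr (-s)) sequentially"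
  unfolding AE_all_countable by (intro allI rate_eps[OF s]) simp


lemma grid_partition:
  assumes "x \<in> gridset F m J"
  shows "\<exists>k<J. x \<in> gridset F m (Suc k) - gridset F m k"
  using assms
proof (induction J)
  case 0 then show ?case by (simp add: gridset_def)
next
  case (Suc J)
  show ?case
  proof (cases "x \<in> gridset F m J")
    case True then show ?thesis using Suc.IH by (meson less_SucI)
  next
    case False then show ?thesis using Suc.prems by auto
  qed
qed

lemma indep_pair_events:
  assumes ij: "i \<noteq> j" and A: "A \<in> sets borel" and B: "B \<in> sets borel"
  shows "prob {\<omega>\<in>space M. (Xs i \<omega>, Ys i \<omega>) \<in> A \<and> (Xs j \<omega>, Ys j \<omega>) \<in> B}
       = prob {\<omega>\<in>space M. (Xs i \<omega>, Ys i \<omega>) \<in> A} * prob {\<omega>\<in>space M. (Xs j \<omega>, Ys j \<omega>) \<in> B}"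
proof -
  have ind: "indep_sets (\<lambda>i. {(\<lambda>\<omega>. (Xs i \<omega>, Ys i \<omega>)) -` A \<inter> space M | A. A \<in> sets borel}) UNIV"
    using indep unfolding indep_vars_def2 by simp
  define E where "E k = (\<lambda>\<omega>. (Xs k \<omega>, Ys k \<omega>)) -` (if k = i then A else B) \<inter> space M" for k
  have "prob (\<Inter>k\<in>{i, j}. E k) = (\<Prod>k\<in>{i, j}. prob (E k))"
    by (rule indep_setsD[OF ind]) (use A B in \<open>auto simp: E_def\<close>)
  moreover have "(\<Inter>k\<in>{i, j}. E k) = {\<omega>\<in>space M. (Xs i \<omega>, Ys i \<omega>) \<in> A \<and> (Xs j \<omega>, Ys j \<omega>) \<in> B}"
    using ij by (auto simp: E_def)
  moreover have "E i = {\<omega>\<in>space M. (Xs i \<omega>, Ys i \<omega>) \<in> A}" "E j = {\<omega>\<in>space M. (Xs j \<omega>, Ys j \<omega>) \<in> B}"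
    using ij by (auto simp: E_def)
  ultimately show ?thesis using ij by simp
qed

lemma prob_le_all_inv:
  assumes "\<And>m::nat. 1 \<le> m \<Longrightarrow> p \<le> 1 / real m" "0 \<le> (p::real)"
  shows "p = 0"
proof (rule ccontr)
  assume "p \<noteq> 0"
  then have p: "p > 0" using assms(2) by simp
  obtain m :: nat where m: "1 / p < real m" using reals_Archimedean2 by blast
  then have "1 \<le> m" using p by (metis less_le_not_le of_nat_0_less_iff less_one zero_le_divide_1_iff le_less_trans not_less)
  then have "p \<le> 1 / real m" by (rule assms(1))
  moreover have "1 / real m < p"
  proof -
    have mpos: "real m > 0" using \<open>1 \<le> m\<close> by simp
    have "1 < p * real m" using m p by (simp add: field_simps)
    then show ?thesis using mpos by (simp add: divide_less_eq mult.commute)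
  qed
  ultimately show False by simp
qed

lemma no_tie_X:
  assumes ij: "i \<noteq> j"
  shows "prob {\<omega>\<in>space M. Xs i \<omega> = Xs j \<omega>} = 0"
proof (rule prob_le_all_inv)
  fix m :: nat assume m: "1 \<le> m"
  define D where "D k = gridset FXf m (Suc k) - gridset FXf m k" for k
  have Dm: "D k \<in> sets borel" for k unfolding D_def by simp
  have sub: "{\<omega>\<in>space M. Xs i \<omega> = Xs j \<omega>} \<subseteq> (\<Union>k\<in>{..<m}. {\<omega>\<in>space M. (Xs i \<omega>, Ys i \<omega>) \<in> D k \<times> UNIV \<and> (Xs j \<omega>, Ys j \<omega>) \<in> D k \<times> UNIV})"
  proof
    fix \<omega> assume w: "\<omega> \<in> {\<omega>\<in>space M. Xs i \<omega> = Xs j \<omega>}"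
    have "Xs i \<omega> \<in> gridset FXf m m" using m by (simp add: gridset_def)
    then obtain k where "k < m" "Xs i \<omega> \<in> D k" unfolding D_def using grid_partition by blast
    then show "\<omega> \<in> (\<Union>k\<in>{..<m}. {\<omega>\<in>space M. (Xs i \<omega>, Ys i \<omega>) \<in> D k \<times> UNIV \<and> (Xs j \<omega>, Ys j \<omega>) \<in> D k \<times> UNIV})"
      using w by auto
  qed
  have pk: "prob {\<omega>\<in>space M. (Xs i \<omega>, Ys i \<omega>) \<in> D k \<times> UNIV \<and> (Xs j \<omega>, Ys j \<omega>) \<in> D k \<times> UNIV} = (1 / real m)^2"
    if k: "k < m" for k
  proof -
    have T: "D k \<times> (UNIV :: real set) \<in> sets borel" using times_borel[OF Dm, of UNIV] by simp
    have one: "prob {\<omega>\<in>space M. (Xs l \<omega>, Ys l \<omega>) \<in> D k \<times> UNIV} = 1 / real m" for l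
    proof -
      have "prob {\<omega>\<in>space M. (Xs l \<omega>, Ys l \<omega>) \<in> D k \<times> UNIV} = prob {\<omega>\<in>space M. Xs l \<omega> \<in> D k \<and> Ys l \<omega> \<in> UNIV}" by simp
      also have "\<dots> = Hs (D k) UNIV" by (rule same_prob[OF Dm]) simp
      also have "\<dots> = 1 / real m" unfolding D_def by (rule GX_step[OF m k])
      finally show ?thesis .
    qed
    show ?thesis using indep_pair_events[OF ij T T] one by (simp add: power2_eq_square)
  qed
  have "prob {\<omega>\<in>space M. Xs i \<omega> = Xs j \<omega>} \<le> prob (\<Union>k\<in>{..<m}. {\<omega>\<in>space M. (Xs i \<omega>, Ys i \<omega>) \<in> D k \<times> UNIV \<and> (Xs j \<omega>, Ys j \<omega>) \<in> D k \<times> UNIV})"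
    by (rule finite_measure_mono[OF sub]) (use Dm in measurable)
  also have "\<dots> \<le> (\<Sum>k\<in>{..<m}. prob {\<omega>\<in>space M. (Xs i \<omega>, Ys i \<omega>) \<in> D k \<times> UNIV \<and> (Xs j \<omega>, Ys j \<omega>) \<in> D k \<times> UNIV})"
    by (rule finite_measure_subadditive_finite) (use Dm in \<open>auto\<close>)
  also have "\<dots> = real m * (1 / real m)^2" using pk by simp
  also have "\<dots> = 1 / real m" by (simp add: power2_eq_square)
  finally show "prob {\<omega>\<in>space M. Xs i \<omega> = Xs j \<omega>} \<le> 1 / real m" .
qed simp

lemma no_tie_Y:
  assumes ij: "i \<noteq> j"
  shows "prob {\<omega>\<in>space M. Ys i \<omega> = Ys j \<omega>} = 0"
proof (rule prob_le_all_inv)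
  fix m :: nat assume m: "1 \<le> m"
  define D where "D k = gridset GYf m (Suc k) - gridset GYf m k" for k
  have Dm: "D k \<in> sets borel" for k unfolding D_def by simp
  have sub: "{\<omega>\<in>space M. Ys i \<omega> = Ys j \<omega>} \<subseteq> (\<Union>k\<in>{..<m}. {\<omega>\<in>space M. (Xs i \<omega>, Ys i \<omega>) \<in> UNIV \<times> D k \<and> (Xs j \<omega>, Ys j \<omega>) \<in> UNIV \<times> D k})"
  proof
    fix \<omega> assume w: "\<omega> \<in> {\<omega>\<in>space M. Ys i \<omega> = Ys j \<omega>}"
    have "Ys i \<omega> \<in> gridset GYf m m" using m by (simp add: gridset_def)
    then obtain k where "k < m" "Ys i \<omega> \<in> D k" unfolding D_def using grid_partition by blast
    then show "\<omega> \<in> (\<Union>k\<in>{..<m}. {\<omega>\<in>space M. (Xs i \<omega>, Ys i \<omega>) \<in> UNIV \<times> D k \<and> (Xs j \<omega>, Ys j \<omega>) \<in> UNIV \<times> D k})"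
      using w by auto
  qed
  have pk: "prob {\<omega>\<in>space M. (Xs i \<omega>, Ys i \<omega>) \<in> UNIV \<times> D k \<and> (Xs j \<omega>, Ys j \<omega>) \<in> UNIV \<times> D k} = (1 / real m)^2"
    if k: "k < m" for k
  proof -
    have T: "(UNIV :: real set) \<times> D k \<in> sets borel" using times_borel[OF _ Dm, of UNIV] by simp
    have one: "prob {\<omega>\<in>space M. (Xs l \<omega>, Ys l \<omega>) \<in> UNIV \<times> D k} = 1 / real m" for l
    proof -
      have "prob {\<omega>\<in>space M. (Xs l \<omega>, Ys l \<omega>) \<in> UNIV \<times> D k} = prob {\<omega>\<in>space M. Xs l \<omega> \<in> UNIV \<and> Ys l \<omega> \<in> D k}" by simp
      also have "\<dots> = Hs UNIV (D k)" by (rule same_prob[OF _ Dm]) simp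
      also have "\<dots> = 1 / real m" unfolding D_def by (rule GY_step[OF m k])
      finally show ?thesis .
    qed
    show ?thesis using indep_pair_events[OF ij T T] one by (simp add: power2_eq_square)
  qed
  have "prob {\<omega>\<in>space M. Ys i \<omega> = Ys j \<omega>} \<le> prob (\<Union>k\<in>{..<m}. {\<omega>\<in>space M. (Xs i \<omega>, Ys i \<omega>) \<in> UNIV \<times> D k \<and> (Xs j \<omega>, Ys j \<omega>) \<in> UNIV \<times> D k})"
    by (rule finite_measure_mono[OF sub]) (use Dm in measurable)
  also have "\<dots> \<le> (\<Sum>k\<in>{..<m}. prob {\<omega>\<in>space M. (Xs i \<omega>, Ys i \<omega>) \<in> UNIV \<times> D k \<and> (Xs j \<omega>, Ys j \<omega>) \<in> UNIV \<times> D k})"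
    by (rule finite_measure_subadditive_finite) (use Dm in \<open>auto\<close>)
  also have "\<dots> = real m * (1 / real m)^2" using pk by simp
  also have "\<dots> = 1 / real m" by (simp add: power2_eq_square)
  finally show "prob {\<omega>\<in>space M. Ys i \<omega> = Ys j \<omega>} \<le> 1 / real m" .
qed simp

lemma AE_inj:
  shows "AE \<omega> in M. \<forall>n. inj_on (\<lambda>i. Xs i \<omega>) {..<n} \<and> inj_on (\<lambda>i. Ys i \<omega>) {..<n}"
proof -
  have "AE \<omega> in M. i \<noteq> j \<longrightarrow> Xs i \<omega> \<noteq> Xs j \<omega> \<and> Ys i \<omega> \<noteq> Ys j \<omega>" for i j
  proof (cases "i = j")
    case False
    have n1: "{\<omega>\<in>space M. Xs i \<omega> = Xs j \<omega>} \<in> null_sets M"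
      using no_tie_X[OF False] by (intro null_setsI) (auto simp: emeasure_eq_measure)
    have n2: "{\<omega>\<in>space M. Ys i \<omega> = Ys j \<omega>} \<in> null_sets M"
      using no_tie_Y[OF False] by (intro null_setsI) (auto simp: emeasure_eq_measure)
    show ?thesis
      by (rule AE_I'[OF null_sets.Un[OF n1 n2]]) auto
  qed simp
  then have "AE \<omega> in M. \<forall>i j. i \<noteq> j \<longrightarrow> Xs i \<omega> \<noteq> Xs j \<omega> \<and> Ys i \<omega> \<noteq> Ys j \<omega>"
    unfolding AE_all_countable by blast
  then show ?thesis by eventually_elim (auto simp: inj_on_def)
qed

end

end

lemma kernel_Aint:
  assumes MK: "markov_kernel_of A K" and a: "a \<in> {0..1}" and w: "w \<in> {0..1}"
  shows "A a w = (LINT t:{0..a}|lborel. K t {0..w})"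
proof -
  obtain \<mu> where ds: "doubly_stochastic_measure_of A \<mu>"
    and eq: "\<And>E1 E2. E1 \<in> sets (restrict_space borel {0..1::real}) \<Longrightarrow> E2 \<in> sets (restrict_space borel {0..1::real}) \<Longrightarrow>
        (LINT x:E1|lborel. K x E2) = measure \<mu> (E1 \<times> E2)"
    using MK unfolding markov_kernel_of_def by blast
  have s: "{0..c} \<in> sets (restrict_space borel {0..1::real})" if "c \<in> {0..1}" for c
    using that by (subst sets_restrict_space_iff) auto
  have "(LINT t:{0..a}|lborel. K t {0..w}) = measure \<mu> ({0..a} \<times> {0..w})" by (rule eq[OF s[OF a] s[OF w]])
  also have "\<dots> = A a w" using ds a w unfolding doubly_stochastic_measure_of_def by auto
  finally show ?thesis by simp
qed

lemma isCont_section1: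
  assumes Hc: "continuous_on UNIV (\<lambda>(a, b). H a b :: real)"
  shows "isCont (\<lambda>a. H a b) a"
proof -
  have "continuous_on UNIV ((\<lambda>(a, b). H a b) \<circ> (\<lambda>a. (a, b)))"
    by (rule continuous_on_compose[OF continuous_on_Pair[OF continuous_on_id continuous_on_const]])
       (rule continuous_on_subset[OF Hc], auto)
  then show ?thesis by (simp add: o_def continuous_on_eq_continuous_at)
qed

lemma isCont_section2:
  assumes Hc: "continuous_on UNIV (\<lambda>(a, b). H a b :: real)"
  shows "isCont (\<lambda>b. H a b) b"
proof -
  have "continuous_on UNIV ((\<lambda>(a, b). H a b) \<circ> (\<lambda>b. (a, b)))"
    by (rule continuous_on_compose[OF continuous_on_Pair[OF continuous_on_const continuous_on_id]])
       (rule continuous_on_subset[OF Hc], auto)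
  then show ?thesis by (simp add: o_def continuous_on_eq_continuous_at)
qed

lemma cont_margin_gen:
  fixes Fm :: "real \<Rightarrow> real" and Hb :: "real \<Rightarrow> real \<Rightarrow> real"
  assumes Hc: "\<And>b. isCont (\<lambda>a. Hb b a) a0"
    and approx: "\<And>r. r > 0 \<Longrightarrow> \<exists>b. \<forall>a. \<bar>Fm a - Hb b a\<bar> < r"
  shows "isCont Fm a0"
  unfolding isCont_def LIM_eq
proof (intro allI impI)
  fix r :: real assume r: "r > 0"
  obtain b where b: "\<And>a. \<bar>Fm a - Hb b a\<bar> < r/3" using approx[of "r/3"] r by auto
  have "(\<lambda>a. Hb b a) \<midarrow>a0\<rightarrow> Hb b a0" using Hc[of b] by (simp add: isCont_def)
  then obtain s where s: "s > 0" "\<And>x. x \<noteq> a0 \<and> norm (x - a0) < s \<Longrightarrow> norm (Hb b x - Hb b a0) < r/3"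
    unfolding LIM_eq using r by (meson divide_pos_pos zero_less_numeral)
  show "\<exists>s>0. \<forall>x. x \<noteq> a0 \<and> norm (x - a0) < s \<longrightarrow> norm (Fm x - Fm a0) < r"
  proof (intro exI[of _ s] conjI allI impI s(1))
    fix x assume x: "x \<noteq> a0 \<and> norm (x - a0) < s"
    have "\<bar>Hb b x - Hb b a0\<bar> < r/3" using s(2)[OF x] by simp
    moreover have "\<bar>Fm x - Hb b x\<bar> < r/3" "\<bar>Fm a0 - Hb b a0\<bar> < r/3" using b[of x] b[of a0] by auto
    ultimately have "\<bar>Fm x - Fm a0\<bar> < r" unfolding abs_less_iff by linarith
    then show "norm (Fm x - Fm a0) < r" by simp
  qed
qed

lemma cont_margins:
  fixes H :: "real \<Rightarrow> real \<Rightarrow> real"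
  assumes Hc: "continuous_on UNIV (\<lambda>(a, b). H a b)" and C: "copula A" and HA: "\<And>a b. H a b = A (F a) (G b)"
    and F01: "\<And>a. F a \<in> {0..1}" and G01: "\<And>b. G b \<in> {0..1}"
    and Ftop: "(F \<longlongrightarrow> 1) at_top" and Gtop: "(G \<longlongrightarrow> 1) at_top"
  shows "isCont F a" "isCont G b"
proof -
  show "isCont F a"
  proof (rule cont_margin_gen[where Hb = "\<lambda>b a. H a b"])
    show "isCont (\<lambda>a. H a b) a" for b by (rule isCont_section1[OF Hc])
    fix r :: real assume r: "r > 0"
    obtain b where b: "G b > 1 - r" using order_tendstoD(1)[OF Gtop, of "1 - r"] r
      unfolding eventually_at_top_linorder by auto
    show "\<exists>b. \<forall>a. \<bar>F a - H a b\<bar> < r"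
    proof (intro exI allI)
      fix a
      have "\<bar>A (F a) 1 - A (F a) (G b)\<bar> \<le> \<bar>F a - F a\<bar> + \<bar>1 - G b\<bar>"
        by (rule copula_lip[OF C F01 F01]) (use G01 in auto)
      moreover have "A (F a) 1 = F a" using copula_1[OF C F01] .
      ultimately show "\<bar>F a - H a b\<bar> < r" using b G01[of b] unfolding HA by auto
    qed
  qed
  show "isCont G b"
  proof (rule cont_margin_gen[where Hb = "\<lambda>a b. H a b"])
    show "isCont (\<lambda>b. H a b) b" for a by (rule isCont_section2[OF Hc])
    fix r :: real assume r: "r > 0"
    obtain a where a: "F a > 1 - r" using order_tendstoD(1)[OF Ftop, of "1 - r"] r
      unfolding eventually_at_top_linorder by auto
    show "\<exists>a. \<forall>b. \<bar>G b - H a b\<bar> < r"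
    proof (intro exI allI)
      fix b
      have "\<bar>A 1 (G b) - A (F a) (G b)\<bar> \<le> \<bar>1 - F a\<bar> + \<bar>G b - G b\<bar>"
        by (rule copula_lip[OF C _ F01 G01 G01]) simp
      moreover have "A 1 (G b) = G b" using copula_1'[OF C G01] .
      ultimately show "\<bar>G b - H a b\<bar> < r" using a F01[of a] unfolding HA by auto
    qed
  qed
qed

lemma rate_conv:
  fixes f :: "nat \<Rightarrow> real"
  assumes s: "0 < s" and r: "\<And>j::nat. eventually (\<lambda>n. \<bar>f n - c\<bar> \<le> (1 / (real j + 1)) * real n powr (-s)) sequentially"
  shows "f \<longlonglongrightarrow> c"
proof (rule tendstoI)
  fix e :: real assume e: "e > 0"
  obtain j where j: "inverse (real (Suc j)) < e" using reals_Archimedean[OF e] by blast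
  show "eventually (\<lambda>n. dist (f n) c < e) sequentially"
    using r[of j] eventually_ge_at_top[of 1]
  proof eventually_elim
    case (elim n)
    have "1 \<le> real n powr s" using elim(2) s by (intro ge_one_powr_ge_zero) auto
    then have "real n powr (-s) \<le> 1" by (simp add: powr_minus inverse_le_1_iff)
    then have "(1 / (real j + 1)) * real n powr (-s) \<le> 1 / (real j + 1)" by (simp add: divide_right_mono)
    also have "\<dots> < e" using j by (simp add: inverse_eq_divide add.commute)
    finally show ?case using elim(1) by (simp add: dist_real_def)
  qed
qed

lemma Nn_props:
  assumes s: "0 < s"
  shows "\<And>n. 1 \<le> n \<Longrightarrow> 1 \<le> nat \<lfloor>real n powr s\<rfloor>"
    "\<And>n. real (nat \<lfloor>real n powr s\<rfloor>) \<le> real n powr s"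
    "filterlim (\<lambda>n. nat \<lfloor>real n powr s\<rfloor>) at_top sequentially"
proof -
  show "1 \<le> nat \<lfloor>real n powr s\<rfloor>" if "1 \<le> n" for n
  proof -
    have "1 \<le> real n powr s" using that s by (intro ge_one_powr_ge_zero) auto
    then show ?thesis by linarith
  qed
  show "real (nat \<lfloor>real n powr s\<rfloor>) \<le> real n powr s" for n
    using floor_le_iff[of "real n powr s"] by (simp add: of_nat_nat)
  show "filterlim (\<lambda>n. nat \<lfloor>real n powr s\<rfloor>) at_top sequentially"
    unfolding filterlim_at_top
  proof
    fix Z :: nat
    have "filterlim (\<lambda>n::nat. real n powr s) at_top at_top" using s by real_asymp
    then have "eventually (\<lambda>n. real Z + 1 \<le> real n powr s) sequentially" unfolding filterlim_at_top by blast
    then show "eventually (\<lambda>n. Z \<le> nat \<lfloor>real n powr s\<rfloor>) sequentially"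
      by eventually_elim linarith
  qed
qed

theorem theorem5p3:
  fixes M :: "'a measure"
    and X Y :: "'a \<Rightarrow> real"
    and Xs Ys :: "nat \<Rightarrow> 'a \<Rightarrow> real"
    and H :: "real \<Rightarrow> real \<Rightarrow> real"
    and F G :: "real \<Rightarrow> real"
    and A :: "real \<Rightarrow> real \<Rightarrow> real"
    and K :: "real \<Rightarrow> real set \<Rightarrow> real"
    and s x :: real
  assumes "prob_space M"
    and "X \<in> borel_measurable M" and "Y \<in> borel_measurable M"
    and "\<And>i. Xs i \<in> borel_measurable M" and "\<And>i. Ys i \<in> borel_measurable M"
    and "prob_space.indep_vars M (\<lambda>_. borel) (\<lambda>i \<omega>. (Xs i \<omega>, Ys i \<omega>)) UNIV"
    and "\<And>i. distr M borel (\<lambda>\<omega>. (Xs i \<omega>, Ys i \<omega>)) = distr M borel (\<lambda>\<omega>. (X \<omega>, Y \<omega>))"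
    and "\<And>a b. H a b = measure M {\<omega>\<in>space M. X \<omega> \<le> a \<and> Y \<omega> \<le> b}"
    and "\<And>a. F a = measure M {\<omega>\<in>space M. X \<omega> \<le> a}"
    and "\<And>b. G b = measure M {\<omega>\<in>space M. Y \<omega> \<le> b}"
    and "continuous_on UNIV (\<lambda>(a, b). H a b)"
    and "copula A" and "\<And>a b. H a b = A (F a) (G b)"
    and "markov_kernel_of A K"
    and "continuous_on ({0..1} \<times> {0..1}) (\<lambda>(u, v). K u {0..v})"
    and "0 < s" and "s < 1 / 2"
    and "AE \<omega> in M. unif_integrable_dists (\<lambda>n. interval_measure (\<lambda>y.
            cb_kernel_cdf (nat \<lfloor>real n powr s\<rfloor>) (emp_copula Xs Ys n \<omega>)
              (emp_df Xs n \<omega> x) (emp_df Ys n \<omega> y)))"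
  shows "AE \<omega> in M.
           (\<lambda>n. (LINT y:{0<..}|lborel. 1 - cb_kernel_cdf (nat \<lfloor>real n powr s\<rfloor>) (emp_copula Xs Ys n \<omega>)
                                              (emp_df Xs n \<omega> x) (emp_df Ys n \<omega> y))
              - (LINT y:{..<0}|lborel. cb_kernel_cdf (nat \<lfloor>real n powr s\<rfloor>) (emp_copula Xs Ys n \<omega>)
                                              (emp_df Xs n \<omega> x) (emp_df Ys n \<omega> y)))
           \<longlonglongrightarrow> (\<integral>y. y \<partial>(interval_measure (\<lambda>y. K (F x) {0..G y})))"
proof -
  interpret S: sample M X Y Xs Ys
    by (intro sample.intro[OF assms(1)] sample_axioms.intro assms(2-7))
  note C = assms(12)
  have Fe: "F a = S.FXf a" for a unfolding S.FXf_def S.Hs_def assms(9) by simp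
  have Ge: "G b = S.GYf b" for b unfolding S.GYf_def S.Hs_def assms(10) by simp
  have He: "H a b = S.Hs {..a} {..b}" for a b unfolding S.Hs_def assms(8) by simp
  have F01: "F a \<in> {0..1}" for a unfolding assms(9) by (simp add: S.measure_le_1)
  have G01: "G b \<in> {0..1}" for b unfolding assms(10) by (simp add: S.measure_le_1)
  have Fe': "F = S.FXf" using Fe by (rule ext)
  have Ge': "G = S.GYf" using Ge by (rule ext)
  have Ftop: "(F \<longlongrightarrow> 1) at_top" using S.FX_props(3) unfolding Fe' .
  have Gtop: "(G \<longlongrightarrow> 1) at_top" using S.GY_props(3) unfolding Ge' .
  have contF: "isCont F a" and contG: "isCont G b" for a b
    using cont_margins[OF assms(11) C assms(13) F01 G01 Ftop Gtop] by auto
  have contX: "isCont S.FXf a" for a using contF[of a] unfolding Fe' .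
  have contY: "isCont S.GYf b" for b using contG[of b] unfolding Ge' .
  have ae1: "AE \<omega> in M. \<forall>n. inj_on (\<lambda>i. Xs i \<omega>) {..<n} \<and> inj_on (\<lambda>i. Ys i \<omega>) {..<n}"
    by (rule S.AE_inj[OF contX contY])
  have ae2: "AE \<omega> in M. \<forall>j::nat. eventually (\<lambda>n. \<forall>Sx Sy. S.goodS Sx \<longrightarrow> S.goodS Sy \<longrightarrow>
      \<bar>S.Hns n \<omega> Sx Sy - S.Hs Sx Sy\<bar> \<le> (1 / (real j + 1)) * real n powr (-s)) sequentially"
    by (rule S.rates[OF contX contY assms(16,17)])
  show ?thesis using ae1 ae2 assms(18)
  proof eventually_elim
    case (elim \<omega>)
    have injX: "inj_on (\<lambda>i. Xs i \<omega>) {..<n}" and injY: "inj_on (\<lambda>i. Ys i \<omega>) {..<n}" for n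
      using elim(1) by auto
    have ejH: "emp_joint Xs Ys n \<omega> a b = S.Hns n \<omega> {..a} {..b}" for n a b
      unfolding emp_joint_def S.Hns_def by simp
    have edX: "emp_df Xs n \<omega> a = S.Hns n \<omega> {..a} UNIV" for n a
      unfolding emp_df_def S.Hns_def by simp
    have edY: "emp_df Ys n \<omega> b = S.Hns n \<omega> UNIV {..b}" for n b
      unfolding emp_df_def S.Hns_def by simp
    have gs1: "S.goodS {..a}" for a unfolding S.goodS_def[OF contX contY] by blast
    have gs2: "S.goodS UNIV" unfolding S.goodS_def[OF contX contY] by blast
    note gs = gs1 gs2
    define d where "d j n = (1 / (real j + 1)) * real n powr (-s)" for j :: nat and n :: nat
    have rt: "eventually (\<lambda>n. (\<forall>a b. \<bar>emp_joint Xs Ys n \<omega> a b - H a b\<bar> \<le> d j n) \<and>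
        (\<forall>a. \<bar>emp_df Xs n \<omega> a - F a\<bar> \<le> d j n) \<and> (\<forall>b. \<bar>emp_df Ys n \<omega> b - G b\<bar> \<le> d j n)) sequentially" for j
      using elim(2)[rule_format, of j]
    proof eventually_elim
      case (elim n)
      show ?case unfolding ejH edX edY He Fe Ge d_def
        using elim gs unfolding S.FXf_def S.GYf_def by blast
    qed
    have s: "0 < s" "s < 1/2" using assms(16,17) by auto
    define Nn where "Nn n = nat \<lfloor>real n powr s\<rfloor>" for n :: nat
    have un_conv: "(\<lambda>n. emp_df Xs n \<omega> x) \<longlonglongrightarrow> F x"
    proof (rule rate_conv[OF s(1)])
      fix j show "eventually (\<lambda>n. \<bar>emp_df Xs n \<omega> x - F x\<bar> \<le> (1 / (real j + 1)) * real n powr (-s)) sequentially"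
        using rt[of j] by eventually_elim (simp add: d_def)
    qed
    have vn_conv: "(\<lambda>n. emp_df Ys n \<omega> y) \<longlonglongrightarrow> G y" for y
    proof (rule rate_conv[OF s(1)])
      fix j show "eventually (\<lambda>n. \<bar>emp_df Ys n \<omega> y - G y\<bar> \<le> (1 / (real j + 1)) * real n powr (-s)) sequentially"
        using rt[of j] by eventually_elim (simp add: d_def)
    qed
    have close: "eventually (\<lambda>n. \<forall>a\<in>{0..1}. \<forall>b\<in>{0..1}. real (Nn n) * \<bar>emp_copula Xs Ys n \<omega> a b - A a b\<bar> \<le> e) sequentially"
      if e: "e > 0" for e
    proof -
      obtain j where j: "inverse (real (Suc j)) < e / 6" using reals_Archimedean[of "e/6"] e by auto
      have lim0: "(\<lambda>n::nat. real n powr s * (2 / real n)) \<longlonglongrightarrow> 0" using s by real_asymp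
      have ev3: "eventually (\<lambda>n. real n powr s * (2 / real n) < e / 2) sequentially"
        using tendstoD[OF lim0, of "e/2"] e by (auto elim: eventually_mono simp: dist_real_def)
      show ?thesis using rt[of j] eventually_ge_at_top[of 1] ev3
      proof eventually_elim
        case (elim n)
        have npos: "real n > 0" using elim(2) by simp
        have dH: "\<And>a b. \<bar>emp_joint Xs Ys n \<omega> a b - H a b\<bar> \<le> d j n" and dF: "\<And>a. \<bar>emp_df Xs n \<omega> a - F a\<bar> \<le> d j n"
          and dG: "\<And>b. \<bar>emp_df Ys n \<omega> b - G b\<bar> \<le> d j n" using elim(1) by auto
        have pp: "real n powr s > 0" using npos by simp
        have "real n powr s * d j n = (1 / (real j + 1)) * (real n powr s * inverse (real n powr s))"
          unfolding d_def powr_minus by (simp only: ac_simps)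
        also have "\<dots> = 1 / (real j + 1)" using right_inverse[of "real n powr s"] pp by simp
        finally have prod1: "real n powr s * d j n = 1 / (real j + 1)" .
        have j6: "1 / (real j + 1) < e / 6" using j by (simp add: inverse_eq_divide add.commute)
        show ?case
        proof (intro ballI)
          fix a b :: real assume a: "a \<in> {0..1}" and b: "b \<in> {0..1}"
          have cl: "\<bar>emp_copula Xs Ys n \<omega> a b - A a b\<bar> \<le> 3 * d j n + 2 / real n"
            by (rule emp_copula_close[OF C injX injY elim(2) assms(13) F01 G01 dH dF dG a b])
          have "real (Nn n) * \<bar>emp_copula Xs Ys n \<omega> a b - A a b\<bar> \<le> real n powr s * (3 * d j n + 2 / real n)"
            by (intro mult_mono cl) (auto simp: Nn_def Nn_props(2)[OF s(1)])
          also have "\<dots> = 3 * (real n powr s * d j n) + real n powr s * (2 / real n)" by (simp add: algebra_simps)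
          also have "\<dots> \<le> e" using prod1 j6 elim(3) by linarith
          finally show "real (Nn n) * \<bar>emp_copula Xs Ys n \<omega> a b - A a b\<bar> \<le> e" .
        qed
      qed
    qed
    have Aint: "\<And>a w. a \<in> {0..1} \<Longrightarrow> w \<in> {0..1} \<Longrightarrow> A a w = (LINT t:{0..a}|lborel. K t {0..w})"
      by (rule kernel_Aint[OF assms(14)])
    have kc: "continuous_on ({0..1} \<times> {0..1}) (\<lambda>(t, w). K t {0..w})" using assms(15) by simp
    have A0: "\<And>a. a \<in> {0..1} \<Longrightarrow> A a 0 = 0" by (rule copula_0[OF C])
    have ed01: "0 \<le> emp_df Z n \<omega> t \<and> emp_df Z n \<omega> t \<le> 1" for Z :: "nat \<Rightarrow> 'a \<Rightarrow> real" and n t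
      using emp_df_01[of Z n \<omega> t] by simp
    have conv: "(\<lambda>n. cb_kernel_cdf (Nn n) (emp_copula Xs Ys n \<omega>) (emp_df Xs n \<omega> x) (emp_df Ys n \<omega> y)) \<longlonglongrightarrow> K (F x) {0..G y}" for y
      by (rule cb_conv[where k = "\<lambda>t w. K t {0..w}", OF Aint kc A0 _ close un_conv _ vn_conv _ F01 G01])
         (use ed01 in \<open>auto simp: Nn_def Nn_props(3)[OF s(1)]\<close>)
    have cdfC: "(\<forall>a b. a \<le> b \<longrightarrow> cb_kernel_cdf (nat \<lfloor>real n powr s\<rfloor>) (emp_copula Xs Ys n \<omega>) (emp_df Xs n \<omega> x) (emp_df Ys n \<omega> a)
          \<le> cb_kernel_cdf (nat \<lfloor>real n powr s\<rfloor>) (emp_copula Xs Ys n \<omega>) (emp_df Xs n \<omega> x) (emp_df Ys n \<omega> b))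
      \<and> (\<forall>a. continuous (at_right a) (\<lambda>y. cb_kernel_cdf (nat \<lfloor>real n powr s\<rfloor>) (emp_copula Xs Ys n \<omega>) (emp_df Xs n \<omega> x) (emp_df Ys n \<omega> y)))
      \<and> ((\<lambda>y. cb_kernel_cdf (nat \<lfloor>real n powr s\<rfloor>) (emp_copula Xs Ys n \<omega>) (emp_df Xs n \<omega> x) (emp_df Ys n \<omega> y)) \<longlongrightarrow> 0) at_bot
      \<and> ((\<lambda>y. cb_kernel_cdf (nat \<lfloor>real n powr s\<rfloor>) (emp_copula Xs Ys n \<omega>) (emp_df Xs n \<omega> x) (emp_df Ys n \<omega> y)) \<longlongrightarrow> 1) at_top"
      if n1: "n \<ge> 1" for n
    proof -
      have N1: "1 \<le> nat \<lfloor>real n powr s\<rfloor>" by (rule Nn_props(1)[OF s(1) n1])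
      have u: "0 \<le> emp_df Xs n \<omega> x" "emp_df Xs n \<omega> x \<le> 1" using ed01 by auto
      note cd = Cn_cdf[where Xs = Xs and Ys = Ys and \<omega> = \<omega> and n = n, OF injX injY n1 N1 u]
      show ?thesis using cd(1-4) by blast
    qed
    have kcv: "continuous_on {0..1} (\<lambda>v. K (F x) {0..v})"
    proof -
      have "continuous_on {0..1} ((\<lambda>(t, w). K t {0..w}) \<circ> (\<lambda>v. (F x, v)))"
        by (rule continuous_on_compose[OF continuous_on_Pair[OF continuous_on_const continuous_on_id]])
           (rule continuous_on_subset[OF kc], use F01 in auto)
      then show ?thesis by (simp add: o_def)
    qed
    have rc: "continuous (at_right a) (\<lambda>y. K (F x) {0..G y})" for a
    proof -
      have "(G \<longlongrightarrow> G a) (at a)" using contG[of a] by (simp add: isCont_def)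
      then have "((\<lambda>y. K (F x) {0..G y}) \<longlongrightarrow> K (F x) {0..G a}) (at a)"
        by (rule continuous_on_tendsto_compose[OF kcv]) (use G01 in auto)
      then have "isCont (\<lambda>y. K (F x) {0..G y}) a" by (simp add: isCont_def)
      then show ?thesis by (rule continuous_at_imp_continuous_at_within)
    qed
    show ?case
    proof (rule mean_conv[where ?n0.0 = 1])
      show "(\<lambda>n. cb_kernel_cdf (nat \<lfloor>real n powr s\<rfloor>) (emp_copula Xs Ys n \<omega>) (emp_df Xs n \<omega> x) (emp_df Ys n \<omega> y)) \<longlonglongrightarrow> K (F x) {0..G y}" for y
        using conv[of y] unfolding Nn_def .
    qed (use cdfC rc elim(3) in auto)
  qed
qed

end
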